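(* Let $\mathcal X$ be finite, $P_0,P_1$ distributions on $\mathcal X$ with full support, and $0<\gamma<D(P_1\|P_0)$. Let $Q_\mu(x)=P_0^{\frac{\mu}{1+\mu}}(x)P_1^{\frac{1}{1+\mu}}(x)/\sum_aP_0^{\frac{\mu}{1+\mu}}(a)P_1^{\frac{1}{1+\mu}}(a)$ with $\mu\ge0$ solving $D(Q_\mu\|P_0)=\gamma$, and let $E_0=\gamma$, $E_1=D(Q_\mu\|P_1)$. For $r\ge0$ define $$\underline{\hat E}_0(r)=\min_{\substack{\hat Q:\,D(\hat Q\|P_0)\ge\gamma\\ Q:\,d(Q,\hat Q)\le r}}D(Q\|P_0),\qquad \underline{\hat E}_1(r)=\min_{\substack{\hat Q:\,D(\hat Q\|P_0)\le\gamma\\ Q:\,d(Q,\hat Q)\le r}}D(Q\|P_1).$$ Then for $i\in\{0,1\}$, as $r\to0$, $$\underline{\hat E}_i(r)=E_i-\sqrt{r\,\theta_i(P_0,P_1,\gamma)}+o(\sqrt r),$$ where $$\theta_0(P_0,P_1,\gamma)=\frac2\alpha\max_{\hat Q:\,D(\hat Q\|P_0)=\gamma}\mathrm{Var}_{\hat Q}\Big(\log\frac{\hat Q(X)}{P_0(X)}\Big),\qquad \theta_1(P_0,P_1,\gamma)=\frac2\alpha\mathrm{Var}_{Q_\mu}\Big(\log\frac{Q_\mu(X)}{P_1(X)}\Big).$$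
   Context: $D$ is relative entropy. Setting: Hoeffding's test with known $P_0$ and threshold $\gamma$ (decide 1 iff $D(\hat T\|P_0)\ge\gamma$) is applied to a tampered observation whose type $\hat Q$ is within distance $r$ of the true type $Q$; $\underline{\hat E}_i(r)$ are the worst-case exponents. The distance $d$ is either the Rényi divergence $d(Q,\hat Q)=D_\alpha(Q\|\hat Q)=\frac{1}{\alpha-1}\log\sum_xQ(x)^\alpha\hat Q(x)^{1-\alpha}$ of order $\alpha>0$ ($\alpha=1$: relative entropy), or an $f$-divergence $d(Q,\hat Q)=\sum_x\hat Q(x)f(Q(x)/\hat Q(x))$ with $f$ convex, twice differentiable, and $\alpha:=f''(1)$. *)

theory Defs
  imports "HOL-Analysis.Analysis" "HOL-Library.Landau_Symbols"
begin

definition distrs :: "('a::finite \<Rightarrow> real) set" where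
  "distrs = {Q. (\<forall>x. 0 \<le> Q x) \<and> (\<Sum>x\<in>UNIV. Q x) = 1}"

text \<open>Relative entropy D(Q||P) (natural log, 0 log 0 = 0); used with P of full support.\<close>
definition kl :: "('a::finite \<Rightarrow> real) \<Rightarrow> ('a \<Rightarrow> real) \<Rightarrow> real" where
  "kl Q P = (\<Sum>x\<in>UNIV. if Q x = 0 then 0 else Q x * ln (Q x / P x))"

definition kl_ext :: "('a::finite \<Rightarrow> real) \<Rightarrow> ('a \<Rightarrow> real) \<Rightarrow> ereal" where
  "kl_ext Q P = (if \<exists>x. 0 < Q x \<and> P x = 0 then \<infinity> else ereal (kl Q P))"

definition renyi_div :: "real \<Rightarrow> ('a::finite \<Rightarrow> real) \<Rightarrow> ('a \<Rightarrow> real) \<Rightarrow> ereal" where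
  "renyi_div \<alpha> Q Qh =
    (if \<alpha> = 1 then kl_ext Q Qh
     else if 1 < \<alpha> \<and> (\<exists>x. 0 < Q x \<and> Qh x = 0) then \<infinity>
     else (let s = (\<Sum>x\<in>{x. 0 < Q x \<and> 0 < Qh x}. Q x powr \<alpha> * Qh x powr (1 - \<alpha>))
           in if s = 0 then \<infinity> else ereal (ln s / (\<alpha> - 1))))"

text \<open>f-divergence sum_x Qh(x) f(Q(x)/Qh(x)) with f defined on (0,inf) and the standard
  conventions: a zero Q(x) uses f(0+) = lim_{t->0+} f t, a zero Qh(x) uses
  Q(x) * lim_{t->inf} f(t)/t, and 0 f(0/0) = 0.\<close>
definition f_zero :: "(real \<Rightarrow> real) \<Rightarrow> ereal" where
  "f_zero f = Lim (at_right 0) (\<lambda>t. ereal (f t))"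

definition f_slope_inf :: "(real \<Rightarrow> real) \<Rightarrow> ereal" where
  "f_slope_inf f = Lim at_top (\<lambda>t. ereal (f t / t))"

definition fdiv :: "(real \<Rightarrow> real) \<Rightarrow> ('a::finite \<Rightarrow> real) \<Rightarrow> ('a \<Rightarrow> real) \<Rightarrow> ereal" where
  "fdiv f Q Qh = (\<Sum>x\<in>UNIV.
      if 0 < Qh x then (if 0 < Q x then ereal (Qh x * f (Q x / Qh x)) else ereal (Qh x) * f_zero f)
      else if Q x = 0 then 0 else ereal (Q x) * f_slope_inf f)"

text \<open>Admissible f-divergence generator: convex, twice differentiable on (0,inf), f(1)=0,
  with second derivative f'' (so alpha = f''(1)).\<close>
definition fgen :: "(real \<Rightarrow> real) \<Rightarrow> (real \<Rightarrow> real) \<Rightarrow> (real \<Rightarrow> real) \<Rightarrow> bool" where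
  "fgen f f' f'' \<longleftrightarrow> convex_on {0<..} f \<and> f 1 = 0 \<and>
     (\<forall>t>0. (f has_real_derivative f' t) (at t) \<and> (f' has_real_derivative f'' t) (at t))"

definition tilt :: "('a::finite \<Rightarrow> real) \<Rightarrow> ('a \<Rightarrow> real) \<Rightarrow> real \<Rightarrow> 'a \<Rightarrow> real" where
  "tilt P0 P1 \<mu> x =
     P0 x powr (\<mu> / (1 + \<mu>)) * P1 x powr (1 / (1 + \<mu>)) /
     (\<Sum>a\<in>UNIV. P0 a powr (\<mu> / (1 + \<mu>)) * P1 a powr (1 / (1 + \<mu>)))"

definition var_log :: "('a::finite \<Rightarrow> real) \<Rightarrow> ('a \<Rightarrow> real) \<Rightarrow> real" where
  "var_log Q P = (\<Sum>x\<in>UNIV. Q x * (ln (Q x / P x))\<^sup>2) - (\<Sum>x\<in>UNIV. Q x * ln (Q x / P x))\<^sup>2"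

definition E0_hat :: "('a::finite \<Rightarrow> real) \<Rightarrow> real \<Rightarrow> (('a \<Rightarrow> real) \<Rightarrow> ('a \<Rightarrow> real) \<Rightarrow> ereal) \<Rightarrow> real \<Rightarrow> real" where
  "E0_hat P0 \<gamma> d r = Inf {kl Q P0 | Q Qh. Qh \<in> distrs \<and> Q \<in> distrs \<and> \<gamma> \<le> kl Qh P0 \<and> d Q Qh \<le> ereal r}"

definition E1_hat :: "('a::finite \<Rightarrow> real) \<Rightarrow> ('a \<Rightarrow> real) \<Rightarrow> real \<Rightarrow> (('a \<Rightarrow> real) \<Rightarrow> ('a \<Rightarrow> real) \<Rightarrow> ereal) \<Rightarrow> real \<Rightarrow> real" where
  "E1_hat P0 P1 \<gamma> d r = Inf {kl Q P1 | Q Qh. Qh \<in> distrs \<and> Q \<in> distrs \<and> kl Qh P0 \<le> \<gamma> \<and> d Q Qh \<le> ereal r}"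

definition theta0 :: "real \<Rightarrow> ('a::finite \<Rightarrow> real) \<Rightarrow> real \<Rightarrow> real" where
  "theta0 \<alpha> P0 \<gamma> = 2 / \<alpha> * Sup {var_log Qh P0 | Qh. Qh \<in> distrs \<and> kl Qh P0 = \<gamma>}"

definition theta1 :: "real \<Rightarrow> ('a::finite \<Rightarrow> real) \<Rightarrow> ('a \<Rightarrow> real) \<Rightarrow> real \<Rightarrow> real" where
  "theta1 \<alpha> P0 P1 \<mu> = 2 / \<alpha> * var_log (tilt P0 P1 \<mu>) P1"

end

theory Submission
  imports Defs "HOL-Real_Asymp.Real_Asymp"
begin
lemma distrsD:
  assumes "Q \<in> distrs" shows "\<And>x. 0 \<le> Q x" "(\<Sum>x\<in>UNIV. Q x) = 1" "\<And>x. Q x \<le> 1"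
proof -
  show "\<And>x. 0 \<le> Q x" "(\<Sum>x\<in>UNIV. Q x) = 1" using assms by (auto simp: distrs_def)
  fix x
  have "Q x \<le> (\<Sum>y\<in>UNIV. Q y)"
    using assms by (intro member_le_sum) (auto simp: distrs_def)
  then show "Q x \<le> 1" using assms by (auto simp: distrs_def)
qed

lemma kl_alt: "kl Q P = (\<Sum>x\<in>UNIV. Q x * ln (Q x / P x))"
  unfolding kl_def by (intro sum.cong) auto

lemma ln_ge_1_minus_inv: "0 < x \<Longrightarrow> ln x \<ge> 1 - 1 / (x::real)"
proof -
  assume x: "0 < x"
  have "ln (1/x) \<le> 1/x - 1" using x by (intro ln_le_minus_one) auto
  then show ?thesis using x by (simp add: ln_div)
qed

lemma u_ln_ge: "0 \<le> u \<Longrightarrow> 0 < z \<Longrightarrow> u * ln (u / z) \<ge> u - (z::real)"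
proof (cases "u = 0")
  case False
  assume u: "0 \<le> u" and z: "0 < z"
  with False have u': "0 < u" by simp
  have "ln (u/z) \<ge> 1 - 1/(u/z)" using u' z by (intro ln_ge_1_minus_inv) auto
  then have "u * ln (u/z) \<ge> u * (1 - z/u)" using u' by (intro mult_left_mono) auto
  also have "u * (1 - z/u) = u - z" using u' by (simp add: field_simps)
  finally show ?thesis .
qed simp

lemma kl_nonneg:
  assumes "Q \<in> distrs" "P \<in> distrs" "\<forall>x. 0 < P x"
  shows "0 \<le> kl Q P"
proof -
  have "(\<Sum>x\<in>UNIV. Q x - P x) \<le> (\<Sum>x\<in>UNIV. Q x * ln (Q x / P x))"
    using assms by (intro sum_mono u_ln_ge) (auto dest: distrsD)
  moreover have "(\<Sum>x\<in>UNIV. Q x - P x) = 0"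
    using assms by (simp add: sum_subtractf distrsD)
  ultimately show ?thesis by (simp add: kl_alt)
qed

definition pmin :: "('a::finite \<Rightarrow> real) \<Rightarrow> real" where
  "pmin P = Min (range P)"

lemma pmin_le: "pmin P \<le> P x"
  unfolding pmin_def by (intro Min_le) auto

lemma pmin_pos: "\<forall>x. 0 < P x \<Longrightarrow> 0 < pmin P"
  unfolding pmin_def by (subst Min_gr_iff) auto

lemma pmin_le1: "P \<in> distrs \<Longrightarrow> pmin P \<le> 1"
  using pmin_le[of P] distrsD(3)[of P] by (meson order_trans)

definition Lam :: "('a::finite \<Rightarrow> real) \<Rightarrow> real" where
  "Lam P = - ln (pmin P)"

lemma Lam_nonneg: "P \<in> distrs \<Longrightarrow> \<forall>x. 0 < P x \<Longrightarrow> 0 \<le> Lam P"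
  unfolding Lam_def using pmin_le1[of P] pmin_pos[of P] by (simp add: ln_le_zero_iff)

lemma abs_ln_P_le: "\<forall>x. 0 < P x \<Longrightarrow> P \<in> distrs \<Longrightarrow> \<bar>ln (P x)\<bar> \<le> Lam P"
proof -
  assume pos: "\<forall>x. 0 < P x" and D: "P \<in> distrs"
  have "ln (P x) \<le> 0" using pos distrsD(3)[OF D] by (simp add: ln_le_zero_iff)
  moreover have "ln (pmin P) \<le> ln (P x)" using pos pmin_pos[OF pos] pmin_le by simp
  ultimately show ?thesis unfolding Lam_def by simp
qed

lemma kl_le_Lam:
  assumes "Q \<in> distrs" "P \<in> distrs" "\<forall>x. 0 < P x"
  shows "kl Q P \<le> Lam P"
proof -
  have "Q x * ln (Q x / P x) \<le> Q x * Lam P" for x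
  proof (cases "Q x = 0")
    case False
    then have q: "0 < Q x" "Q x \<le> 1" using assms distrsD[of Q] by (auto simp: less_le)
    have px: "0 < P x" using assms(3) by blast
    have "ln (Q x / P x) = ln (Q x) - ln (P x)" using q px ln_div[of "Q x" "P x"] by auto
    also have "\<dots> \<le> 0 + Lam P"
    proof -
      have "ln (Q x) \<le> 0" using q by (simp add: ln_le_zero_iff)
      moreover have "\<bar>ln (P x)\<bar> \<le> Lam P" using abs_ln_P_le[OF assms(3,2)] by blast
      ultimately show ?thesis by linarith
    qed
    finally show ?thesis using q by (intro mult_left_mono) auto
  qed simp
  then have "kl Q P \<le> (\<Sum>x\<in>UNIV. Q x * Lam P)" unfolding kl_alt by (intro sum_mono)
  also have "\<dots> = Lam P" using distrsD(2)[OF assms(1)] by (simp add: sum_distrib_right[symmetric])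
  finally show ?thesis .
qed

lemma ln_lower_root:
  assumes "0 < u" "0 < (k::real)"
  shows "ln u \<ge> - (1/k) * u powr (-k)"
proof -
  have "ln (u powr k) \<ge> 1 - 1 / (u powr k)" using assms by (intro ln_ge_1_minus_inv) auto
  then have "k * ln u \<ge> 1 - u powr (-k)" using assms by (simp add: ln_powr powr_minus divide_inverse)
  then have "k * ln u \<ge> - (u powr (-k))" by linarith
  then have "ln u \<ge> - (u powr (-k)) / k" using assms by (simp add: field_simps)
  then show ?thesis by simp
qed

lemma u_ln_u_lower: "0 \<le> (u::real) \<Longrightarrow> u * ln u \<ge> - 4 * u powr (3/4)"
proof (cases "u = 0")
  case False
  assume "0 \<le> u" with False have u: "0 < u" by simp
  have "ln u \<ge> - (1/(1/4)) * u powr (-(1/4))" using ln_lower_root[OF u, of "1/4"] by simp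
  then have "u * ln u \<ge> u * (- 4 * u powr (-(1/4)))" using u by (intro mult_left_mono) auto
  also have "u * (- 4 * u powr (-(1/4))) = - 4 * (u powr 1 * u powr (-(1/4)))" using u by (simp add: powr_one)
  also have "u powr 1 * u powr (-(1/4)) = u powr (1 + (-(1/4)))" by (rule powr_add[symmetric])
  finally show ?thesis by simp
qed simp

lemma u_ln2_le: "0 \<le> (u::real) \<Longrightarrow> u \<le> 1 \<Longrightarrow> u * (ln u)\<^sup>2 \<le> 4"
proof (cases "u = 0")
  case False
  assume "0 \<le> u" "u \<le> 1" with False have u: "0 < u" "u \<le> 1" by auto
  have l1: "ln u \<ge> - (1/(1/2)) * u powr (-(1/2))" using ln_lower_root[OF u(1), of "1/2"] by simp
  have l2: "ln u \<le> 0" using u by (simp add: ln_le_zero_iff)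
  have "(ln u)\<^sup>2 = (- ln u)^2" by simp
  also have "\<dots> \<le> (2 * u powr (-(1/2)))^2" using l1 l2 by (intro power_mono) auto
  also have "\<dots> = 4 * (u powr (-(1/2)))^2" by (simp add: power_mult_distrib)
  also have "(u powr (-(1/2)))^2 = u powr (-1)" using u powr_power[of u "-(1/2)" 2] by simp
  finally have "u * (ln u)\<^sup>2 \<le> u * (4 * u powr (-1))" using u by (intro mult_left_mono) auto
  also have "\<dots> = 4" using u by (simp add: powr_minus)
  finally show ?thesis .
qed simp

definition Vb :: "('a::finite \<Rightarrow> real) \<Rightarrow> real" where
  "Vb P = real (card (UNIV::'a set)) * (8 + 2 * (Lam P)\<^sup>2)"

lemma var_log_alt:
  assumes "w \<in> distrs"
  shows "var_log w P = (\<Sum>x\<in>UNIV. w x * (ln (w x / P x) - kl w P)\<^sup>2)"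
proof -
  let ?L = "\<lambda>x. ln (w x / P x)" let ?k = "kl w P"
  have "(\<Sum>x\<in>UNIV. w x * (?L x - ?k)\<^sup>2) =
        (\<Sum>x\<in>UNIV. w x * (?L x)\<^sup>2) - 2 * ?k * (\<Sum>x\<in>UNIV. w x * ?L x) + ?k^2 * (\<Sum>x\<in>UNIV. w x)"
    by (simp add: power2_diff algebra_simps sum.distrib sum_subtractf sum_distrib_left sum_distrib_right)
  also have "(\<Sum>x\<in>UNIV. w x * ?L x) = ?k" by (simp add: kl_alt)
  also have "(\<Sum>x\<in>UNIV. w x) = 1" using distrsD[OF assms] by simp
  finally show ?thesis unfolding var_log_def by (simp add: kl_alt power2_eq_square)
qed

lemma var_log_nonneg: "w \<in> distrs \<Longrightarrow> 0 \<le> var_log w P"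
  by (simp add: var_log_alt distrsD sum_nonneg)

lemma var_log_le:
  assumes "w \<in> distrs" "P \<in> distrs" "\<forall>x. 0 < P x"
  shows "var_log w P \<le> Vb P"
proof -
  have "var_log w P \<le> (\<Sum>x\<in>UNIV. w x * (ln (w x / P x))\<^sup>2)"
    unfolding var_log_def by simp
  also have "\<dots> \<le> (\<Sum>x\<in>(UNIV::'a set). 8 + 2 * (Lam P)\<^sup>2)"
  proof (intro sum_mono)
    fix x
    show "w x * (ln (w x / P x))\<^sup>2 \<le> 8 + 2 * (Lam P)\<^sup>2"
    proof (cases "w x = 0")
      case False
      then have q: "0 < w x" "w x \<le> 1" using assms distrsD[of w] by (auto simp: less_le)
      have px: "0 < P x" using assms(3) by blast
      have e: "ln (w x / P x) = ln (w x) - ln (P x)" using q px ln_div[of "w x" "P x"] by auto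
      have "(ln (w x) - ln (P x))\<^sup>2 \<le> 2 * (ln (w x))\<^sup>2 + 2 * (ln (P x))\<^sup>2"
        using zero_le_power2[of "ln (w x) + ln (P x)"] unfolding power2_diff power2_sum by linarith
      then have "w x * (ln (w x / P x))\<^sup>2 \<le> w x * (2 * (ln (w x))\<^sup>2 + 2 * (ln (P x))\<^sup>2)"
        unfolding e using q by (intro mult_left_mono) auto
      also have "\<dots> = 2 * (w x * (ln (w x))\<^sup>2) + 2 * (w x * (ln (P x))\<^sup>2)" by (simp add: algebra_simps)
      also have "\<dots> \<le> 2 * 4 + 2 * (1 * (Lam P)\<^sup>2)"
      proof (intro add_mono mult_left_mono mult_mono)
        show "w x * (ln (w x))\<^sup>2 \<le> 4" using q by (intro u_ln2_le) auto
        have "\<bar>ln (P x)\<bar> \<le> Lam P" using abs_ln_P_le assms by blast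
        then show "(ln (P x))\<^sup>2 \<le> (Lam P)\<^sup>2" by (metis abs_le_square_iff abs_of_nonneg Lam_nonneg assms(2,3))
      qed (use q in auto)
      finally show ?thesis by simp
    qed (simp add: Lam_nonneg assms)
  qed
  also have "\<dots> = Vb P" by (simp add: Vb_def)
  finally show ?thesis .
qed

lemma CS_abs:
  fixes a b :: "'b \<Rightarrow> real"
  shows "\<bar>\<Sum>i\<in>I. a i * b i\<bar> \<le> sqrt (\<Sum>i\<in>I. (a i)\<^sup>2) * sqrt (\<Sum>i\<in>I. (b i)\<^sup>2)"
proof -
  have "\<bar>\<Sum>i\<in>I. a i * b i\<bar> = sqrt ((\<Sum>i\<in>I. a i * b i)\<^sup>2)" by simp
  also have "\<dots> \<le> sqrt ((\<Sum>i\<in>I. (a i)\<^sup>2) * (\<Sum>i\<in>I. (b i)\<^sup>2))"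
    by (intro real_sqrt_le_mono Cauchy_Schwarz_ineq_sum)
  also have "\<dots> = sqrt (\<Sum>i\<in>I. (a i)\<^sup>2) * sqrt (\<Sum>i\<in>I. (b i)\<^sup>2)" by (simp add: real_sqrt_mult)
  finally show ?thesis .
qed

lemma phi_diff_eq:
  assumes "0 < q" "0 < w" "0 < p"
  shows "q * ln (q / p) - w * ln (w / p) - (ln (w / p) + 1) * (q - w) = q * ln (q / w) - q + (w::real)"
proof -
  have e: "ln (q / p) = ln q - ln p" "ln (w / p) = ln w - ln p" "ln (q / w) = ln q - ln w"
    using assms by (auto simp: ln_div)
  show ?thesis unfolding e by (simp add: algebra_simps)
qed

lemma phi_near:
  assumes "0 < q" "0 < w" "0 < p"
  shows "q * ln (q / p) - w * ln (w / p) \<ge> (ln (w / p) + 1) * (q - (w::real))"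
  using phi_diff_eq[OF assms] u_ln_ge[of q w] assms by linarith

lemma phi_far:
  assumes "0 \<le> q" "0 \<le> w" "w \<le> 1" "0 < p" "\<bar>ln p\<bar> \<le> L"
  shows "q * ln (q / p) - w * ln (w / p) \<ge> - 4 * q powr (3/4) - \<bar>q - w\<bar> * (L::real)"
proof -
  have e1: "q * ln (q / p) = q * ln q - q * ln p"
    using assms by (cases "q = 0") (auto simp: ln_div algebra_simps)
  have e2: "w * ln (w / p) = w * ln w - w * ln p"
    using assms by (cases "w = 0") (auto simp: ln_div algebra_simps)
  have "w * ln w \<le> 0" using assms by (cases "w = 0") (auto simp: mult_nonneg_nonpos ln_le_zero_iff)
  moreover have "q * ln q \<ge> - 4 * q powr (3/4)" using u_ln_u_lower assms by blast
  moreover have "(q - w) * ln p \<le> \<bar>q - w\<bar> * L"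
  proof -
    have "(q - w) * ln p \<le> \<bar>(q - w) * ln p\<bar>" by simp
    also have "\<dots> = \<bar>q - w\<bar> * \<bar>ln p\<bar>" by (simp add: abs_mult)
    also have "\<dots> \<le> \<bar>q - w\<bar> * L" using assms by (intro mult_left_mono) auto
    finally show ?thesis .
  qed
  ultimately show ?thesis unfolding e1 e2 by (simp add: algebra_simps)
qed

lemma LL:
  fixes P w q a :: "'a::finite \<Rightarrow> real"
  assumes P: "P \<in> distrs" "\<forall>x. 0 < P x" and w: "w \<in> distrs" and q: "q \<in> distrs"
    and eps: "0 < \<epsilon>" "\<epsilon> < 1" and kap: "0 < \<kappa>" "\<kappa> < 1" and c: "0 < c"
    and near: "\<And>x. 0 < w x \<Longrightarrow> \<bar>q x - w x\<bar> \<le> \<kappa> * w x \<Longrightarrow> (1-\<epsilon>) * (q x - w x)^2 / (2 * w x) \<le> a x"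
    and far: "\<And>x. \<not> (0 < w x \<and> \<bar>q x - w x\<bar> \<le> \<kappa> * w x) \<Longrightarrow> c * \<bar>q x - w x\<bar> \<le> a x"
    and R: "(\<Sum>x\<in>UNIV. a x) \<le> R"
  shows "kl q P \<ge> kl w P - sqrt (2 * R * var_log w P / (1-\<epsilon>)) - (2 * Lam P + 1) / c * R
            - 4 * real (card (UNIV::'a set)) * (((1 + 1/\<kappa>)/c) * R) powr (3/4)"
proof -
  define N where "N = {x. 0 < w x \<and> \<bar>q x - w x\<bar> \<le> \<kappa> * w x}"
  define F where "F = UNIV - N"
  define k where "k = kl w P"
  define V where "V = var_log w P"
  define \<Lambda> where "\<Lambda> = Lam P"
  define M where "M = (1 + 1/\<kappa>)/c"
  define L where "L = (\<lambda>x. ln (w x / P x))"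
  let ?d = "\<lambda>x. q x - w x"
  have w0: "\<And>x. 0 \<le> w x" "\<And>x. w x \<le> 1" using distrsD[OF w] by auto
  have q0: "\<And>x. 0 \<le> q x" "\<And>x. q x \<le> 1" using distrsD[OF q] by auto
  have Lam0: "0 \<le> \<Lambda>" unfolding \<Lambda>_def using Lam_nonneg P by blast
  have k0: "0 \<le> k" "k \<le> \<Lambda>" unfolding k_def \<Lambda>_def using kl_nonneg kl_le_Lam P w by blast+
  have V0: "0 \<le> V" unfolding V_def using var_log_nonneg w by blast
  have a0: "0 \<le> a x" for x
  proof (cases "x \<in> N")
    case True
    then have "0 \<le> (1-\<epsilon>) * (q x - w x)^2 / (2 * w x)" using eps by (auto simp: N_def)
    also have "\<dots> \<le> a x" using near True by (auto simp: N_def)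
    finally show ?thesis .
  next
    case False
    then have "0 \<le> c * \<bar>q x - w x\<bar>" using c by auto
    also have "\<dots> \<le> a x" using far False by (auto simp: N_def)
    finally show ?thesis .
  qed
  have R0: "0 \<le> R" using R a0 sum_nonneg[of UNIV a] by (meson order_trans)
  have NF: "N \<inter> F = {}" "N \<union> F = UNIV" by (auto simp: F_def)
  have sumsplit: "\<And>g. (\<Sum>x\<in>UNIV. g x) = (\<Sum>x\<in>N. g x) + (\<Sum>x\<in>F. g x)"
    using NF by (metis finite sum.union_disjoint finite_UNIV finite_subset subset_UNIV)
  have sumF: "(\<Sum>x\<in>F. \<bar>?d x\<bar>) \<le> R / c"
  proof -
    have "c * (\<Sum>x\<in>F. \<bar>?d x\<bar>) = (\<Sum>x\<in>F. c * \<bar>?d x\<bar>)" by (simp add: sum_distrib_left)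
    also have "\<dots> \<le> (\<Sum>x\<in>F. a x)" using far by (intro sum_mono) (auto simp: F_def N_def)
    also have "\<dots> \<le> (\<Sum>x\<in>UNIV. a x)" using a0 by (intro sum_mono2) auto
    finally have "c * (\<Sum>x\<in>F. \<bar>?d x\<bar>) \<le> R" using R by linarith
    then show ?thesis using c by (simp add: field_simps)
  qed
  have chi: "(\<Sum>x\<in>N. (?d x)^2 / w x) \<le> 2 * R / (1-\<epsilon>)"
  proof -
    have "(1-\<epsilon>)/2 * (\<Sum>x\<in>N. (?d x)^2 / w x) = (\<Sum>x\<in>N. (1-\<epsilon>) * (?d x)^2 / (2 * w x))"
      by (simp add: sum_distrib_left)
    also have "\<dots> \<le> (\<Sum>x\<in>N. a x)" using near by (intro sum_mono) (auto simp: N_def)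
    also have "\<dots> \<le> (\<Sum>x\<in>UNIV. a x)" using a0 by (intro sum_mono2) auto
    finally have "(1-\<epsilon>)/2 * (\<Sum>x\<in>N. (?d x)^2 / w x) \<le> R" using R by linarith
    then show ?thesis using eps by (simp add: field_simps)
  qed
  have sumd0: "(\<Sum>x\<in>UNIV. ?d x) = 0" using distrsD(2)[OF q] distrsD(2)[OF w] by (simp add: sum_subtractf)
  have sumN: "(\<Sum>x\<in>N. ?d x) = - (\<Sum>x\<in>F. ?d x)" using sumsplit[of ?d] sumd0 by linarith
  have absF: "\<bar>\<Sum>x\<in>F. ?d x\<bar> \<le> R / c" using sumF sum_abs[of ?d F] by linarith
  have nearpt: "q x * ln (q x / P x) - w x * ln (w x / P x) \<ge> (L x + 1) * ?d x" if "x \<in> N" for x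
  proof -
    have "0 < w x" "\<bar>?d x\<bar> \<le> \<kappa> * w x" using that by (auto simp: N_def)
    moreover have "\<kappa> * w x < w x" using kap \<open>0 < w x\<close> by simp
    ultimately have "0 < q x" by linarith
    then show ?thesis unfolding L_def using phi_near[of "q x" "w x" "P x"] \<open>0 < w x\<close> P by auto
  qed
  have CS: "\<bar>\<Sum>x\<in>N. (L x - k) * ?d x\<bar> \<le> sqrt V * sqrt (2 * R / (1-\<epsilon>))"
  proof -
    have eq: "(\<Sum>x\<in>N. (L x - k) * ?d x) = (\<Sum>x\<in>N. (sqrt (w x) * (L x - k)) * (?d x / sqrt (w x)))"
      by (intro sum.cong) (auto simp: N_def)
    have s1: "(\<Sum>x\<in>N. (sqrt (w x) * (L x - k))\<^sup>2) \<le> V"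
    proof -
      have "(\<Sum>x\<in>N. (sqrt (w x) * (L x - k))\<^sup>2) = (\<Sum>x\<in>N. w x * (L x - k)\<^sup>2)"
        using w0 by (intro sum.cong) (auto simp: power_mult_distrib)
      also have "\<dots> \<le> (\<Sum>x\<in>UNIV. w x * (L x - k)\<^sup>2)" using w0 by (intro sum_mono2) auto
      also have "\<dots> = V" unfolding V_def L_def k_def using var_log_alt[OF w] by simp
      finally show ?thesis .
    qed
    have s2: "(\<Sum>x\<in>N. (?d x / sqrt (w x))\<^sup>2) \<le> 2 * R / (1-\<epsilon>)"
    proof -
      have "(\<Sum>x\<in>N. (?d x / sqrt (w x))\<^sup>2) = (\<Sum>x\<in>N. (?d x)^2 / w x)"
        using w0 by (intro sum.cong) (auto simp: power_divide)
      then show ?thesis using chi by simp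
    qed
    show ?thesis unfolding eq
      by (rule order_trans[OF CS_abs]) (intro mult_mono real_sqrt_le_mono s1 s2; simp add: V0 sum_nonneg)
  qed
  have nearsum: "(\<Sum>x\<in>N. q x * ln (q x / P x) - w x * ln (w x / P x))
      \<ge> - (sqrt V * sqrt (2 * R / (1-\<epsilon>))) - (\<Lambda> + 1) * (R / c)"
  proof -
    have "(\<Sum>x\<in>N. q x * ln (q x / P x) - w x * ln (w x / P x)) \<ge> (\<Sum>x\<in>N. (L x + 1) * ?d x)"
      using nearpt by (intro sum_mono) auto
    moreover have "(\<Sum>x\<in>N. (L x + 1) * ?d x) = (\<Sum>x\<in>N. (L x - k) * ?d x) + (k + 1) * (\<Sum>x\<in>N. ?d x)"
      by (simp add: sum_distrib_left sum.distrib[symmetric] algebra_simps)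
    moreover have "(k + 1) * (\<Sum>x\<in>N. ?d x) \<ge> - ((\<Lambda> + 1) * (R / c))"
    proof -
      have "\<bar>(k + 1) * (\<Sum>x\<in>N. ?d x)\<bar> = (k+1) * \<bar>\<Sum>x\<in>F. ?d x\<bar>" using k0 sumN by (simp add: abs_mult)
      also have "\<dots> \<le> (\<Lambda> + 1) * (R / c)" using k0 absF by (intro mult_mono) auto
      finally show ?thesis by linarith
    qed
    ultimately show ?thesis using CS by linarith
  qed
  have farpt: "q x * ln (q x / P x) - w x * ln (w x / P x) \<ge> - 4 * (M * R) powr (3/4) - \<bar>?d x\<bar> * \<Lambda>"
    if "x \<in> F" for x
  proof -
    have dx: "\<bar>?d x\<bar> \<le> R / c"
      using sumF member_le_sum[of x F "\<lambda>x. \<bar>?d x\<bar>"] that by auto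
    have "w x \<le> \<bar>?d x\<bar> / \<kappa>"
    proof (cases "w x = 0")
      case False
      then have "\<bar>?d x\<bar> > \<kappa> * w x" using that w0[of x] by (auto simp: F_def N_def)
      then show ?thesis using kap by (simp add: field_simps)
    qed (use kap in simp)
    then have "q x \<le> (1 + 1/\<kappa>) * \<bar>?d x\<bar>" by (simp add: algebra_simps)
    also have "\<dots> \<le> (1 + 1/\<kappa>) * (R / c)" using dx kap by (intro mult_left_mono) auto
    also have "\<dots> = M * R" by (simp add: M_def)
    finally have qM: "q x \<le> M * R" .
    have "q x powr (3/4) \<le> (M * R) powr (3/4)" using qM q0 by (intro powr_mono2) auto
    moreover have "q x * ln (q x / P x) - w x * ln (w x / P x) \<ge> - 4 * q x powr (3/4) - \<bar>?d x\<bar> * \<Lambda>"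
    proof -
      have "\<bar>ln (P x)\<bar> \<le> Lam P" using abs_ln_P_le P by blast
      moreover have "0 < P x" using P by blast
      ultimately show ?thesis
        unfolding \<Lambda>_def using phi_far[of "q x" "w x" "P x" "Lam P"] q0 w0 by blast
    qed
    ultimately show ?thesis by linarith
  qed
  have farsum: "(\<Sum>x\<in>F. q x * ln (q x / P x) - w x * ln (w x / P x))
      \<ge> - 4 * real (card (UNIV::'a set)) * (M * R) powr (3/4) - \<Lambda> * (R / c)"
  proof -
    have "(\<Sum>x\<in>F. q x * ln (q x / P x) - w x * ln (w x / P x))
        \<ge> (\<Sum>x\<in>F. - 4 * (M * R) powr (3/4) - \<bar>?d x\<bar> * \<Lambda>)"
      using farpt by (intro sum_mono) auto
    moreover have "(\<Sum>x\<in>F. - 4 * (M * R) powr (3/4) - \<bar>?d x\<bar> * \<Lambda>)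
        = - 4 * real (card F) * (M * R) powr (3/4) - (\<Sum>x\<in>F. \<bar>?d x\<bar>) * \<Lambda>"
      by (simp add: sum_subtractf sum_distrib_right)
    moreover have "real (card F) * (M * R) powr (3/4) \<le> real (card (UNIV::'a set)) * (M * R) powr (3/4)"
      by (intro mult_right_mono of_nat_mono card_mono) auto
    moreover have "(\<Sum>x\<in>F. \<bar>?d x\<bar>) * \<Lambda> \<le> (R / c) * \<Lambda>" using sumF Lam0 by (intro mult_right_mono) auto
    moreover have "0 \<le> (M * R) powr (3/4)" by simp
    ultimately show ?thesis by (simp add: mult.commute)
  qed
  have "kl q P - kl w P = (\<Sum>x\<in>UNIV. q x * ln (q x / P x) - w x * ln (w x / P x))"
    by (simp add: kl_alt sum_subtractf)
  also have "\<dots> = (\<Sum>x\<in>N. q x * ln (q x / P x) - w x * ln (w x / P x))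
                + (\<Sum>x\<in>F. q x * ln (q x / P x) - w x * ln (w x / P x))" by (rule sumsplit)
  finally have main: "kl q P - kl w P \<ge> - (sqrt V * sqrt (2 * R / (1-\<epsilon>))) - (\<Lambda> + 1) * (R / c)
      - 4 * real (card (UNIV::'a set)) * (M * R) powr (3/4) - \<Lambda> * (R / c)"
    using nearsum farsum by linarith
  have "sqrt V * sqrt (2 * R / (1-\<epsilon>)) = sqrt (2 * R * V / (1-\<epsilon>))"
    by (simp add: real_sqrt_mult[symmetric] mult.commute)
  moreover have "(\<Lambda> + 1) * (R / c) + \<Lambda> * (R / c) = (2 * \<Lambda> + 1) / c * R" using c by (simp add: field_simps)
  ultimately have "kl q P - kl w P \<ge> - sqrt (2 * R * V / (1-\<epsilon>)) - (2 * \<Lambda> + 1) / c * R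
      - 4 * real (card (UNIV::'a set)) * (M * R) powr (3/4)" using main by linarith
  then show ?thesis unfolding V_def M_def \<Lambda>_def by linarith
qed

lemma UU:
  fixes P w :: "'a::finite \<Rightarrow> real"
  assumes P: "P \<in> distrs" "\<forall>x. 0 < P x" and w: "w \<in> distrs"
    and small: "\<And>x. \<bar>s * (if 0 < w x then ln (w x / P x) - kl w P else 0)\<bar> \<le> 1/2"
  defines "q \<equiv> \<lambda>x. w x * (1 + s * (if 0 < w x then ln (w x / P x) - kl w P else 0))"
  shows "q \<in> distrs" "\<And>x. w x = 0 \<Longrightarrow> q x = 0"
    "\<And>x. 0 < w x \<Longrightarrow> \<bar>q x - w x\<bar> \<le> \<bar>s * (ln (w x / P x) - kl w P)\<bar> * w x"
    "(\<Sum>x\<in>UNIV. if 0 < w x then (q x - w x)\<^sup>2 / w x else 0) = s\<^sup>2 * var_log w P"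
    "kl q P \<le> kl w P + s * var_log w P + s\<^sup>2 * var_log w P"
proof -
  define k where "k = kl w P"
  define L where "L = (\<lambda>x. ln (w x / P x))"
  define g where "g = (\<lambda>x. if 0 < w x then L x - k else 0)"
  define V where "V = var_log w P"
  have qg: "q = (\<lambda>x. w x * (1 + s * g x))" unfolding q_def g_def L_def k_def ..
  have w0: "\<And>x. 0 \<le> w x" "\<And>x. w x \<le> 1" using distrsD[OF w] by auto
  have wsum: "(\<Sum>x\<in>UNIV. w x) = 1" using distrsD[OF w] by simp
  have wg: "w x * g x = w x * (L x - k)" for x using w0[of x] by (auto simp: g_def less_le)
  have sum_wg: "(\<Sum>x\<in>UNIV. w x * g x) = 0"
  proof -
    have "(\<Sum>x\<in>UNIV. w x * g x) = (\<Sum>x\<in>UNIV. w x * L x - k * w x)"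
    proof (intro sum.cong refl)
      fix x show "w x * g x = w x * L x - k * w x" using wg[of x] by (simp add: algebra_simps)
    qed
    also have "\<dots> = (\<Sum>x\<in>UNIV. w x * L x) - k * (\<Sum>x\<in>UNIV. w x)"
      by (simp add: sum_subtractf sum_distrib_left)
    also have "(\<Sum>x\<in>UNIV. w x * L x) = k" by (simp add: k_def L_def kl_alt)
    finally show ?thesis using wsum by simp
  qed
  have sum_wg2: "(\<Sum>x\<in>UNIV. w x * (g x)\<^sup>2) = V"
  proof -
    have "w x * (g x)\<^sup>2 = w x * (L x - k)\<^sup>2" for x using w0[of x] by (auto simp: g_def less_le)
    then have "(\<Sum>x\<in>UNIV. w x * (g x)\<^sup>2) = (\<Sum>x\<in>UNIV. w x * (L x - k)\<^sup>2)" by (intro sum.cong refl) 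
    then show ?thesis by (simp add: V_def var_log_alt[OF w] L_def k_def)
  qed
  have sg: "\<bar>s * g x\<bar> \<le> 1/2" for x using small[of x] by (cases "0 < w x") (auto simp: g_def L_def k_def)
  have t0: "1 + s * g x \<ge> 1/2" for x using sg[of x] by linarith
  show qd: "q \<in> distrs"
  proof -
    have "0 \<le> q x" for x
    proof -
      have "0 \<le> 1 + s * g x" using t0[of x] by linarith
      then show ?thesis unfolding qg using w0[of x] by simp
    qed
    moreover have "(\<Sum>x\<in>UNIV. q x) = 1"
    proof -
      have "(\<Sum>x\<in>UNIV. q x) = (\<Sum>x\<in>UNIV. w x) + s * (\<Sum>x\<in>UNIV. w x * g x)"
        unfolding qg by (simp add: algebra_simps sum.distrib sum_distrib_left)
      then show ?thesis using wsum sum_wg by simp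
    qed
    ultimately show ?thesis by (simp add: distrs_def)
  qed
  show "\<And>x. w x = 0 \<Longrightarrow> q x = 0" unfolding qg by simp
  show "\<bar>q x - w x\<bar> \<le> \<bar>s * (ln (w x / P x) - kl w P)\<bar> * w x" if "0 < w x" for x
  proof -
    have "q x - w x = w x * (s * (ln (w x / P x) - kl w P))" unfolding q_def using that by (simp add: algebra_simps)
    then show ?thesis using that by (simp add: abs_mult)
  qed
  show "(\<Sum>x\<in>UNIV. if 0 < w x then (q x - w x)\<^sup>2 / w x else 0) = s\<^sup>2 * var_log w P"
  proof -
    have "(if 0 < w x then (q x - w x)\<^sup>2 / w x else 0) = s\<^sup>2 * (w x * (g x)\<^sup>2)" for x
      unfolding qg using w0[of x] by (auto simp: power2_eq_square field_simps g_def)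
    then show ?thesis using sum_wg2 by (simp add: sum_distrib_left[symmetric] V_def)
  qed
  show "kl q P \<le> kl w P + s * var_log w P + s\<^sup>2 * var_log w P"
  proof -
    have pt: "q x * ln (q x / P x) \<le> w x * L x + s * (w x * g x * (g x + k)) + (w x * g x) * s + s\<^sup>2 * (w x * (g x)\<^sup>2)" for x
    proof (cases "w x = 0")
      case True then show ?thesis unfolding qg by simp
    next
      case False
      then have wp: "0 < w x" using w0[of x] by (simp add: less_le)
      define t where "t = 1 + s * g x"
      have tp: "0 < t" using t0[of x] by (simp add: t_def)
      have px: "0 < P x" using P by blast
      have "ln (q x / P x) = L x + ln t"
        unfolding qg L_def t_def[symmetric] using wp tp px by (simp add: ln_div ln_mult)
      then have e1: "q x * ln (q x / P x) = w x * t * L x + w x * (t * ln t)" unfolding qg t_def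
        by (simp add: algebra_simps)
      have "ln t \<le> t - 1" using ln_le_minus_one[OF tp] .
      then have "t * ln t \<le> t * (t - 1)" using tp by (intro mult_left_mono) auto
      then have "w x * (t * ln t) \<le> w x * (t * (t - 1))" using wp by (rule mult_left_mono[OF _ less_imp_le])
      then have "q x * ln (q x / P x) \<le> w x * t * L x + w x * (t * (t - 1))" using e1 by simp
      moreover have "L x = g x + k" using wp by (simp add: g_def)
      ultimately show ?thesis unfolding t_def by (simp add: algebra_simps power2_eq_square)
    qed
    have "kl q P \<le> (\<Sum>x\<in>UNIV. w x * L x + s * (w x * g x * (g x + k)) + (w x * g x) * s + s\<^sup>2 * (w x * (g x)\<^sup>2))"
      unfolding kl_alt by (intro sum_mono pt)
    also have "\<dots> = (\<Sum>x\<in>UNIV. w x * L x) + s * ((\<Sum>x\<in>UNIV. w x * (g x)\<^sup>2) + k * (\<Sum>x\<in>UNIV. w x * g x))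
        + (\<Sum>x\<in>UNIV. w x * g x) * s + s\<^sup>2 * (\<Sum>x\<in>UNIV. w x * (g x)\<^sup>2)"
      by (simp add: sum.distrib sum_distrib_left sum_distrib_right algebra_simps power2_eq_square)
    also have "\<dots> = kl w P + s * V + s\<^sup>2 * V"
      using sum_wg sum_wg2 by (simp add: kl_alt L_def k_def)
    finally show ?thesis by (simp add: V_def)
  qed
qed

lemma LT:
  fixes G G' :: "real \<Rightarrow> real"
  assumes rho: "0 < \<rho>" and der: "\<And>t. \<bar>t - 1\<bar> < \<rho> \<Longrightarrow> (G has_real_derivative G' t) (at t)"
    and G1: "G 1 = 0" and G'1: "G' 1 = 0" and der2: "(G' has_real_derivative A) (at 1)" and eps: "0 < \<epsilon>"
  shows "\<exists>\<kappa>>0. \<kappa> < \<rho> \<and> (\<forall>t. \<bar>t - 1\<bar> \<le> \<kappa> \<longrightarrow> \<bar>G t - A * (t - 1)\<^sup>2 / 2\<bar> \<le> \<epsilon> * (t - 1)\<^sup>2)"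
proof -
  have "((\<lambda>y. (G' y - G' 1) / (y - 1)) \<longlongrightarrow> A) (at 1)"
    using der2 by (simp add: has_field_derivative_iff)
  then have "eventually (\<lambda>y. dist ((G' y - G' 1) / (y - 1)) A < \<epsilon>) (at 1)"
    using eps by (rule tendstoD)
  then obtain \<delta> where \<delta>: "\<delta> > 0" "\<And>y. y \<noteq> 1 \<Longrightarrow> dist y 1 < \<delta> \<Longrightarrow> dist ((G' y - G' 1) / (y - 1)) A < \<epsilon>"
    unfolding eventually_at by auto
  have G'b: "\<bar>G' y - A * (y - 1)\<bar> \<le> \<epsilon> * \<bar>y - 1\<bar>" if "\<bar>y - 1\<bar> < \<delta>" for y
  proof (cases "y = 1")
    case True then show ?thesis using G'1 by simp
  next
    case False
    then have "\<bar>G' y / (y - 1) - A\<bar> < \<epsilon>" using \<delta>(2)[of y] that G'1 by (simp add: dist_real_def)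
    then have "\<bar>(G' y - A * (y - 1)) / (y - 1)\<bar> < \<epsilon>" using False by (simp add: field_simps)
    then have "\<bar>G' y - A * (y - 1)\<bar> / \<bar>y - 1\<bar> < \<epsilon>" by (simp add: abs_divide)
    then show ?thesis using False by (simp add: field_simps)
  qed
  define \<kappa> where "\<kappa> = min \<delta> \<rho> / 2"
  have kap: "\<kappa> > 0" "\<kappa> < \<rho>" "\<kappa> < \<delta>" using \<delta> rho by (auto simp: \<kappa>_def)
  define \<psi> where "\<psi> = (\<lambda>s. G s - A * (s - 1)\<^sup>2 / 2)"
  define \<psi>' where "\<psi>' = (\<lambda>s. G' s - A * (s - 1))"
  have dpsi: "(\<psi> has_real_derivative \<psi>' s) (at s)" if "\<bar>s - 1\<bar> \<le> \<kappa>" for s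
  proof -
    have "(G has_real_derivative G' s) (at s)" using der that kap by auto
    moreover have "((\<lambda>s. A * (s - 1)\<^sup>2 / 2) has_real_derivative A * (s - 1)) (at s)"
      by (auto intro!: derivative_eq_intros simp: power2_eq_square)
    ultimately show ?thesis unfolding \<psi>_def \<psi>'_def by (intro derivative_eq_intros) auto
  qed
  have "\<forall>t. \<bar>t - 1\<bar> \<le> \<kappa> \<longrightarrow> \<bar>\<psi> t\<bar> \<le> \<epsilon> * (t - 1)\<^sup>2"
  proof (intro allI impI)
    fix t assume t: "\<bar>t - 1\<bar> \<le> \<kappa>"
    consider "t = 1" | "t < 1" | "t > 1" by linarith
    then show "\<bar>\<psi> t\<bar> \<le> \<epsilon> * (t - 1)\<^sup>2"
    proof cases
      case 1 then show ?thesis using G1 by (simp add: \<psi>_def)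
    next
      case 2
      obtain z where z: "t < z" "z < 1" "\<psi> 1 - \<psi> t = (1 - t) * \<psi>' z"
        using MVT2[OF 2, of \<psi> \<psi>'] dpsi t by force
      have "\<bar>z - 1\<bar> < \<delta>" using z t kap by auto
      then have "\<bar>\<psi>' z\<bar> \<le> \<epsilon> * \<bar>z - 1\<bar>" unfolding \<psi>'_def using G'b by blast
      also have "\<dots> \<le> \<epsilon> * \<bar>t - 1\<bar>" using z eps by (intro mult_left_mono) auto
      finally have "\<bar>\<psi>' z\<bar> \<le> \<epsilon> * \<bar>t - 1\<bar>" .
      then have "(1 - t) * \<bar>\<psi>' z\<bar> \<le> (1 - t) * (\<epsilon> * \<bar>t - 1\<bar>)" using 2 by (intro mult_left_mono) auto
      moreover have "\<psi> t = - ((1 - t) * \<psi>' z)" using z(3) G1 by (simp add: \<psi>_def)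
      ultimately have "\<bar>\<psi> t\<bar> \<le> \<bar>1 - t\<bar> * (\<epsilon> * \<bar>t - 1\<bar>)" using 2 by (simp add: abs_mult)
      moreover have "\<bar>1 - t\<bar> * (\<epsilon> * \<bar>t - 1\<bar>) = \<epsilon> * (t - 1)\<^sup>2" using 2 by (simp add: power2_eq_square algebra_simps)
      ultimately show ?thesis by simp
    next
      case 3
      obtain z where z: "1 < z" "z < t" "\<psi> t - \<psi> 1 = (t - 1) * \<psi>' z"
        using MVT2[OF 3, of \<psi> \<psi>'] dpsi t by force
      have "\<bar>z - 1\<bar> < \<delta>" using z t kap by auto
      then have "\<bar>\<psi>' z\<bar> \<le> \<epsilon> * \<bar>z - 1\<bar>" unfolding \<psi>'_def using G'b by blast
      also have "\<dots> \<le> \<epsilon> * \<bar>t - 1\<bar>" using z eps by (intro mult_left_mono) auto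
      finally have "\<bar>\<psi>' z\<bar> \<le> \<epsilon> * \<bar>t - 1\<bar>" .
      then have "(t - 1) * \<bar>\<psi>' z\<bar> \<le> (t - 1) * (\<epsilon> * \<bar>t - 1\<bar>)" using 3 by (intro mult_left_mono) auto
      moreover have "\<psi> t = (t - 1) * \<psi>' z" using z(3) G1 by (simp add: \<psi>_def)
      ultimately have "\<bar>\<psi> t\<bar> \<le> \<bar>t - 1\<bar> * (\<epsilon> * \<bar>t - 1\<bar>)" using 3 by (simp add: abs_mult)
      moreover have "\<bar>t - 1\<bar> * (\<epsilon> * \<bar>t - 1\<bar>) = \<epsilon> * (t - 1)\<^sup>2" using 3 by (simp add: power2_eq_square algebra_simps)
      ultimately show ?thesis by simp
    qed
  qed
  then show ?thesis using kap unfolding \<psi>_def by blast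
qed

lemma far_convex:
  fixes G :: "real \<Rightarrow> real"
  assumes cv: "convex_on {0<..} G" and G1: "G 1 = 0" and kap: "0 < \<kappa>" "\<kappa> < 1"
    and t: "0 < t" "\<bar>t - 1\<bar> \<ge> \<kappa>"
    and bp: "G (1 + \<kappa>) \<ge> b * \<kappa>\<^sup>2" and bm: "G (1 - \<kappa>) \<ge> b * \<kappa>\<^sup>2"
  shows "G t \<ge> b * \<kappa> * \<bar>t - 1\<bar>"
proof (cases "t \<ge> 1")
  case True
  then have t1: "t - 1 \<ge> \<kappa>" using t by linarith
  define m where "m = \<kappa> / (t - 1)"
  have m: "0 \<le> m" "m \<le> 1" using t1 kap by (auto simp: m_def field_simps)
  have cvx: "G ((1 - m) *\<^sub>R 1 + m *\<^sub>R t) \<le> (1 - m) * G 1 + m * G t"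
    using convex_onD[OF cv, of m 1 t] m t by auto
  moreover have eqm: "(1 - m) *\<^sub>R 1 + m *\<^sub>R t = 1 + \<kappa>"
  proof -
    have "(1 - m) *\<^sub>R 1 + m *\<^sub>R t = 1 + m * (t - 1)" by (simp add: algebra_simps)
    moreover have "m * (t - 1) = \<kappa>" using t1 kap by (simp add: m_def)
    ultimately show ?thesis by simp
  qed
  have "G (1 + \<kappa>) \<le> (1 - m) * G 1 + m * G t" using cvx unfolding eqm .
  then have "b * \<kappa>\<^sup>2 \<le> m * G t" using bp G1 by simp
  then have "b * \<kappa>\<^sup>2 * (t - 1) \<le> \<kappa> * G t" using t1 kap by (simp add: m_def field_simps)
  then have "\<kappa> * (b * \<kappa> * (t - 1)) \<le> \<kappa> * G t" by (simp add: power2_eq_square algebra_simps)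
  then show ?thesis using kap True by (simp add: abs_of_nonneg)
next
  case False
  then have t1: "1 - t \<ge> \<kappa>" using t by linarith
  define m where "m = \<kappa> / (1 - t)"
  have m: "0 \<le> m" "m \<le> 1" using t1 kap by (auto simp: m_def field_simps)
  have cvx: "G ((1 - m) *\<^sub>R 1 + m *\<^sub>R t) \<le> (1 - m) * G 1 + m * G t"
    using convex_onD[OF cv, of m 1 t] m t by auto
  moreover have eqm: "(1 - m) *\<^sub>R 1 + m *\<^sub>R t = 1 - \<kappa>"
  proof -
    have "(1 - m) *\<^sub>R 1 + m *\<^sub>R t = 1 - m * (1 - t)" by (simp add: algebra_simps)
    moreover have "m * (1 - t) = \<kappa>" using t1 kap by (simp add: m_def)
    ultimately show ?thesis by simp
  qed
  have "G (1 - \<kappa>) \<le> (1 - m) * G 1 + m * G t" using cvx unfolding eqm .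
  then have "b * \<kappa>\<^sup>2 \<le> m * G t" using bm G1 by simp
  then have "b * \<kappa>\<^sup>2 * (1 - t) \<le> \<kappa> * G t" using t1 kap by (simp add: m_def field_simps)
  then have "\<kappa> * (b * \<kappa> * (1 - t)) \<le> \<kappa> * G t" by (simp add: power2_eq_square algebra_simps)
  then show ?thesis using kap False by (simp add: abs_of_neg)
qed

lemma kl_ge_sq:
  assumes w: "w \<in> distrs" and v: "v \<in> distrs" "\<forall>x. 0 < v x"
  shows "(\<Sum>x\<in>UNIV. (w x - v x)\<^sup>2) \<le> 4 * kl w v"
proof -
  have w0: "\<And>x. 0 \<le> w x" "\<And>x. w x \<le> 1" using distrsD[OF w] by auto
  have v0: "\<And>x. 0 < v x" "\<And>x. v x \<le> 1" using distrsD[OF v(1)] v(2) by auto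
  have pt: "w x * ln (w x / v x) \<ge> 2 * w x - 2 * sqrt (w x * v x)" for x
  proof (cases "w x = 0")
    case False
    then have wp: "0 < w x" using w0[of x] by (simp add: less_le)
    have r: "0 < v x / w x" using wp v0[of x] by simp
    have "ln (w x / v x) = - 2 * ln (sqrt (v x / w x))"
      using wp v0[of x] r by (simp add: ln_sqrt ln_div)
    also have "\<dots> \<ge> - 2 * (sqrt (v x / w x) - 1)" using r ln_le_minus_one[of "sqrt (v x / w x)"] by simp
    finally have "w x * ln (w x / v x) \<ge> w x * (- 2 * (sqrt (v x / w x) - 1))" using wp by (simp add: mult_left_mono)
    moreover have "w x * sqrt (v x / w x) = sqrt (w x * v x)"
    proof -
      have "w x * sqrt (v x / w x) = sqrt ((w x)\<^sup>2) * sqrt (v x / w x)" using wp by simp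
      also have "\<dots> = sqrt ((w x)\<^sup>2 * (v x / w x))" by (simp only: real_sqrt_mult)
      also have "(w x)\<^sup>2 * (v x / w x) = w x * v x" using wp by (simp add: power2_eq_square)
      finally show ?thesis .
    qed
    ultimately show ?thesis by (simp add: algebra_simps)
  qed simp
  have sq: "(w x - v x)\<^sup>2 \<le> 4 * (2 * w x - 2 * sqrt (w x * v x)) + 4 * (v x - w x) * 1" for x
  proof -
    have a: "sqrt (w x) \<le> 1" "sqrt (v x) \<le> 1" using w0 v0 by auto
    have e: "w x - v x = (sqrt (w x) - sqrt (v x)) * (sqrt (w x) + sqrt (v x))"
      using w0[of x] v0[of x] by (simp add: algebra_simps)
    have "(w x - v x)\<^sup>2 = (sqrt (w x) - sqrt (v x))\<^sup>2 * (sqrt (w x) + sqrt (v x))\<^sup>2"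
      unfolding e by (simp add: power_mult_distrib)
    also have "\<dots> \<le> (sqrt (w x) - sqrt (v x))\<^sup>2 * 2\<^sup>2"
    proof -
      have s1: "sqrt (w x) \<le> 1" using w0[of x] by simp
      have s2: "sqrt (v x) \<le> 1" using v0[of x] by simp
      have s3: "sqrt (w x) + sqrt (v x) \<le> 2" using s1 s2 by linarith
      have s4: "0 \<le> sqrt (w x) + sqrt (v x)" using w0[of x] v0[of x] by simp
      have "(sqrt (w x) + sqrt (v x))\<^sup>2 \<le> 2\<^sup>2" by (rule power_mono[OF s3 s4])
      then show ?thesis by (intro mult_left_mono) auto
    qed
    also have "(sqrt (w x) - sqrt (v x))\<^sup>2 = w x + v x - 2 * sqrt (w x * v x)"
      using w0[of x] v0[of x] by (simp add: power2_diff real_sqrt_mult less_imp_le)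
    finally show ?thesis by simp
  qed
  have "(\<Sum>x\<in>UNIV. (w x - v x)\<^sup>2) \<le> (\<Sum>x\<in>UNIV. 4 * (2 * w x - 2 * sqrt (w x * v x)) + 4 * (v x - w x))"
    using sq by (intro sum_mono) simp
  also have "\<dots> = 4 * (\<Sum>x\<in>UNIV. 2 * w x - 2 * sqrt (w x * v x)) + 4 * ((\<Sum>x\<in>UNIV. v x) - (\<Sum>x\<in>UNIV. w x))"
    by (simp add: sum.distrib sum_distrib_left sum_subtractf)
  also have "(\<Sum>x\<in>UNIV. v x) - (\<Sum>x\<in>UNIV. w x) = 0" using distrsD(2)[OF w] distrsD(2)[OF v(1)] by simp
  also have "4 * (\<Sum>x\<in>UNIV. 2 * w x - 2 * sqrt (w x * v x)) \<le> 4 * kl w v"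
    unfolding kl_alt using pt by (intro mult_left_mono sum_mono) auto
  finally show ?thesis by simp
qed

definition famL :: "real \<Rightarrow> (('a::finite \<Rightarrow> real) \<Rightarrow> ('a \<Rightarrow> real) \<Rightarrow> ereal) \<Rightarrow> bool" where
  "famL \<alpha> d \<longleftrightarrow> (\<forall>\<epsilon>. 0 < \<epsilon> \<and> \<epsilon> < 1 \<longrightarrow> (\<exists>\<kappa> c r0. 0 < \<kappa> \<and> \<kappa> < 1 \<and> 0 < c \<and> 0 < r0 \<and>
     (\<forall>r q w. 0 < r \<and> r < r0 \<and> q \<in> distrs \<and> w \<in> distrs \<and> d q w \<le> ereal r \<longrightarrow>
        (\<exists>a. (\<forall>x. 0 < w x \<and> \<bar>q x - w x\<bar> \<le> \<kappa> * w x \<longrightarrow> (1-\<epsilon>) * (q x - w x)\<^sup>2 / (2 * w x) \<le> a x) \<and>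
             (\<forall>x. \<not> (0 < w x \<and> \<bar>q x - w x\<bar> \<le> \<kappa> * w x) \<longrightarrow> c * \<bar>q x - w x\<bar> \<le> a x) \<and>
             (\<Sum>x\<in>UNIV. a x) \<le> (1+\<epsilon>) * r / \<alpha>))))"

definition famU :: "real \<Rightarrow> (('a::finite \<Rightarrow> real) \<Rightarrow> ('a \<Rightarrow> real) \<Rightarrow> ereal) \<Rightarrow> bool" where
  "famU \<alpha> d \<longleftrightarrow> (\<forall>\<epsilon>. 0 < \<epsilon> \<and> \<epsilon> < 1 \<longrightarrow> (\<exists>\<kappa> r0. 0 < \<kappa> \<and> 0 < r0 \<and>
     (\<forall>r q w. 0 < r \<and> r < r0 \<and> q \<in> distrs \<and> w \<in> distrs \<and> (\<forall>x. w x = 0 \<longrightarrow> q x = 0) \<and>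
        (\<forall>x. 0 < w x \<longrightarrow> \<bar>q x - w x\<bar> \<le> \<kappa> * w x) \<and>
        (\<Sum>x\<in>UNIV. if 0 < w x then (q x - w x)\<^sup>2 / w x else 0) \<le> 2 * (1-\<epsilon>) * r / \<alpha> \<longrightarrow>
        d q w \<le> ereal r)))"

definition Gprops :: "(real \<Rightarrow> real) \<Rightarrow> (real \<Rightarrow> real) \<Rightarrow> bool" where
  "Gprops G G' \<longleftrightarrow> convex_on {0<..} G \<and> G 1 = 0 \<and> G' 1 = 0 \<and>
     (\<forall>t. \<bar>t - 1\<bar> < 1/2 \<longrightarrow> (G has_real_derivative G' t) (at t)) \<and> (G' has_real_derivative 1) (at 1)"

lemma Gbounds:
  assumes GP: "Gprops G G'" and eps: "0 < \<epsilon>" "\<epsilon> < 1"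
  shows "\<exists>\<kappa> c. 0 < \<kappa> \<and> \<kappa> < 1/2 \<and> 0 < c \<and> c < 1 \<and>
     (\<forall>t. \<bar>t - 1\<bar> \<le> \<kappa> \<longrightarrow> (1-\<epsilon>) * (t-1)\<^sup>2 / 2 \<le> G t \<and> G t \<le> (1+\<epsilon>) * (t-1)\<^sup>2 / 2) \<and>
     (\<forall>t. 0 < t \<and> \<kappa> \<le> \<bar>t - 1\<bar> \<longrightarrow> c * \<bar>t - 1\<bar> \<le> G t)"
proof -
  have cv: "convex_on {0<..} G" and G1: "G 1 = 0" and G'1: "G' 1 = 0"
    and der: "\<And>t. \<bar>t - 1\<bar> < 1/2 \<Longrightarrow> (G has_real_derivative G' t) (at t)"
    and der2: "(G' has_real_derivative 1) (at 1)" using GP by (auto simp: Gprops_def)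
  obtain \<kappa> where kap: "\<kappa> > 0" "\<kappa> < 1/2"
    and loc: "\<And>t. \<bar>t - 1\<bar> \<le> \<kappa> \<Longrightarrow> \<bar>G t - 1 * (t - 1)\<^sup>2 / 2\<bar> \<le> (\<epsilon>/2) * (t - 1)\<^sup>2"
    using LT[of "1/2" G G' 1 "\<epsilon>/2"] der G1 G'1 der2 eps by auto
  have nb: "(1-\<epsilon>) * (t-1)\<^sup>2 / 2 \<le> G t \<and> G t \<le> (1+\<epsilon>) * (t-1)\<^sup>2 / 2" if "\<bar>t - 1\<bar> \<le> \<kappa>" for t
    using loc[OF that] by (auto simp: field_simps abs_le_iff)
  define c where "c = (1 - \<epsilon>) / 2 * \<kappa>"
  have far: "c * \<bar>t - 1\<bar> \<le> G t" if "0 < t" "\<kappa> \<le> \<bar>t - 1\<bar>" for t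
  proof -
    have "G (1 + \<kappa>) \<ge> (1 - \<epsilon>) / 2 * \<kappa>\<^sup>2" using nb[of "1 + \<kappa>"] kap by (simp add: field_simps)
    moreover have "G (1 - \<kappa>) \<ge> (1 - \<epsilon>) / 2 * \<kappa>\<^sup>2" using nb[of "1 - \<kappa>"] kap by (simp add: field_simps)
    ultimately have "G t \<ge> (1 - \<epsilon>) / 2 * \<kappa> * \<bar>t - 1\<bar>"
      using far_convex[OF cv G1, of \<kappa> t "(1 - \<epsilon>) / 2"] kap that by auto
    then show ?thesis by (simp add: c_def)
  qed
  have "(1-\<epsilon>)/2 * \<kappa> \<le> 1/2 * \<kappa>" using eps kap by (intro mult_right_mono) auto
  then have "c < 1" using kap unfolding c_def by linarith
  moreover have "0 < c" using eps kap unfolding c_def by simp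
  ultimately have "0 < c" "c < 1" by auto
  then show ?thesis using kap nb far by blast
qed

lemma famL_from_G:
  fixes d :: "('a::finite \<Rightarrow> real) \<Rightarrow> ('a \<Rightarrow> real) \<Rightarrow> ereal"
  assumes GP: "Gprops G G'" and G0: "0 < G 0" and Cm: "0 < Cm" and al: "0 < \<alpha>"
    and H: "\<And>\<epsilon>. 0 < \<epsilon> \<Longrightarrow> \<epsilon> < 1 \<Longrightarrow> \<exists>r0>0. \<forall>r q w. 0 < r \<and> r < r0 \<and> q \<in> distrs \<and> w \<in> distrs \<and> d q w \<le> ereal r \<longrightarrow>
        (\<Sum>x\<in>UNIV. if 0 < w x then w x * G (q x / w x) else Cm * q x) \<le> (1+\<epsilon>) * r / \<alpha>"
  shows "famL \<alpha> d"
  unfolding famL_def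
proof (intro allI impI)
  fix \<epsilon> :: real assume eps: "0 < \<epsilon> \<and> \<epsilon> < 1"
  obtain \<kappa> cG where kap: "0 < \<kappa>" "\<kappa> < 1/2" "0 < cG"
    and nb: "\<And>t. \<bar>t - 1\<bar> \<le> \<kappa> \<Longrightarrow> (1-\<epsilon>) * (t-1)\<^sup>2 / 2 \<le> G t"
    and far: "\<And>t. 0 < t \<Longrightarrow> \<kappa> \<le> \<bar>t - 1\<bar> \<Longrightarrow> cG * \<bar>t - 1\<bar> \<le> G t"
    using Gbounds[OF GP, of \<epsilon>] eps by blast
  obtain r0 where r0: "r0 > 0" and Hr: "\<And>r q w. 0 < r \<Longrightarrow> r < r0 \<Longrightarrow> q \<in> distrs \<Longrightarrow> w \<in> distrs \<Longrightarrow> d q w \<le> ereal r \<Longrightarrow>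
        (\<Sum>x\<in>UNIV. if 0 < w x then w x * G (q x / w x) else Cm * q x) \<le> (1+\<epsilon>) * r / \<alpha>"
    using H[of \<epsilon>] eps by blast
  define c where "c = min cG (min (G 0) Cm)"
  have c0: "0 < c" using kap G0 Cm by (simp add: c_def)
  show "\<exists>\<kappa> c r0. 0 < \<kappa> \<and> \<kappa> < 1 \<and> 0 < c \<and> 0 < r0 \<and>
     (\<forall>r (q::'a\<Rightarrow>real) w. 0 < r \<and> r < r0 \<and> q \<in> distrs \<and> w \<in> distrs \<and> d q w \<le> ereal r \<longrightarrow>
        (\<exists>a. (\<forall>x. 0 < w x \<and> \<bar>q x - w x\<bar> \<le> \<kappa> * w x \<longrightarrow> (1-\<epsilon>) * (q x - w x)\<^sup>2 / (2 * w x) \<le> a x) \<and>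
             (\<forall>x. \<not> (0 < w x \<and> \<bar>q x - w x\<bar> \<le> \<kappa> * w x) \<longrightarrow> c * \<bar>q x - w x\<bar> \<le> a x) \<and>
             (\<Sum>x\<in>UNIV. a x) \<le> (1+\<epsilon>) * r / \<alpha>))"
  proof (rule exI[of _ \<kappa>], rule exI[of _ c], rule exI[of _ r0], intro conjI allI impI)
    show "0 < \<kappa>" using kap by simp
    show "\<kappa> < 1" using kap by simp
    show "0 < c" using c0 by simp
    show "0 < r0" using r0 by simp
    fix r and q w :: "'a \<Rightarrow> real" assume A: "0 < r \<and> r < r0 \<and> q \<in> distrs \<and> w \<in> distrs \<and> d q w \<le> ereal r"
    have q0: "\<And>x. 0 \<le> q x" and w0: "\<And>x. 0 \<le> w x" using A distrsD by blast+
    define a where "a = (\<lambda>x. if 0 < w x then w x * G (q x / w x) else Cm * q x)"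
    show "\<exists>a. (\<forall>x. 0 < w x \<and> \<bar>q x - w x\<bar> \<le> \<kappa> * w x \<longrightarrow> (1-\<epsilon>) * (q x - w x)\<^sup>2 / (2 * w x) \<le> a x) \<and>
             (\<forall>x. \<not> (0 < w x \<and> \<bar>q x - w x\<bar> \<le> \<kappa> * w x) \<longrightarrow> c * \<bar>q x - w x\<bar> \<le> a x) \<and>
             (\<Sum>x\<in>UNIV. a x) \<le> (1+\<epsilon>) * r / \<alpha>"
    proof (intro exI[of _ a] conjI allI impI)
      fix x assume B: "0 < w x \<and> \<bar>q x - w x\<bar> \<le> \<kappa> * w x"
      then have wx: "0 < w x" by simp
      have t: "\<bar>q x / w x - 1\<bar> \<le> \<kappa>"
      proof -
        have "\<bar>q x / w x - 1\<bar> = \<bar>q x - w x\<bar> / w x" using wx by (simp add: field_simps abs_divide)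
        then show ?thesis using B wx by (simp add: field_simps)
      qed
      have "w x * ((1-\<epsilon>) * (q x / w x - 1)\<^sup>2 / 2) \<le> w x * G (q x / w x)"
        by (rule mult_left_mono[OF nb[OF t]]) (use wx in simp)
      moreover have "w x * ((1-\<epsilon>) * (q x / w x - 1)\<^sup>2 / 2) = (1-\<epsilon>) * (q x - w x)\<^sup>2 / (2 * w x)"
        using wx by (simp add: field_simps power2_eq_square)
      moreover have "a x = w x * G (q x / w x)" using wx by (simp add: a_def)
      ultimately show "(1-\<epsilon>) * (q x - w x)\<^sup>2 / (2 * w x) \<le> a x" by linarith
    next
      fix x assume B: "\<not> (0 < w x \<and> \<bar>q x - w x\<bar> \<le> \<kappa> * w x)"
      show "c * \<bar>q x - w x\<bar> \<le> a x"
      proof (cases "0 < w x")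
        case False
        then have "w x = 0" using w0[of x] by simp
        then show ?thesis using q0[of x] Cm by (simp add: a_def c_def mult_right_mono)
      next
        case wx: True
        with B have gt: "\<bar>q x - w x\<bar> > \<kappa> * w x" by simp
        show ?thesis
        proof (cases "q x = 0")
          case True
          have "c * \<bar>q x - w x\<bar> = c * w x" using True wx by simp
          also have "\<dots> \<le> G 0 * w x" using wx by (intro mult_right_mono) (auto simp: c_def)
          finally show ?thesis using True wx by (simp add: a_def mult.commute)
        next
          case False
          then have qx: "0 < q x" using q0[of x] by simp
          have "\<bar>q x / w x - 1\<bar> = \<bar>q x - w x\<bar> / w x" using wx by (simp add: field_simps abs_divide)
          then have t: "\<kappa> \<le> \<bar>q x / w x - 1\<bar>" using gt wx by (simp add: field_simps)
          have "cG * \<bar>q x / w x - 1\<bar> \<le> G (q x / w x)" using far[OF _ t] qx wx by simp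
          then have "w x * (cG * \<bar>q x / w x - 1\<bar>) \<le> w x * G (q x / w x)" using wx by (intro mult_left_mono) auto
          moreover have "w x * (cG * \<bar>q x / w x - 1\<bar>) = cG * \<bar>q x - w x\<bar>"
            using wx by (simp add: \<open>\<bar>q x / w x - 1\<bar> = \<bar>q x - w x\<bar> / w x\<close>)
          moreover have "c * \<bar>q x - w x\<bar> \<le> cG * \<bar>q x - w x\<bar>" by (intro mult_right_mono) (auto simp: c_def)
          ultimately show ?thesis using wx by (simp add: a_def)
        qed
      qed
    next
      show "(\<Sum>x\<in>UNIV. a x) \<le> (1+\<epsilon>) * r / \<alpha>" unfolding a_def using Hr A by blast
    qed
  qed
qed

lemma famU_from_G:
  fixes d :: "('a::finite \<Rightarrow> real) \<Rightarrow> ('a \<Rightarrow> real) \<Rightarrow> ereal"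
  assumes GP: "Gprops G G'" and al: "0 < \<alpha>"
    and H: "\<And>\<epsilon>. 0 < \<epsilon> \<Longrightarrow> \<epsilon> < 1 \<Longrightarrow> \<exists>r0>0. \<forall>r q w. 0 < r \<and> r < r0 \<and> q \<in> distrs \<and> w \<in> distrs \<and>
        (\<forall>x. w x = 0 \<longrightarrow> q x = 0) \<and> (\<forall>x. 0 < w x \<longrightarrow> 0 < q x) \<and>
        (\<Sum>x\<in>UNIV. if 0 < w x then w x * G (q x / w x) else 0) \<le> (1 - \<epsilon>\<^sup>2) * r / \<alpha> \<longrightarrow> d q w \<le> ereal r"
  shows "famU \<alpha> d"
  unfolding famU_def
proof (intro allI impI)
  fix \<epsilon> :: real assume eps: "0 < \<epsilon> \<and> \<epsilon> < 1"
  obtain \<kappa> cG where kap: "0 < \<kappa>" "\<kappa> < 1/2"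
    and nb: "\<And>t. \<bar>t - 1\<bar> \<le> \<kappa> \<Longrightarrow> G t \<le> (1+\<epsilon>) * (t-1)\<^sup>2 / 2"
    using Gbounds[OF GP, of \<epsilon>] eps by blast
  obtain r0 where r0: "r0 > 0" and Hr: "\<And>r q w. 0 < r \<and> r < r0 \<and> q \<in> distrs \<and> w \<in> distrs \<and>
        (\<forall>x. w x = 0 \<longrightarrow> q x = 0) \<and> (\<forall>x. 0 < w x \<longrightarrow> 0 < q x) \<and>
        (\<Sum>x\<in>UNIV. if 0 < w x then w x * G (q x / w x) else 0) \<le> (1 - \<epsilon>\<^sup>2) * r / \<alpha> \<Longrightarrow> d q w \<le> ereal r"
    using H[of \<epsilon>] eps by blast
  show "\<exists>\<kappa> r0. 0 < \<kappa> \<and> 0 < r0 \<and>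
     (\<forall>r (q::'a\<Rightarrow>real) w. 0 < r \<and> r < r0 \<and> q \<in> distrs \<and> w \<in> distrs \<and> (\<forall>x. w x = 0 \<longrightarrow> q x = 0) \<and>
        (\<forall>x. 0 < w x \<longrightarrow> \<bar>q x - w x\<bar> \<le> \<kappa> * w x) \<and>
        (\<Sum>x\<in>UNIV. if 0 < w x then (q x - w x)\<^sup>2 / w x else 0) \<le> 2 * (1-\<epsilon>) * r / \<alpha> \<longrightarrow>
        d q w \<le> ereal r)"
  proof (rule exI[of _ \<kappa>], rule exI[of _ r0], intro conjI allI impI)
    show "0 < \<kappa>" using kap by simp
    show "0 < r0" using r0 by simp
    fix r and q w :: "'a \<Rightarrow> real" assume A: "0 < r \<and> r < r0 \<and> q \<in> distrs \<and> w \<in> distrs \<and> (\<forall>x. w x = 0 \<longrightarrow> q x = 0) \<and>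
        (\<forall>x. 0 < w x \<longrightarrow> \<bar>q x - w x\<bar> \<le> \<kappa> * w x) \<and>
        (\<Sum>x\<in>UNIV. if 0 < w x then (q x - w x)\<^sup>2 / w x else 0) \<le> 2 * (1-\<epsilon>) * r / \<alpha>"
    have pos: "\<forall>x. 0 < w x \<longrightarrow> 0 < q x"
    proof (intro allI impI)
      fix x assume wx: "0 < w x"
      then have "\<bar>q x - w x\<bar> \<le> \<kappa> * w x" using A by blast
      moreover have "\<kappa> * w x < w x" using kap wx by simp
      ultimately show "0 < q x" by linarith
    qed
    have pt: "(if 0 < w x then w x * G (q x / w x) else 0) \<le> (1+\<epsilon>)/2 * (if 0 < w x then (q x - w x)\<^sup>2 / w x else 0)" for x
    proof (cases "0 < w x")
      case wx: True
      have "\<bar>q x / w x - 1\<bar> = \<bar>q x - w x\<bar> / w x" using wx by (simp add: field_simps abs_divide)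
      then have t: "\<bar>q x / w x - 1\<bar> \<le> \<kappa>" using A wx by (simp add: field_simps)
      have "w x * G (q x / w x) \<le> w x * ((1+\<epsilon>) * (q x / w x - 1)\<^sup>2 / 2)" using nb[OF t] wx by (intro mult_left_mono) auto
      also have "\<dots> = (1+\<epsilon>)/2 * ((q x - w x)\<^sup>2 / w x)" using wx by (simp add: field_simps power2_eq_square)
      finally show ?thesis using wx by simp
    qed simp
    have "(\<Sum>x\<in>UNIV. if 0 < w x then w x * G (q x / w x) else 0) \<le> (\<Sum>x\<in>UNIV. (1+\<epsilon>)/2 * (if 0 < w x then (q x - w x)\<^sup>2 / w x else 0))"
      by (intro sum_mono pt)
    also have "\<dots> = (1+\<epsilon>)/2 * (\<Sum>x\<in>UNIV. if 0 < w x then (q x - w x)\<^sup>2 / w x else 0)" by (simp add: sum_distrib_left)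
    also have "\<dots> \<le> (1+\<epsilon>)/2 * (2 * (1-\<epsilon>) * r / \<alpha>)" using A eps by (intro mult_left_mono) auto
    also have "\<dots> = (1 - \<epsilon>\<^sup>2) * r / \<alpha>" using al by (simp add: field_simps power2_eq_square)
    finally show "d q w \<le> ereal r" using Hr A pos by blast
  qed
qed

definition hR :: "real \<Rightarrow> real \<Rightarrow> real" where
  "hR \<alpha> t = (t powr \<alpha> - 1 - \<alpha> * (t - 1)) / (\<alpha> * (\<alpha> - 1))"
definition hR' :: "real \<Rightarrow> real \<Rightarrow> real" where
  "hR' \<alpha> t = (t powr (\<alpha> - 1) - 1) / (\<alpha> - 1)"
definition hK :: "real \<Rightarrow> real" where
  "hK t = t * ln t - t + 1"

definition rsum :: "real \<Rightarrow> ('a::finite \<Rightarrow> real) \<Rightarrow> ('a \<Rightarrow> real) \<Rightarrow> real" where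
  "rsum \<alpha> q w = (\<Sum>x\<in>{x. 0 < q x \<and> 0 < w x}. q x powr \<alpha> * w x powr (1 - \<alpha>))"

lemma hR_deriv:
  assumes "0 < t" "0 < \<alpha>" "\<alpha> \<noteq> 1"
  shows "(hR \<alpha> has_real_derivative hR' \<alpha> t) (at t)"
proof -
  have "((\<lambda>t. (t powr \<alpha> - 1 - \<alpha> * (t - 1)) / (\<alpha> * (\<alpha> - 1))) has_real_derivative
          (\<alpha> * t powr (\<alpha> - 1) - 0 - \<alpha> * (1 - 0)) / (\<alpha> * (\<alpha> - 1))) (at t)"
  proof -
    have p: "((\<lambda>t. t powr \<alpha>) has_real_derivative \<alpha> * t powr (\<alpha> - 1)) (at t)"
      using has_real_derivative_powr assms by blast
    show ?thesis by (intro DERIV_cdivide DERIV_diff p DERIV_const DERIV_cmult DERIV_ident)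
  qed
  moreover have "(\<alpha> * t powr (\<alpha> - 1) - 0 - \<alpha> * (1 - 0)) / (\<alpha> * (\<alpha> - 1)) = hR' \<alpha> t"
    using assms by (simp add: hR'_def field_simps)
  ultimately show ?thesis unfolding hR_def[abs_def] by simp
qed

lemma hR'_deriv:
  assumes "0 < \<alpha>" "\<alpha> \<noteq> 1"
  shows "(hR' \<alpha> has_real_derivative 1) (at 1)"
proof -
  have "((\<lambda>t. (t powr (\<alpha> - 1) - 1) / (\<alpha> - 1)) has_real_derivative
          ((\<alpha> - 1) * 1 powr (\<alpha> - 1 - 1) - 0) / (\<alpha> - 1)) (at 1)"
  proof -
    have p: "((\<lambda>t. t powr (\<alpha> - 1)) has_real_derivative (\<alpha> - 1) * 1 powr (\<alpha> - 1 - 1)) (at 1)"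
      using has_real_derivative_powr[of 1 "\<alpha> - 1"] by simp
    show ?thesis by (intro DERIV_cdivide DERIV_diff p DERIV_const)
  qed
  moreover have "((\<alpha> - 1) * 1 powr (\<alpha> - 1 - 1) - 0) / (\<alpha> - 1) = 1" using assms by simp
  ultimately show ?thesis unfolding hR'_def[abs_def] by simp
qed

lemma Gprops_hR:
  assumes "0 < \<alpha>" "\<alpha> \<noteq> 1"
  shows "Gprops (hR \<alpha>) (hR' \<alpha>)"
  unfolding Gprops_def
proof (intro conjI allI impI)
  show "convex_on {0<..} (hR \<alpha>)"
  proof (rule convex_on_realI[where f' = "hR' \<alpha>"])
    show "connected ({0<..} :: real set)" by simp
    show "\<And>x. x \<in> {0<..} \<Longrightarrow> (hR \<alpha> has_real_derivative hR' \<alpha> x) (at x)"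
      using hR_deriv assms by auto
    fix x y :: real assume xy: "x \<in> {0<..}" "y \<in> {0<..}" "x \<le> y"
    show "hR' \<alpha> x \<le> hR' \<alpha> y"
    proof (cases "\<alpha> > 1")
      case True
      then have "x powr (\<alpha> - 1) \<le> y powr (\<alpha> - 1)" using xy by (intro powr_mono2) auto
      then show ?thesis using True by (simp add: hR'_def divide_right_mono)
    next
      case False
      then have a1: "\<alpha> < 1" using assms by simp
      then have "y powr (\<alpha> - 1) \<le> x powr (\<alpha> - 1)" using xy by (intro powr_mono2') auto
      then show ?thesis using a1 by (simp add: hR'_def divide_right_mono_neg)
    qed
  qed
  show "hR \<alpha> 1 = 0" by (simp add: hR_def)
  show "hR' \<alpha> 1 = 0" by (simp add: hR'_def)
  show "(hR \<alpha> has_real_derivative hR' \<alpha> t) (at t)" if "\<bar>t - 1\<bar> < 1/2" for t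
    using that by (intro hR_deriv assms) linarith
  show "(hR' \<alpha> has_real_derivative 1) (at 1)" using hR'_deriv assms by auto
qed

lemma hR0: "0 < \<alpha> \<Longrightarrow> \<alpha> \<noteq> 1 \<Longrightarrow> hR \<alpha> 0 = 1 / \<alpha>"
  by (simp add: hR_def field_simps)

lemma Gprops_hK: "Gprops hK ln"
  unfolding Gprops_def
proof (intro conjI allI impI)
  have d: "(hK has_real_derivative ln x) (at x)" if "0 < x" for x
  proof -
    have "((\<lambda>t. t * ln t - t + 1) has_real_derivative (1 * ln x + x * (1 / x) - 1 + 0)) (at x)"
      using that by (intro derivative_eq_intros) auto
    then show ?thesis using that by (simp add: hK_def[abs_def])
  qed
  show "convex_on {0<..} hK"
    by (rule convex_on_realI[where f' = ln]) (auto intro: d)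
  show "hK 1 = 0" by (simp add: hK_def)
  show "ln 1 = (0::real)" by simp
  show "(hK has_real_derivative ln t) (at t)" if "\<bar>t - 1\<bar> < 1/2" for t using that by (intro d) linarith
  show "(ln has_real_derivative 1) (at (1::real))"
    using DERIV_ln[of "1::real"] by simp
qed

lemma if_w_sum:
  assumes "w \<in> distrs" "q \<in> distrs"
  shows "(\<Sum>x\<in>UNIV. if 0 < w x then w x else 0) = 1"
    "(\<Sum>x\<in>UNIV. if 0 < w x then q x else 0) = 1 - (\<Sum>x\<in>UNIV. if w x = 0 then q x else 0)"
proof -
  have w0: "\<And>x. 0 \<le> w x" using distrsD[OF assms(1)] by auto
  have "(if 0 < w x then w x else 0) = w x" for x using w0[of x] by auto
  then show "(\<Sum>x\<in>UNIV. if 0 < w x then w x else 0) = 1" using distrsD(2)[OF assms(1)] by simp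
  have "(if 0 < w x then q x else 0) = q x - (if w x = 0 then q x else 0)" for x using w0[of x] by auto
  then have "(\<Sum>x\<in>UNIV. if 0 < w x then q x else 0) = (\<Sum>x\<in>UNIV. q x) - (\<Sum>x\<in>UNIV. if w x = 0 then q x else 0)"
    by (simp add: sum_subtractf)
  then show "(\<Sum>x\<in>UNIV. if 0 < w x then q x else 0) = 1 - (\<Sum>x\<in>UNIV. if w x = 0 then q x else 0)"
    using distrsD(2)[OF assms(2)] by simp
qed

lemma rsum_identity:
  assumes al: "0 < \<alpha>" "\<alpha> \<noteq> 1" and w: "w \<in> distrs" and q: "q \<in> distrs"
  shows "rsum \<alpha> q w = 1 - \<alpha> * (\<Sum>x\<in>UNIV. if w x = 0 then q x else 0)
            + \<alpha> * (\<alpha> - 1) * (\<Sum>x\<in>UNIV. if 0 < w x then w x * hR \<alpha> (q x / w x) else 0)"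
proof -
  have w0: "\<And>x. 0 \<le> w x" and q0: "\<And>x. 0 \<le> q x" using distrsD w q by blast+
  have "rsum \<alpha> q w = (\<Sum>x\<in>UNIV. if 0 < q x \<and> 0 < w x then q x powr \<alpha> * w x powr (1 - \<alpha>) else 0)"
    unfolding rsum_def by (simp add: sum.inter_filter[symmetric])
  also have "\<dots> = (\<Sum>x\<in>UNIV. (if 0 < w x then w x else 0) + \<alpha> * ((if 0 < w x then q x else 0) - (if 0 < w x then w x else 0))
        + \<alpha> * (\<alpha> - 1) * (if 0 < w x then w x * hR \<alpha> (q x / w x) else 0))"
  proof (intro sum.cong refl)
    fix x
    show "(if 0 < q x \<and> 0 < w x then q x powr \<alpha> * w x powr (1 - \<alpha>) else 0) =
      (if 0 < w x then w x else 0) + \<alpha> * ((if 0 < w x then q x else 0) - (if 0 < w x then w x else 0))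
        + \<alpha> * (\<alpha> - 1) * (if 0 < w x then w x * hR \<alpha> (q x / w x) else 0)"
    proof (cases "0 < w x")
      case False then show ?thesis by simp
    next
      case wx: True
      have key: "\<alpha> * (\<alpha> - 1) * (w x * hR \<alpha> (q x / w x)) = w x * (q x / w x) powr \<alpha> - w x - \<alpha> * (q x - w x)"
        using wx al by (simp add: hR_def field_simps)
      have lhs: "(if 0 < q x \<and> 0 < w x then q x powr \<alpha> * w x powr (1 - \<alpha>) else 0) = w x * (q x / w x) powr \<alpha>"
      proof (cases "q x = 0")
        case True then show ?thesis by simp
      next
        case False
        then have qx: "0 < q x" using q0[of x] by simp
        have "w x powr (1 - \<alpha>) = w x / w x powr \<alpha>" using wx by (simp add: powr_diff)
        then show ?thesis using qx wx by (simp add: powr_divide)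
      qed
      show ?thesis unfolding lhs using wx key by (simp add: algebra_simps)
    qed
  qed
  also have "\<dots> = (\<Sum>x\<in>UNIV. if 0 < w x then w x else 0) + \<alpha> * ((\<Sum>x\<in>UNIV. if 0 < w x then q x else 0) - (\<Sum>x\<in>UNIV. if 0 < w x then w x else 0))
        + \<alpha> * (\<alpha> - 1) * (\<Sum>x\<in>UNIV. if 0 < w x then w x * hR \<alpha> (q x / w x) else 0)"
    by (simp add: sum.distrib sum_subtractf sum_distrib_left right_diff_distrib)
  also have "\<dots> = 1 - \<alpha> * (\<Sum>x\<in>UNIV. if w x = 0 then q x else 0)
            + \<alpha> * (\<alpha> - 1) * (\<Sum>x\<in>UNIV. if 0 < w x then w x * hR \<alpha> (q x / w x) else 0)"
    using if_w_sum[OF w q] by simp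
  finally show ?thesis .
qed

lemma kl_identity:
  assumes w: "w \<in> distrs" and q: "q \<in> distrs" and ac: "\<And>x. w x = 0 \<Longrightarrow> q x = 0"
  shows "kl q w = (\<Sum>x\<in>UNIV. if 0 < w x then w x * hK (q x / w x) else 0)"
proof -
  have w0: "\<And>x. 0 \<le> w x" and q0: "\<And>x. 0 \<le> q x" using distrsD w q by blast+
  have pt: "q x * ln (q x / w x) = (if 0 < w x then w x * hK (q x / w x) else 0) + (q x - w x)" for x
  proof (cases "0 < w x")
    case False
    then have "w x = 0" using w0[of x] by simp
    then show ?thesis using ac[of x] by simp
  next
    case True
    then show ?thesis by (simp add: hK_def field_simps)
  qed
  have "kl q w = (\<Sum>x\<in>UNIV. (if 0 < w x then w x * hK (q x / w x) else 0) + (q x - w x))"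
    unfolding kl_alt using pt by simp
  also have "\<dots> = (\<Sum>x\<in>UNIV. if 0 < w x then w x * hK (q x / w x) else 0) + ((\<Sum>x\<in>UNIV. q x) - (\<Sum>x\<in>UNIV. w x))"
    by (simp add: sum.distrib sum_subtractf)
  also have "(\<Sum>x\<in>UNIV. q x) - (\<Sum>x\<in>UNIV. w x) = 0" using distrsD(2)[OF w] distrsD(2)[OF q] by simp
  finally show ?thesis by simp
qed

lemma rsum_pos:
  assumes w: "w \<in> distrs" and q: "q \<in> distrs" and ac: "\<And>x. w x = 0 \<Longrightarrow> q x = 0"
  shows "0 < rsum \<alpha> q w"
proof -
  have w0: "\<And>x. 0 \<le> w x" and q0: "\<And>x. 0 \<le> q x" using distrsD w q by blast+
  obtain x where qx: "0 < q x"
  proof (rule ccontr)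
    assume "\<not> thesis" with that have "\<And>x. q x = 0" using q0 by (metis less_eq_real_def)
    then show False using distrsD(2)[OF q] by simp
  qed
  have wx: "0 < w x" using ac[of x] qx w0[of x] by (cases "w x = 0") auto
  have "0 < q x powr \<alpha> * w x powr (1 - \<alpha>)" using qx wx by simp
  also have "\<dots> \<le> rsum \<alpha> q w" unfolding rsum_def
    by (rule member_le_sum) (use qx wx in \<open>auto intro: mult_nonneg_nonneg\<close>)
  finally show ?thesis .
qed

lemma renyi_gt1:
  "1 < \<alpha> \<Longrightarrow> renyi_div \<alpha> q w = (if \<exists>x. 0 < q x \<and> w x = 0 then \<infinity> else
      if rsum \<alpha> q w = 0 then \<infinity> else ereal (ln (rsum \<alpha> q w) / (\<alpha> - 1)))"
  by (simp add: renyi_div_def rsum_def Let_def)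

lemma renyi_lt1:
  "\<alpha> < 1 \<Longrightarrow> renyi_div \<alpha> q w = (if rsum \<alpha> q w = 0 then \<infinity> else ereal (ln (rsum \<alpha> q w) / (\<alpha> - 1)))"
  by (simp add: renyi_div_def rsum_def Let_def)

lemma renyi_1: "renyi_div 1 q w = kl_ext q w"
  by (simp add: renyi_div_def)

lemma no_bad_iff:
  assumes "q \<in> distrs" "w \<in> distrs"
  shows "(\<not> (\<exists>x. 0 < q x \<and> w x = 0)) \<longleftrightarrow> (\<forall>x. w x = 0 \<longrightarrow> q x = 0)"
  using distrsD(1)[OF assms(1)] by (auto simp: less_le)

lemma sum_if_Cm:
  fixes F q :: "'a::finite \<Rightarrow> real"
  assumes "w \<in> distrs"
  shows "(\<Sum>x\<in>UNIV. if 0 < w x then F x else Cm * q x) =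
         (\<Sum>x\<in>UNIV. if 0 < w x then F x else 0) + Cm * (\<Sum>x\<in>UNIV. if w x = 0 then q x else 0)"
proof -
  have w0: "\<And>x. 0 \<le> w x" using distrsD[OF assms] by auto
  have "(if 0 < w x then F x else Cm * q x) = (if 0 < w x then F x else 0) + Cm * (if w x = 0 then q x else 0)" for x
    using w0[of x] by auto
  then show ?thesis by (simp add: sum.distrib sum_distrib_left)
qed

lemma m_zero:
  assumes "\<forall>x. w x = 0 \<longrightarrow> q x = 0"
  shows "(\<Sum>x\<in>UNIV. if w x = 0 then q x else (0::real)) = 0"
  using assms by (intro sum.neutral) auto

lemma rsum_nonneg: "0 \<le> rsum \<alpha> q w"
  unfolding rsum_def by (intro sum_nonneg) auto

lemma renyi_famL:
  fixes \<alpha> :: real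
  assumes al: "0 < \<alpha>"
  shows "famL \<alpha> (renyi_div \<alpha> :: ('a::finite \<Rightarrow> real) \<Rightarrow> _)"
proof (cases "\<alpha> = 1")
  case True
  show ?thesis unfolding True
  proof (rule famL_from_G[OF Gprops_hK, of 1])
    show "0 < hK 0" by (simp add: hK_def)
    fix \<epsilon> :: real assume eps: "0 < \<epsilon>" "\<epsilon> < 1"
    show "\<exists>r0>0. \<forall>r (q::'a\<Rightarrow>real) w. 0 < r \<and> r < r0 \<and> q \<in> distrs \<and> w \<in> distrs \<and> renyi_div 1 q w \<le> ereal r \<longrightarrow>
        (\<Sum>x\<in>UNIV. if 0 < w x then w x * hK (q x / w x) else 1 * q x) \<le> (1 + \<epsilon>) * r / 1"
    proof (intro exI[of _ 1] conjI allI impI)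
      fix r and q w :: "'a \<Rightarrow> real"
      assume A: "0 < r \<and> r < 1 \<and> q \<in> distrs \<and> w \<in> distrs \<and> renyi_div 1 q w \<le> ereal r"
      then have nb: "\<not> (\<exists>x. 0 < q x \<and> w x = 0)" by (auto simp: renyi_1 kl_ext_def split: if_splits)
      then have ac: "\<forall>x. w x = 0 \<longrightarrow> q x = 0" using no_bad_iff A by blast
      have k: "kl q w \<le> r" using A nb by (simp add: renyi_1 kl_ext_def)
      have e: "(\<Sum>x\<in>UNIV. if 0 < w x then w x * hK (q x / w x) else 1 * q x) = kl q w"
        using sum_if_Cm[of w "\<lambda>x. w x * hK (q x / w x)" 1 q] A m_zero[OF ac] kl_identity[of w q] ac by simp
      have "0 \<le> \<epsilon> * r" using eps A by simp
      then show "(\<Sum>x\<in>UNIV. if 0 < w x then w x * hK (q x / w x) else 1 * q x) \<le> (1 + \<epsilon>) * r / 1"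
        using k e by (simp add: algebra_simps)
    qed simp
  qed simp_all
next
  case False
  note GP = Gprops_hR[OF al False]
  have G0: "0 < hR \<alpha> 0" using hR0[OF al False] al by simp
  show ?thesis
  proof (cases "\<alpha> > 1")
    case gt: True
    show ?thesis
    proof (rule famL_from_G[OF GP G0, of 1])
      fix \<epsilon> :: real assume eps: "0 < \<epsilon>" "\<epsilon> < 1"
      show "\<exists>r0>0. \<forall>r (q::'a\<Rightarrow>real) w. 0 < r \<and> r < r0 \<and> q \<in> distrs \<and> w \<in> distrs \<and> renyi_div \<alpha> q w \<le> ereal r \<longrightarrow>
          (\<Sum>x\<in>UNIV. if 0 < w x then w x * hR \<alpha> (q x / w x) else 1 * q x) \<le> (1 + \<epsilon>) * r / \<alpha>"
      proof (intro exI[of _ "\<epsilon> / (\<alpha> - 1)"] conjI allI impI)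
        show "0 < \<epsilon> / (\<alpha> - 1)" using eps gt by simp
        fix r and q w :: "'a \<Rightarrow> real"
        assume A: "0 < r \<and> r < \<epsilon> / (\<alpha> - 1) \<and> q \<in> distrs \<and> w \<in> distrs \<and> renyi_div \<alpha> q w \<le> ereal r"
        have nb: "\<not> (\<exists>x. 0 < q x \<and> w x = 0)" using A gt by (auto simp: renyi_gt1 split: if_splits)
        then have ac: "\<forall>x. w x = 0 \<longrightarrow> q x = 0" using no_bad_iff A by blast
        define H where "H = (\<Sum>x\<in>UNIV. if 0 < w x then w x * hR \<alpha> (q x / w x) else 0)"
        have sH: "rsum \<alpha> q w = 1 + \<alpha> * (\<alpha> - 1) * H"
          using rsum_identity[OF al False, of w q] A m_zero[OF ac] by (simp add: H_def)
        have spos: "0 < rsum \<alpha> q w" using rsum_pos[of w q \<alpha>] A ac by blast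
        have "ln (rsum \<alpha> q w) / (\<alpha> - 1) \<le> r" using A gt nb spos by (simp add: renyi_gt1)
        then have "ln (rsum \<alpha> q w) \<le> (\<alpha> - 1) * r" using gt by (simp add: divide_le_eq mult.commute)
        then have "rsum \<alpha> q w \<le> exp ((\<alpha> - 1) * r)" using spos exp_le_cancel_iff exp_ln by metis
        also have "\<dots> \<le> 1 + (\<alpha> - 1) * r + ((\<alpha> - 1) * r)\<^sup>2"
        proof (rule exp_bound)
          show "0 \<le> (\<alpha> - 1) * r" using gt A by simp
          have "(\<alpha> - 1) * r < \<epsilon>" using A gt by (simp add: field_simps)
          then show "(\<alpha> - 1) * r \<le> 1" using eps by simp
        qed
        also have "((\<alpha> - 1) * r)\<^sup>2 \<le> \<epsilon> * ((\<alpha> - 1) * r)"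
        proof -
          have "(\<alpha> - 1) * r < \<epsilon>" using A gt by (simp add: field_simps)
          then show ?thesis using gt A unfolding power2_eq_square by (intro mult_right_mono) auto
        qed
        finally have "\<alpha> * (\<alpha> - 1) * H \<le> (1 + \<epsilon>) * ((\<alpha> - 1) * r)" using sH by (simp add: algebra_simps)
        then have "(\<alpha> - 1) * (\<alpha> * H) \<le> (\<alpha> - 1) * ((1 + \<epsilon>) * r)" by (simp add: algebra_simps)
        then have "\<alpha> * H \<le> (1 + \<epsilon>) * r" using gt by simp
        then have H: "H \<le> (1 + \<epsilon>) * r / \<alpha>" using al by (simp add: field_simps)
        have "(\<Sum>x\<in>UNIV. if 0 < w x then w x * hR \<alpha> (q x / w x) else 1 * q x) = H"
          using sum_if_Cm[of w "\<lambda>x. w x * hR \<alpha> (q x / w x)" 1 q] A m_zero[OF ac] by (simp add: H_def)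
        then show "(\<Sum>x\<in>UNIV. if 0 < w x then w x * hR \<alpha> (q x / w x) else 1 * q x) \<le> (1 + \<epsilon>) * r / \<alpha>"
          using H by simp
      qed
    qed (use al in simp_all)
  next
    case lt: False
    then have lt: "\<alpha> < 1" using False by simp
    show ?thesis
    proof (rule famL_from_G[OF GP G0, of "1 / (1 - \<alpha>)"])
      show "0 < 1 / (1 - \<alpha>)" using lt by simp
      fix \<epsilon> :: real assume eps: "0 < \<epsilon>" "\<epsilon> < 1"
      show "\<exists>r0>0. \<forall>r (q::'a\<Rightarrow>real) w. 0 < r \<and> r < r0 \<and> q \<in> distrs \<and> w \<in> distrs \<and> renyi_div \<alpha> q w \<le> ereal r \<longrightarrow>
          (\<Sum>x\<in>UNIV. if 0 < w x then w x * hR \<alpha> (q x / w x) else 1 / (1 - \<alpha>) * q x) \<le> (1 + \<epsilon>) * r / \<alpha>"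
      proof (intro exI[of _ 1] conjI allI impI)
        fix r and q w :: "'a \<Rightarrow> real"
        assume A: "0 < r \<and> r < 1 \<and> q \<in> distrs \<and> w \<in> distrs \<and> renyi_div \<alpha> q w \<le> ereal r"
        define H where "H = (\<Sum>x\<in>UNIV. if 0 < w x then w x * hR \<alpha> (q x / w x) else 0)"
        define m where "m = (\<Sum>x\<in>UNIV. if w x = 0 then q x else 0)"
        have sH: "rsum \<alpha> q w = 1 - \<alpha> * m + \<alpha> * (\<alpha> - 1) * H"
          using rsum_identity[OF al False, of w q] A by (simp add: H_def m_def)
        have nz: "rsum \<alpha> q w \<noteq> 0" using A lt by (auto simp: renyi_lt1 split: if_splits)
        then have spos: "0 < rsum \<alpha> q w" using rsum_nonneg[of \<alpha> q w] by simp
        have "ln (rsum \<alpha> q w) / (\<alpha> - 1) \<le> r" using A lt nz by (simp add: renyi_lt1)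
        then have "(\<alpha> - 1) * r \<le> ln (rsum \<alpha> q w)" using lt by (simp add: divide_le_eq mult.commute)
        then have "exp ((\<alpha> - 1) * r) \<le> rsum \<alpha> q w" using spos exp_le_cancel_iff exp_ln by metis
        moreover have "1 + (\<alpha> - 1) * r \<le> exp ((\<alpha> - 1) * r)" by simp
        ultimately have "1 + (\<alpha> - 1) * r \<le> 1 - \<alpha> * m + \<alpha> * (\<alpha> - 1) * H" using sH by linarith
        then have "\<alpha> * m + \<alpha> * (1 - \<alpha>) * H \<le> (1 - \<alpha>) * r" by (simp add: algebra_simps)
        moreover have "(\<alpha> * (1 - \<alpha>)) * (m / (1 - \<alpha>) + H) = \<alpha> * m + \<alpha> * (1 - \<alpha>) * H"
          using lt by (simp add: field_simps)
        moreover have "(\<alpha> * (1 - \<alpha>)) * (r / \<alpha>) = (1 - \<alpha>) * r" using al by (simp add: field_simps)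
        ultimately have "(\<alpha> * (1 - \<alpha>)) * (m / (1 - \<alpha>) + H) \<le> (\<alpha> * (1 - \<alpha>)) * (r / \<alpha>)"
          by linarith
        then have "m / (1 - \<alpha>) + H \<le> r / \<alpha>" using lt al by (simp add: mult_le_cancel_left_pos le_divide_eq mult.commute)
        also have "r / \<alpha> \<le> (1 + \<epsilon>) * r / \<alpha>" using A eps al by (simp add: divide_right_mono)
        finally have fin: "H + 1 / (1 - \<alpha>) * m \<le> (1 + \<epsilon>) * r / \<alpha>" by simp
        have "(\<Sum>x\<in>UNIV. if 0 < w x then w x * hR \<alpha> (q x / w x) else 1 / (1 - \<alpha>) * q x) = H + 1 / (1 - \<alpha>) * m"
          using sum_if_Cm[of w "\<lambda>x. w x * hR \<alpha> (q x / w x)" "1 / (1 - \<alpha>)" q] A by (simp add: H_def m_def)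
        then show "(\<Sum>x\<in>UNIV. if 0 < w x then w x * hR \<alpha> (q x / w x) else 1 / (1 - \<alpha>) * q x) \<le> (1 + \<epsilon>) * r / \<alpha>"
          using fin by simp
      qed simp
    qed (use al in simp_all)
  qed
qed

lemma renyi_famU:
  fixes \<alpha> :: real
  assumes al: "0 < \<alpha>"
  shows "famU \<alpha> (renyi_div \<alpha> :: ('a::finite \<Rightarrow> real) \<Rightarrow> _)"
proof (cases "\<alpha> = 1")
  case True
  show ?thesis unfolding True
  proof (rule famU_from_G[OF Gprops_hK])
    fix \<epsilon> :: real assume eps: "0 < \<epsilon>" "\<epsilon> < 1"
    show "\<exists>r0>0. \<forall>r (q::'a\<Rightarrow>real) w. 0 < r \<and> r < r0 \<and> q \<in> distrs \<and> w \<in> distrs \<and>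
        (\<forall>x. w x = 0 \<longrightarrow> q x = 0) \<and> (\<forall>x. 0 < w x \<longrightarrow> 0 < q x) \<and>
        (\<Sum>x\<in>UNIV. if 0 < w x then w x * hK (q x / w x) else 0) \<le> (1 - \<epsilon>\<^sup>2) * r / 1 \<longrightarrow> renyi_div 1 q w \<le> ereal r"
    proof (intro exI[of _ 1] conjI allI impI)
      fix r and q w :: "'a \<Rightarrow> real"
      assume A: "0 < r \<and> r < 1 \<and> q \<in> distrs \<and> w \<in> distrs \<and> (\<forall>x. w x = 0 \<longrightarrow> q x = 0) \<and> (\<forall>x. 0 < w x \<longrightarrow> 0 < q x) \<and>
        (\<Sum>x\<in>UNIV. if 0 < w x then w x * hK (q x / w x) else 0) \<le> (1 - \<epsilon>\<^sup>2) * r / 1"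
      then have nb: "\<not> (\<exists>x. 0 < q x \<and> w x = 0)" using no_bad_iff by blast
      have "kl q w = (\<Sum>x\<in>UNIV. if 0 < w x then w x * hK (q x / w x) else 0)" using kl_identity A by blast
      also have "\<dots> \<le> (1 - \<epsilon>\<^sup>2) * r" using A by simp
      also have "\<dots> \<le> r" using A eps by (simp add: algebra_simps)
      finally show "renyi_div 1 q w \<le> ereal r" using nb by (simp add: renyi_1 kl_ext_def)
    qed simp
  qed simp
next
  case False
  note GP = Gprops_hR[OF al False]
  show ?thesis
  proof (rule famU_from_G[OF GP al])
    fix \<epsilon> :: real assume eps: "0 < \<epsilon>" "\<epsilon> < 1"
    show "\<exists>r0>0. \<forall>r (q::'a\<Rightarrow>real) w. 0 < r \<and> r < r0 \<and> q \<in> distrs \<and> w \<in> distrs \<and>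
        (\<forall>x. w x = 0 \<longrightarrow> q x = 0) \<and> (\<forall>x. 0 < w x \<longrightarrow> 0 < q x) \<and>
        (\<Sum>x\<in>UNIV. if 0 < w x then w x * hR \<alpha> (q x / w x) else 0) \<le> (1 - \<epsilon>\<^sup>2) * r / \<alpha> \<longrightarrow> renyi_div \<alpha> q w \<le> ereal r"
    proof (cases "\<alpha> > 1")
      case gt: True
      show ?thesis
      proof (intro exI[of _ 1] conjI allI impI)
        fix r and q w :: "'a \<Rightarrow> real"
        assume A: "0 < r \<and> r < 1 \<and> q \<in> distrs \<and> w \<in> distrs \<and> (\<forall>x. w x = 0 \<longrightarrow> q x = 0) \<and> (\<forall>x. 0 < w x \<longrightarrow> 0 < q x) \<and>
          (\<Sum>x\<in>UNIV. if 0 < w x then w x * hR \<alpha> (q x / w x) else 0) \<le> (1 - \<epsilon>\<^sup>2) * r / \<alpha>"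
        then have nb: "\<not> (\<exists>x. 0 < q x \<and> w x = 0)" using no_bad_iff by blast
        have ac: "\<forall>x. w x = 0 \<longrightarrow> q x = 0" using A by blast
        define H where "H = (\<Sum>x\<in>UNIV. if 0 < w x then w x * hR \<alpha> (q x / w x) else 0)"
        have sH: "rsum \<alpha> q w = 1 + \<alpha> * (\<alpha> - 1) * H"
          using rsum_identity[OF al False, of w q] A m_zero[OF ac] by (simp add: H_def)
        have spos: "0 < rsum \<alpha> q w" using rsum_pos[of w q \<alpha>] A by blast
        have "ln (rsum \<alpha> q w) \<le> rsum \<alpha> q w - 1" using spos by (rule ln_le_minus_one)
        also have "\<dots> = (\<alpha> - 1) * (\<alpha> * H)" using sH by (simp add: algebra_simps)
        finally have "ln (rsum \<alpha> q w) / (\<alpha> - 1) \<le> \<alpha> * H" using gt by (simp add: divide_le_eq mult.commute)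
        also have "\<alpha> * H \<le> (1 - \<epsilon>\<^sup>2) * r" using A al by (simp add: H_def field_simps)
        also have "\<dots> \<le> r" using A eps by (simp add: algebra_simps)
        finally show "renyi_div \<alpha> q w \<le> ereal r" using nb gt spos by (simp add: renyi_gt1)
      qed simp
    next
      case False
      then have lt: "\<alpha> < 1" using \<open>\<alpha> \<noteq> 1\<close> by simp
      show ?thesis
      proof (intro exI[of _ "\<epsilon>\<^sup>2 / (1 - \<alpha>)"] conjI allI impI)
        show "0 < \<epsilon>\<^sup>2 / (1 - \<alpha>)" using lt eps by simp
        fix r and q w :: "'a \<Rightarrow> real"
        assume A: "0 < r \<and> r < \<epsilon>\<^sup>2 / (1 - \<alpha>) \<and> q \<in> distrs \<and> w \<in> distrs \<and> (\<forall>x. w x = 0 \<longrightarrow> q x = 0) \<and> (\<forall>x. 0 < w x \<longrightarrow> 0 < q x) \<and>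
          (\<Sum>x\<in>UNIV. if 0 < w x then w x * hR \<alpha> (q x / w x) else 0) \<le> (1 - \<epsilon>\<^sup>2) * r / \<alpha>"
        have ac: "\<forall>x. w x = 0 \<longrightarrow> q x = 0" using A by blast
        define H where "H = (\<Sum>x\<in>UNIV. if 0 < w x then w x * hR \<alpha> (q x / w x) else 0)"
        define s where "s = rsum \<alpha> q w"
        define u where "u = (1 - \<alpha>) * r"
        define y where "y = \<alpha> * (1 - \<alpha>) * H"
        have sH: "s = 1 - y"
          using rsum_identity[OF al \<open>\<alpha> \<noteq> 1\<close>, of w q] A m_zero[OF ac] by (simp add: H_def s_def y_def algebra_simps)
        have spos: "0 < s" using rsum_pos[of w q \<alpha>] A by (simp add: s_def)
        have u0: "0 \<le> u" using lt A by (simp add: u_def)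
        have ult: "u \<le> \<epsilon>\<^sup>2" using A lt by (simp add: u_def field_simps)
        have yle: "y \<le> u * (1 - \<epsilon>\<^sup>2)"
        proof -
          have "\<alpha> * H \<le> (1 - \<epsilon>\<^sup>2) * r" using A al by (simp add: H_def field_simps)
          then have "(1 - \<alpha>) * (\<alpha> * H) \<le> (1 - \<alpha>) * ((1 - \<epsilon>\<^sup>2) * r)" using lt by (intro mult_left_mono) auto
          then show ?thesis by (simp add: y_def u_def algebra_simps)
        qed
        have e2: "\<epsilon>\<^sup>2 \<le> 1" using eps by (simp add: power_le_one)
        have "u * (1 - \<epsilon>\<^sup>2) \<le> u" using u0 eps by (simp add: algebra_simps)
        then have "0 \<le> u * (\<epsilon>\<^sup>2 - u * (1 - \<epsilon>\<^sup>2))" using u0 ult by (intro mult_nonneg_nonneg) auto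
        moreover have "(1 - u * (1 - \<epsilon>\<^sup>2)) * (1 + u) = 1 + u * (\<epsilon>\<^sup>2 - u * (1 - \<epsilon>\<^sup>2))" by (simp add: algebra_simps)
        ultimately have "1 \<le> (1 - u * (1 - \<epsilon>\<^sup>2)) * (1 + u)" by linarith
        also have "\<dots> \<le> (1 - y) * (1 + u)" using yle u0 by (intro mult_right_mono) auto
        finally have "1 \<le> s * (1 + u)" using sH by simp
        then have "1 / s \<le> 1 + u" using spos by (simp add: divide_le_eq mult.commute)
        then have "- u \<le> 1 - 1 / s" by linarith
        also have "1 - 1 / s \<le> ln s" using ln_ge_1_minus_inv[OF spos] .
        finally have "(\<alpha> - 1) * r \<le> ln s" by (simp add: u_def algebra_simps)
        then have "ln s / (\<alpha> - 1) \<le> r" using lt by (simp add: divide_le_eq mult.commute)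
        then show "renyi_div \<alpha> q w \<le> ereal r" using lt spos by (simp add: renyi_lt1 s_def)
      qed
    qed
  qed
qed

definition gF :: "(real \<Rightarrow> real) \<Rightarrow> (real \<Rightarrow> real) \<Rightarrow> real \<Rightarrow> real" where
  "gF f f' t = f t - f' 1 * (t - 1)"

lemma fgenD:
  assumes "fgen f f' f''"
  shows "convex_on {0<..} f" "f 1 = 0" "\<And>t. 0 < t \<Longrightarrow> (f has_real_derivative f' t) (at t)"
    "\<And>t. 0 < t \<Longrightarrow> (f' has_real_derivative f'' t) (at t)"
  using assms by (auto simp: fgen_def)

lemma gF_convex:
  assumes "fgen f f' f''"
  shows "convex_on {0<..} (gF f f')"
proof (rule convex_onI)
  show "convex ({0<..} :: real set)" by simp
  fix t x y :: real assume t: "0 < t" "t < 1" and xy: "x \<in> {0<..}" "y \<in> {0<..}"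
  have "f ((1 - t) *\<^sub>R x + t *\<^sub>R y) \<le> (1 - t) * f x + t * f y"
    using convex_onD[OF fgenD(1)[OF assms], of t x y] t xy by auto
  then show "gF f f' ((1 - t) *\<^sub>R x + t *\<^sub>R y) \<le> (1 - t) * gF f f' x + t * gF f f' y"
    by (simp add: gF_def algebra_simps)
qed

lemma gF_1: "fgen f f' f'' \<Longrightarrow> gF f f' 1 = 0"
  by (simp add: gF_def fgen_def)

lemma Gprops_f:
  assumes fg: "fgen f f' f''" and al: "0 < f'' 1"
  shows "Gprops (\<lambda>t. gF f f' t / f'' 1) (\<lambda>t. (f' t - f' 1) / f'' 1)"
  unfolding Gprops_def
proof (intro conjI allI impI)
  show "convex_on {0<..} (\<lambda>t. gF f f' t / f'' 1)"
    using gF_convex[OF fg] al by (intro convex_on_cdiv) auto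
  show "gF f f' 1 / f'' 1 = 0" using gF_1[OF fg] by simp
  show "(f' 1 - f' 1) / f'' 1 = 0" by simp
  show "((\<lambda>t. gF f f' t / f'' 1) has_real_derivative (f' t - f' 1) / f'' 1) (at t)" if "\<bar>t - 1\<bar> < 1/2" for t
  proof -
    have "0 < t" using that by linarith
    then have d: "(f has_real_derivative f' t) (at t)" using fgenD(3)[OF fg] by blast
    have "((\<lambda>t. (f t - f' 1 * (t - 1)) / f'' 1) has_real_derivative (f' t - f' 1 * (1 - 0)) / f'' 1) (at t)"
      by (intro DERIV_cdivide DERIV_diff d DERIV_cmult DERIV_ident DERIV_const)
    then show ?thesis by (simp add: gF_def[abs_def])
  qed
  show "((\<lambda>t. (f' t - f' 1) / f'' 1) has_real_derivative 1) (at 1)"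
  proof -
    have d: "(f' has_real_derivative f'' 1) (at 1)" using fgenD(4)[OF fg] by simp
    have "((\<lambda>t. (f' t - f' 1) / f'' 1) has_real_derivative (f'' 1 - 0) / f'' 1) (at 1)"
      by (intro DERIV_cdivide DERIV_diff d DERIV_const)
    then show ?thesis using al by simp
  qed
qed

lemma Gpos:
  assumes GP: "Gprops G G'" and t: "0 < t" "t \<noteq> 1"
  shows "0 < G t"
proof -
  obtain \<kappa> c where kap: "0 < \<kappa>" "0 < c"
    and nb: "\<And>t. \<bar>t - 1\<bar> \<le> \<kappa> \<Longrightarrow> (1-1/2) * (t-1)\<^sup>2 / 2 \<le> G t"
    and far: "\<And>t. 0 < t \<Longrightarrow> \<kappa> \<le> \<bar>t - 1\<bar> \<Longrightarrow> c * \<bar>t - 1\<bar> \<le> G t"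
    using Gbounds[OF GP, of "1/2"] by auto
  show ?thesis
  proof (cases "\<bar>t - 1\<bar> \<le> \<kappa>")
    case True
    have "0 < (1-1/2) * (t-1)\<^sup>2 / (2::real)" using t by simp
    then show ?thesis using nb[OF True] by linarith
  next
    case False
    have "0 < c * \<bar>t - 1\<bar>" using kap t by simp
    then show ?thesis using far[of t] False t by linarith
  qed
qed

lemma gF_nonneg:
  assumes fg: "fgen f f' f''" and al: "0 < f'' 1" and t: "0 < t"
  shows "0 \<le> gF f f' t"
proof (cases "t = 1")
  case True then show ?thesis using gF_1[OF fg] by simp
next
  case False
  then have "0 < gF f f' t / f'' 1" using Gpos[OF Gprops_f[OF fg al]] t by blast
  then show ?thesis using al by (simp add: zero_less_divide_iff)
qed

lemma gF_pos:
  assumes fg: "fgen f f' f''" and al: "0 < f'' 1" and t: "0 < t" "t \<noteq> 1"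
  shows "0 < gF f f' t"
  using Gpos[OF Gprops_f[OF fg al] t] al by (simp add: zero_less_divide_iff)

lemma gF_antimono:
  assumes fg: "fgen f f' f''" and al: "0 < f'' 1" and st: "0 < s" "s < t" "t \<le> 1"
  shows "gF f f' t \<le> gF f f' s"
proof -
  define m where "m = (t - s) / (1 - s)"
  have m: "0 \<le> m" "m \<le> 1" using st by (auto simp: m_def field_simps)
  have eq: "(1 - m) *\<^sub>R s + m *\<^sub>R 1 = t"
  proof -
    have "(1 - m) *\<^sub>R s + m *\<^sub>R 1 = s + m * (1 - s)" by (simp add: algebra_simps)
    also have "m * (1 - s) = t - s" using st by (simp add: m_def)
    finally show ?thesis by simp
  qed
  have "gF f f' ((1 - m) *\<^sub>R s + m *\<^sub>R 1) \<le> (1 - m) * gF f f' s + m * gF f f' 1"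
    using convex_onD[OF gF_convex[OF fg], of m s 1] m st by auto
  then have "gF f f' t \<le> (1 - m) * gF f f' s" using gF_1[OF fg] unfolding eq by simp
  also have "\<dots> \<le> gF f f' s" using m gF_nonneg[OF fg al, of s] st
    by (simp add: mult_left_le_one_le algebra_simps mult_nonneg_nonneg)
  finally show ?thesis .
qed

lemma gF_slope_mono:
  assumes fg: "fgen f f' f''" and st: "1 < s" "s \<le> t"
  shows "gF f f' s / (s - 1) \<le> gF f f' t / (t - 1)"
proof -
  define m where "m = (s - 1) / (t - 1)"
  have m: "0 \<le> m" "m \<le> 1" using st by (auto simp: m_def field_simps)
  have eq: "(1 - m) *\<^sub>R 1 + m *\<^sub>R t = s"
  proof -
    have "(1 - m) *\<^sub>R 1 + m *\<^sub>R t = 1 + m * (t - 1)" by (simp add: algebra_simps)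
    also have "m * (t - 1) = s - 1" using st by (simp add: m_def)
    finally show ?thesis by simp
  qed
  have "gF f f' ((1 - m) *\<^sub>R 1 + m *\<^sub>R t) \<le> (1 - m) * gF f f' 1 + m * gF f f' t"
    using convex_onD[OF gF_convex[OF fg], of m 1 t] m st by auto
  then have "gF f f' s \<le> m * gF f f' t" using gF_1[OF fg] unfolding eq by simp
  then have "gF f f' s \<le> (s - 1) * (gF f f' t / (t - 1))" by (simp add: m_def)
  then show ?thesis using st by (simp add: divide_le_eq mult.commute)
qed

lemma f_zero_cases:
  assumes fg: "fgen f f' f''" and al: "0 < f'' 1"
  shows "f_zero f = \<infinity> \<or> (\<exists>z. f_zero f = ereal z \<and> (\<forall>t. 0 < t \<and> t < 1 \<longrightarrow> gF f f' t - f' 1 \<le> z))"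
proof -
  define Lg where "Lg = (SUP t\<in>{0<..<1}. ereal (gF f f' t))"
  have up: "ereal (gF f f' t) \<le> Lg" if "0 < t" "t < 1" for t
    unfolding Lg_def using that by (intro SUP_upper) auto
  have lim1: "((\<lambda>t. ereal (gF f f' t)) \<longlongrightarrow> Lg) (at_right 0)"
  proof (rule increasing_tendsto)
    have "eventually (\<lambda>t. 0 < t \<and> t < (1::real)) (at_right 0)"
      unfolding eventually_at_right_field by (intro exI[of _ 1]) auto
    then show "eventually (\<lambda>t. ereal (gF f f' t) \<le> Lg) (at_right 0)"
      by eventually_elim (use up in auto)
    fix y assume "y < Lg"
    then obtain t0 where t0: "0 < t0" "t0 < 1" "y < ereal (gF f f' t0)" unfolding Lg_def less_SUP_iff by auto
    have "eventually (\<lambda>t. 0 < t \<and> t < t0) (at_right (0::real))"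
      unfolding eventually_at_right_field using t0 by (intro exI[of _ t0]) auto
    then show "eventually (\<lambda>t. y < ereal (gF f f' t)) (at_right 0)"
    proof eventually_elim
      case (elim t)
      then have "gF f f' t0 \<le> gF f f' t" using gF_antimono[OF fg al, of t t0] t0 by auto
      then have "ereal (gF f f' t0) \<le> ereal (gF f f' t)" by simp
      then show ?case using t0(3) by (rule order_less_le_trans[rotated])
    qed
  qed
  have lim2: "((\<lambda>t. ereal (f' 1 * (t - 1))) \<longlongrightarrow> ereal (- f' 1)) (at_right 0)"
  proof -
    have "((\<lambda>t. f' 1 * (t - 1)) \<longlongrightarrow> f' 1 * (0 - 1)) (at_right (0::real))"
      by (intro tendsto_intros)
    then show ?thesis by simp
  qed
  have "((\<lambda>t. ereal (gF f f' t) + ereal (f' 1 * (t - 1))) \<longlongrightarrow> Lg + ereal (- f' 1)) (at_right 0)"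
    by (rule tendsto_add_ereal_general1[OF _ lim1 lim2]) simp
  moreover have "(\<lambda>t. ereal (gF f f' t) + ereal (f' 1 * (t - 1))) = (\<lambda>t. ereal (f t))"
    by (simp add: gF_def)
  ultimately have "((\<lambda>t. ereal (f t)) \<longlongrightarrow> Lg + ereal (- f' 1)) (at_right 0)" by simp
  then have fz: "f_zero f = Lg + ereal (- f' 1)" unfolding f_zero_def by (intro tendsto_Lim) auto
  have "ereal (gF f f' (1/2)) \<le> Lg" using up[of "1/2"] by simp
  then have Lgn: "Lg \<noteq> - \<infinity>" by auto
  show ?thesis
  proof (cases Lg)
    case (real z)
    have "\<forall>t. 0 < t \<and> t < 1 \<longrightarrow> gF f f' t - f' 1 \<le> z - f' 1" using up real by auto
    then show ?thesis using fz real by auto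
  next
    case PInf then show ?thesis using fz by simp
  next
    case MInf then show ?thesis using Lgn by simp
  qed
qed

lemma f_slope_cases:
  assumes fg: "fgen f f' f''" and al: "0 < f'' 1"
  shows "f_slope_inf f = \<infinity> \<or> (\<exists>z. f_slope_inf f = ereal z \<and> (\<forall>t. 1 < t \<longrightarrow> gF f f' t / (t - 1) + f' 1 \<le> z))"
proof -
  define K where "K = (SUP t\<in>{1<..}. ereal (gF f f' t / (t - 1)))"
  have up: "ereal (gF f f' t / (t - 1)) \<le> K" if "1 < t" for t
    unfolding K_def using that by (intro SUP_upper) auto
  have ev1: "eventually (\<lambda>t. 1 < t) (at_top :: real filter)" by (rule eventually_gt_at_top)
  have lim1: "((\<lambda>t. ereal (gF f f' t / (t - 1))) \<longlongrightarrow> K) at_top"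
  proof (rule increasing_tendsto)
    show "eventually (\<lambda>t. ereal (gF f f' t / (t - 1)) \<le> K) at_top"
      using ev1 by eventually_elim (use up in auto)
    fix y assume "y < K"
    then obtain t0 where t0: "1 < t0" "y < ereal (gF f f' t0 / (t0 - 1))" unfolding K_def less_SUP_iff by auto
    have "eventually (\<lambda>t. t0 \<le> t) (at_top :: real filter)" by (rule eventually_ge_at_top)
    then show "eventually (\<lambda>t. y < ereal (gF f f' t / (t - 1))) at_top"
    proof eventually_elim
      case (elim t)
      then have "gF f f' t0 / (t0 - 1) \<le> gF f f' t / (t - 1)" using gF_slope_mono[OF fg t0(1)] by blast
      then have "ereal (gF f f' t0 / (t0 - 1)) \<le> ereal (gF f f' t / (t - 1))" by simp
      then show ?case using t0(2) by (rule order_less_le_trans[rotated])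
    qed
  qed
  have lim2: "((\<lambda>t. ereal ((t - 1) / t)) \<longlongrightarrow> ereal 1) at_top"
  proof -
    have "((\<lambda>t::real. (t - 1) / t) \<longlongrightarrow> 1) at_top" by real_asymp
    then show ?thesis by simp
  qed
  have lim3: "((\<lambda>t. ereal (f' 1 * ((t - 1) / t))) \<longlongrightarrow> ereal (f' 1)) at_top"
  proof -
    have "((\<lambda>t::real. (t - 1) / t) \<longlongrightarrow> 1) at_top" by real_asymp
    then have "((\<lambda>t::real. f' 1 * ((t - 1) / t)) \<longlongrightarrow> f' 1 * 1) at_top" by (intro tendsto_intros)
    then show ?thesis by simp
  qed
  have "((\<lambda>t. ereal (gF f f' t / (t - 1)) * ereal ((t - 1) / t)) \<longlongrightarrow> K * ereal 1) at_top"
    by (rule tendsto_mult_ereal[OF lim1 lim2]) simp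
  then have "((\<lambda>t. ereal (gF f f' t / (t - 1)) * ereal ((t - 1) / t) + ereal (f' 1 * ((t - 1) / t))) \<longlongrightarrow> K + ereal (f' 1)) at_top"
    by (intro tendsto_add_ereal_general1[OF _ _ lim3]) simp_all
  moreover have "eventually (\<lambda>t. ereal (gF f f' t / (t - 1)) * ereal ((t - 1) / t) + ereal (f' 1 * ((t - 1) / t)) = ereal (f t / t)) at_top"
    using ev1
  proof eventually_elim
    case (elim t)
    then have "gF f f' t / (t - 1) * ((t - 1) / t) + f' 1 * ((t - 1) / t) = f t / t"
      by (simp add: gF_def field_simps)
    then show ?case by simp
  qed
  ultimately have "((\<lambda>t. ereal (f t / t)) \<longlongrightarrow> K + ereal (f' 1)) at_top"
    by (simp only: tendsto_cong)
  then have fs: "f_slope_inf f = K + ereal (f' 1)" unfolding f_slope_inf_def by (intro tendsto_Lim) auto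
  have "ereal (gF f f' 2 / (2 - 1)) \<le> K" using up[of 2] by simp
  then have Kn: "K \<noteq> - \<infinity>" by auto
  show ?thesis
  proof (cases K)
    case (real z)
    have "\<forall>t. 1 < t \<longrightarrow> gF f f' t / (t - 1) + f' 1 \<le> z + f' 1" using up real by auto
    then show ?thesis using fs real by auto
  next
    case PInf then show ?thesis using fs by simp
  next
    case MInf then show ?thesis using Kn by simp
  qed
qed

lemma Gprops_mod0:
  assumes GP: "Gprops G G'"
  shows "Gprops (\<lambda>t. if t = 0 then Z else G t) G'"
  unfolding Gprops_def
proof (intro conjI allI impI)
  have cv: "convex_on {0<..} G" and G1: "G 1 = 0" and G'1: "G' 1 = 0"
    and der: "\<And>t. \<bar>t - 1\<bar> < 1/2 \<Longrightarrow> (G has_real_derivative G' t) (at t)"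
    and der2: "(G' has_real_derivative 1) (at 1)" using GP by (auto simp: Gprops_def)
  show "convex_on {0<..} (\<lambda>t. if t = 0 then Z else G t)"
  proof (rule convex_onI)
    show "convex ({0<..} :: real set)" by simp
    fix t x y :: real assume t: "0 < t" "t < 1" and xy: "x \<in> {0<..}" "y \<in> {0<..}"
    have pos: "0 < (1 - t) *\<^sub>R x + t *\<^sub>R y" using t xy by (simp add: add_pos_pos)
    show "(if (1 - t) *\<^sub>R x + t *\<^sub>R y = 0 then Z else G ((1 - t) *\<^sub>R x + t *\<^sub>R y))
        \<le> (1 - t) * (if x = 0 then Z else G x) + t * (if y = 0 then Z else G y)"
      using convex_onD[OF cv, of t x y] t xy pos by auto
  qed
  show "(if (1::real) = 0 then Z else G 1) = 0" using G1 by simp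
  show "G' 1 = 0" by (rule G'1)
  show "((\<lambda>t. if t = 0 then Z else G t) has_real_derivative G' t) (at t)" if "\<bar>t - 1\<bar> < 1/2" for t
  proof (rule has_field_derivative_transform_within_open[OF der[OF that], of "{1/2<..<3/2}"])
    show "open {1/2<..<3/2::real}" by simp
    show "t \<in> {1/2<..<3/2}" using that unfolding abs_less_iff by auto
    show "\<And>x. x \<in> {1/2<..<3/2} \<Longrightarrow> G x = (if x = 0 then Z else G x)" by auto
  qed
  show "(G' has_real_derivative 1) (at 1)" by (rule der2)
qed

lemma fdiv_term_PInf:
  fixes T :: "'a::finite \<Rightarrow> ereal"
  assumes "(\<Sum>x\<in>UNIV. T x) \<le> ereal r" "T x = \<infinity>"
  shows False
proof -
  have "(\<Sum>x\<in>UNIV. T x) = \<infinity>" using assms(2) by (subst sum_Pinfty) auto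
  then show False using assms(1) by simp
qed

lemma fdiv_famL:
  fixes f f' f'' :: "real \<Rightarrow> real"
  assumes fg: "fgen f f' f''" and al: "0 < f'' 1"
  shows "famL (f'' 1) (fdiv f :: ('a::finite \<Rightarrow> real) \<Rightarrow> _)"
proof -
  define \<alpha> where "\<alpha> = f'' 1"
  have al': "0 < \<alpha>" using al by (simp add: \<alpha>_def)
  define G0 where "G0 = (\<lambda>t. gF f f' t / \<alpha>)"
  define Z where "Z = (if f_zero f = \<infinity> then 1 else (real_of_ereal (f_zero f) + f' 1) / \<alpha>)"
  define Cm where "Cm = (if f_slope_inf f = \<infinity> then 1 else (real_of_ereal (f_slope_inf f) - f' 1) / \<alpha>)"
  define Gm where "Gm = (\<lambda>t. if t = 0 then Z else G0 t)"
  have GP: "Gprops Gm (\<lambda>t. (f' t - f' 1) / \<alpha>)"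
    unfolding Gm_def G0_def \<alpha>_def by (rule Gprops_mod0[OF Gprops_f[OF fg al]])
  have Gm0: "Gm 0 = Z" by (simp add: Gm_def)
  have Z0: "0 < Z"
  proof (cases "f_zero f = \<infinity>")
    case False
    then obtain z where z: "f_zero f = ereal z" "\<forall>t. 0 < t \<and> t < 1 \<longrightarrow> gF f f' t - f' 1 \<le> z"
      using f_zero_cases[OF fg al] by blast
    have "0 < gF f f' (1/2)" using gF_pos[OF fg al, of "1/2"] by simp
    moreover have "gF f f' (1/2) - f' 1 \<le> z" using z(2) by simp
    ultimately show ?thesis using al' False z(1) by (simp add: Z_def)
  qed (simp add: Z_def)
  have Cm0: "0 < Cm"
  proof (cases "f_slope_inf f = \<infinity>")
    case False
    then obtain z where z: "f_slope_inf f = ereal z" "\<forall>t. 1 < t \<longrightarrow> gF f f' t / (t - 1) + f' 1 \<le> z"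
      using f_slope_cases[OF fg al] by blast
    have "0 < gF f f' 2" using gF_pos[OF fg al, of 2] by simp
    moreover have "gF f f' 2 / (2 - 1) + f' 1 \<le> z" using z(2)[rule_format, of 2] by simp
    ultimately show ?thesis using al' False z(1) by (simp add: Cm_def)
  qed (simp add: Cm_def)
  have "famL \<alpha> (fdiv f :: ('a::finite \<Rightarrow> real) \<Rightarrow> _)"
  proof (rule famL_from_G[OF GP _ Cm0 al'])
    show "0 < Gm 0" using Gm0 Z0 by simp
    fix \<epsilon> :: real assume eps: "0 < \<epsilon>" "\<epsilon> < 1"
    show "\<exists>r0>0. \<forall>r (q::'a\<Rightarrow>real) w. 0 < r \<and> r < r0 \<and> q \<in> distrs \<and> w \<in> distrs \<and> fdiv f q w \<le> ereal r \<longrightarrow>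
        (\<Sum>x\<in>UNIV. if 0 < w x then w x * Gm (q x / w x) else Cm * q x) \<le> (1 + \<epsilon>) * r / \<alpha>"
    proof (intro exI[of _ 1] conjI allI impI)
      fix r and q w :: "'a \<Rightarrow> real"
      assume A: "0 < r \<and> r < 1 \<and> q \<in> distrs \<and> w \<in> distrs \<and> fdiv f q w \<le> ereal r"
      have q0: "\<And>x. 0 \<le> q x" and w0: "\<And>x. 0 \<le> w x" using A distrsD by blast+
      define T where "T = (\<lambda>x. if 0 < w x then (if 0 < q x then ereal (w x * f (q x / w x)) else ereal (w x) * f_zero f)
         else if q x = 0 then 0 else ereal (q x) * f_slope_inf f)"
      have sT: "(\<Sum>x\<in>UNIV. T x) \<le> ereal r" using A by (simp add: fdiv_def T_def)
      define a where "a = (\<lambda>x. if 0 < w x then w x * Gm (q x / w x) else Cm * q x)"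
      have Tx: "T x = ereal (f' 1 * (q x - w x) + \<alpha> * a x)" for x
      proof (cases "0 < w x")
        case wx: True
        show ?thesis
        proof (cases "0 < q x")
          case True
          have "Gm (q x / w x) = gF f f' (q x / w x) / \<alpha>" using True wx by (simp add: Gm_def G0_def)
          then have "f' 1 * (q x - w x) + \<alpha> * a x = w x * f (q x / w x)"
            using wx al' by (simp add: a_def gF_def field_simps)
          then show ?thesis using True wx by (simp add: T_def)
        next
          case False
          then have qx: "q x = 0" using q0[of x] by simp
          show ?thesis
          proof (cases "f_zero f = \<infinity>")
            case True
            then have "T x = \<infinity>" using wx qx by (simp add: T_def)
            then show ?thesis using fdiv_term_PInf[OF sT] by blast
          next
            case False
            then obtain z where z: "f_zero f = ereal z" using f_zero_cases[OF fg al] by blast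
            have "f' 1 * (q x - w x) + \<alpha> * a x = w x * z"
              using wx qx al' z False by (simp add: a_def Gm_def Z_def field_simps)
            then show ?thesis using wx qx z by (simp add: T_def)
          qed
        qed
      next
        case False
        then have wx: "w x = 0" using w0[of x] by simp
        show ?thesis
        proof (cases "q x = 0")
          case True then show ?thesis using wx by (simp add: T_def a_def)
        next
          case qx: False
          show ?thesis
          proof (cases "f_slope_inf f = \<infinity>")
            case True
            then have "T x = \<infinity>" using wx qx q0[of x] by (simp add: T_def)
            then show ?thesis using fdiv_term_PInf[OF sT] by blast
          next
            case False
            then obtain z where z: "f_slope_inf f = ereal z" using f_slope_cases[OF fg al] by blast
            have "f' 1 * (q x - w x) + \<alpha> * a x = q x * z"
              using wx al' z False by (simp add: a_def Cm_def field_simps)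
            then show ?thesis using wx qx z by (simp add: T_def)
          qed
        qed
      qed
      have "(\<Sum>x\<in>UNIV. T x) = ereal (\<Sum>x\<in>UNIV. f' 1 * (q x - w x) + \<alpha> * a x)" by (simp add: Tx)
      also have "(\<Sum>x\<in>UNIV. f' 1 * (q x - w x) + \<alpha> * a x) = f' 1 * ((\<Sum>x\<in>UNIV. q x) - (\<Sum>x\<in>UNIV. w x)) + \<alpha> * (\<Sum>x\<in>UNIV. a x)"
        by (simp add: sum.distrib sum_subtractf sum_distrib_left right_diff_distrib)
      also have "\<dots> = \<alpha> * (\<Sum>x\<in>UNIV. a x)" using distrsD(2)[of q] distrsD(2)[of w] A by simp
      finally have "\<alpha> * (\<Sum>x\<in>UNIV. a x) \<le> r" using sT by simp
      then have "(\<Sum>x\<in>UNIV. a x) \<le> r / \<alpha>" using al' by (simp add: le_divide_eq mult.commute)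
      also have "\<dots> \<le> (1 + \<epsilon>) * r / \<alpha>" using A eps al' by (simp add: divide_right_mono)
      finally show "(\<Sum>x\<in>UNIV. if 0 < w x then w x * Gm (q x / w x) else Cm * q x) \<le> (1 + \<epsilon>) * r / \<alpha>"
        by (simp add: a_def)
    qed simp
  qed
  then show ?thesis by (simp add: \<alpha>_def)
qed

lemma fdiv_famU:
  fixes f f' f'' :: "real \<Rightarrow> real"
  assumes fg: "fgen f f' f''" and al: "0 < f'' 1"
  shows "famU (f'' 1) (fdiv f :: ('a::finite \<Rightarrow> real) \<Rightarrow> _)"
proof (rule famU_from_G[OF Gprops_f[OF fg al] al])
  fix \<epsilon> :: real assume eps: "0 < \<epsilon>" "\<epsilon> < 1"
  show "\<exists>r0>0. \<forall>r (q::'a\<Rightarrow>real) w. 0 < r \<and> r < r0 \<and> q \<in> distrs \<and> w \<in> distrs \<and>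
        (\<forall>x. w x = 0 \<longrightarrow> q x = 0) \<and> (\<forall>x. 0 < w x \<longrightarrow> 0 < q x) \<and>
        (\<Sum>x\<in>UNIV. if 0 < w x then w x * (gF f f' (q x / w x) / f'' 1) else 0) \<le> (1 - \<epsilon>\<^sup>2) * r / f'' 1 \<longrightarrow>
        fdiv f q w \<le> ereal r"
  proof (intro exI[of _ 1] conjI allI impI)
    fix r and q w :: "'a \<Rightarrow> real"
    assume A: "0 < r \<and> r < 1 \<and> q \<in> distrs \<and> w \<in> distrs \<and>
        (\<forall>x. w x = 0 \<longrightarrow> q x = 0) \<and> (\<forall>x. 0 < w x \<longrightarrow> 0 < q x) \<and>
        (\<Sum>x\<in>UNIV. if 0 < w x then w x * (gF f f' (q x / w x) / f'' 1) else 0) \<le> (1 - \<epsilon>\<^sup>2) * r / f'' 1"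
    have q0: "\<And>x. 0 \<le> q x" and w0: "\<And>x. 0 \<le> w x" using A distrsD by blast+
    define H where "H = (\<Sum>x\<in>UNIV. if 0 < w x then w x * (gF f f' (q x / w x) / f'' 1) else 0)"
    have pt: "(if 0 < w x then (if 0 < q x then ereal (w x * f (q x / w x)) else ereal (w x) * f_zero f)
         else if q x = 0 then 0 else ereal (q x) * f_slope_inf f)
        = ereal (f' 1 * (q x - w x) + f'' 1 * (if 0 < w x then w x * (gF f f' (q x / w x) / f'' 1) else 0))" for x
    proof (cases "0 < w x")
      case True
      then have "0 < q x" using A by blast
      then show ?thesis using True al by (simp add: gF_def field_simps)
    next
      case False
      then have "w x = 0" using w0[of x] by simp
      then have "q x = 0" using A by blast
      then show ?thesis using \<open>w x = 0\<close> by simp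
    qed
    have "fdiv f q w = ereal (\<Sum>x\<in>UNIV. f' 1 * (q x - w x) + f'' 1 * (if 0 < w x then w x * (gF f f' (q x / w x) / f'' 1) else 0))"
      unfolding fdiv_def by (simp add: pt)
    also have "(\<Sum>x\<in>UNIV. f' 1 * (q x - w x) + f'' 1 * (if 0 < w x then w x * (gF f f' (q x / w x) / f'' 1) else 0))
        = f' 1 * ((\<Sum>x\<in>UNIV. q x) - (\<Sum>x\<in>UNIV. w x)) + f'' 1 * H"
      by (simp add: sum.distrib sum_subtractf sum_distrib_left right_diff_distrib H_def)
    also have "\<dots> = f'' 1 * H" using distrsD(2)[of q] distrsD(2)[of w] A by simp
    also have "f'' 1 * H \<le> (1 - \<epsilon>\<^sup>2) * r" using A al by (simp add: H_def field_simps)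
    also have "\<dots> \<le> r" using A eps by (simp add: algebra_simps)
    finally show "fdiv f q w \<le> ereal r" by simp
  qed simp
qed

definition Af :: "real \<Rightarrow> real \<Rightarrow> real" where "Af p u = u * (ln (u / p))\<^sup>2"
definition Bf :: "real \<Rightarrow> real \<Rightarrow> real" where "Bf p u = u * ln (u / p)"

lemma cont_Af: "0 < p \<Longrightarrow> continuous_on {0..1} (Af p)"
proof -
  assume p: "0 < p"
  show ?thesis
  proof (subst continuous_on_eq_continuous_within, intro ballI)
    fix u :: real assume u: "u \<in> {0..1}"
    show "continuous (at u within {0..1}) (Af p)"
    proof (cases "u = 0")
      case True
      have "((\<lambda>u. u * (ln (u / p))\<^sup>2) \<longlongrightarrow> 0) (at_right 0)" using p by real_asymp
      then have "(Af p \<longlongrightarrow> Af p 0) (at 0 within {0..1})"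
        by (simp add: Af_def[abs_def] at_within_Icc_at_right)
      then show ?thesis using True by (simp add: continuous_within)
    next
      case False
      then have "0 < u" using u by simp
      then have "isCont (Af p) u" unfolding Af_def[abs_def] using p by (intro continuous_intros) auto
      then show ?thesis by (rule continuous_at_imp_continuous_within)
    qed
  qed
qed

lemma cont_Bf: "0 < p \<Longrightarrow> continuous_on {0..1} (Bf p)"
proof -
  assume p: "0 < p"
  show ?thesis
  proof (subst continuous_on_eq_continuous_within, intro ballI)
    fix u :: real assume u: "u \<in> {0..1}"
    show "continuous (at u within {0..1}) (Bf p)"
    proof (cases "u = 0")
      case True
      have "((\<lambda>u. u * ln (u / p)) \<longlongrightarrow> 0) (at_right 0)" using p by real_asymp
      then have "(Bf p \<longlongrightarrow> Bf p 0) (at 0 within {0..1})"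
        by (simp add: Bf_def[abs_def] at_within_Icc_at_right)
      then show ?thesis using True by (simp add: continuous_within)
    next
      case False
      then have "0 < u" using u by simp
      then have "isCont (Bf p) u" unfolding Bf_def[abs_def] using p by (intro continuous_intros) auto
      then show ?thesis by (rule continuous_at_imp_continuous_within)
    qed
  qed
qed

lemma Bf_bound:
  assumes "0 \<le> u" "u \<le> 1" "0 < p" "\<bar>ln p\<bar> \<le> L"
  shows "\<bar>Bf p u\<bar> \<le> 4 + L"
proof -
  have e: "Bf p u = u * ln u - u * ln p"
    using assms by (cases "u = 0") (auto simp: Bf_def ln_div algebra_simps)
  have a: "u * ln u \<ge> - 4" 
  proof -
    have "u powr (3/4) \<le> 1 powr (3/4)" using assms by (intro powr_mono2) auto
    then have "u powr (3/4) \<le> 1" by simp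
    then show ?thesis using u_ln_u_lower[of u] assms by linarith
  qed
  have b: "u * ln u \<le> 0" using assms by (cases "u = 0") (auto simp: mult_nonneg_nonpos ln_le_zero_iff)
  have c: "\<bar>u * ln p\<bar> \<le> L"
  proof -
    have "\<bar>u * ln p\<bar> = u * \<bar>ln p\<bar>" using assms by (simp add: abs_mult)
    also have "\<dots> \<le> 1 * L" using assms by (intro mult_mono) auto
    finally show ?thesis by simp
  qed
  show ?thesis unfolding e using a b c by linarith
qed

lemma uc_point:
  assumes "0 < p" "0 < e"
  shows "\<exists>d>0. \<forall>u u'. u \<in> {0..1} \<and> u' \<in> {0..1} \<and> \<bar>u' - u\<bar> < d \<longrightarrow>
           \<bar>Af p u' - Af p u\<bar> < e \<and> \<bar>Bf p u' - Bf p u\<bar> < e"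
proof -
  have "uniformly_continuous_on {0..1} (Af p)" by (rule compact_uniformly_continuous[OF cont_Af[OF assms(1)]]) simp
  then obtain d1 where d1: "d1 > 0" "\<And>u u'. u \<in> {0..1} \<Longrightarrow> u' \<in> {0..1} \<Longrightarrow> dist u' u < d1 \<Longrightarrow> dist (Af p u') (Af p u) < e"
    unfolding uniformly_continuous_on_def using assms(2) by metis
  have "uniformly_continuous_on {0..1} (Bf p)" by (rule compact_uniformly_continuous[OF cont_Bf[OF assms(1)]]) simp
  then obtain d2 where d2: "d2 > 0" "\<And>u u'. u \<in> {0..1} \<Longrightarrow> u' \<in> {0..1} \<Longrightarrow> dist u' u < d2 \<Longrightarrow> dist (Bf p u') (Bf p u) < e"
    unfolding uniformly_continuous_on_def using assms(2) by metis
  show ?thesis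
    by (rule exI[of _ "min d1 d2"]) (use d1 d2 in \<open>auto simp: dist_real_def\<close>)
qed

lemma var_log_AB: "var_log w P = (\<Sum>x\<in>UNIV. Af (P x) (w x)) - (\<Sum>x\<in>UNIV. Bf (P x) (w x))\<^sup>2"
  by (simp add: var_log_def Af_def Bf_def)

lemma var_log_uc:
  fixes P :: "'a::finite \<Rightarrow> real"
  assumes P: "P \<in> distrs" "\<forall>x. 0 < P x" and eta: "0 < \<eta>"
  shows "\<exists>\<delta>>0. \<forall>w w'. w \<in> distrs \<longrightarrow> w' \<in> distrs \<longrightarrow> (\<forall>x. \<bar>w x - w' x\<bar> < \<delta>) \<longrightarrow>
           \<bar>var_log w P - var_log w' P\<bar> \<le> \<eta>"
proof -
  define N where "N = real (card (UNIV :: 'a set))"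
  define Bm where "Bm = N * (4 + Lam P)"
  have N1: "1 \<le> N" unfolding N_def by (simp add: Suc_le_eq)
  have Bm0: "0 \<le> Bm" using N1 Lam_nonneg[OF P] by (simp add: Bm_def)
  define e where "e = \<eta> / (N + 2 * N * Bm)"
  have den: "0 < N + 2 * N * Bm" using N1 Bm0 by (smt (verit) mult_nonneg_nonneg)
  have e0: "0 < e" using eta den by (simp add: e_def)
  have "\<forall>x. \<exists>d>0. \<forall>u u'. u \<in> {0..1} \<and> u' \<in> {0..1} \<and> \<bar>u' - u\<bar> < d \<longrightarrow>
           \<bar>Af (P x) u' - Af (P x) u\<bar> < e \<and> \<bar>Bf (P x) u' - Bf (P x) u\<bar> < e"
    using uc_point P e0 by blast
  then obtain D where D: "\<And>x. D x > 0" "\<And>x u u'. u \<in> {0..1} \<Longrightarrow> u' \<in> {0..1} \<Longrightarrow> \<bar>u' - u\<bar> < D x \<Longrightarrow>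
           \<bar>Af (P x) u' - Af (P x) u\<bar> < e \<and> \<bar>Bf (P x) u' - Bf (P x) u\<bar> < e"
    by metis
  define \<delta> where "\<delta> = Min (range D)"
  have \<delta>0: "0 < \<delta>" unfolding \<delta>_def using D(1) by (subst Min_gr_iff) auto
  have \<delta>le: "\<delta> \<le> D x" for x unfolding \<delta>_def by (intro Min_le) auto
  show ?thesis
  proof (intro exI[of _ \<delta>] conjI allI impI)
    show "0 < \<delta>" by (rule \<delta>0)
    fix w w' :: "'a \<Rightarrow> real" assume w: "w \<in> distrs" and w': "w' \<in> distrs" and cl: "\<forall>x. \<bar>w x - w' x\<bar> < \<delta>"
    have wi: "w x \<in> {0..1}" "w' x \<in> {0..1}" for x using distrsD w w' by auto
    have pt: "\<bar>Af (P x) (w x) - Af (P x) (w' x)\<bar> < e \<and> \<bar>Bf (P x) (w x) - Bf (P x) (w' x)\<bar> < e" for x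
    proof -
      have "\<bar>w x - w' x\<bar> < D x" using cl \<delta>le[of x] by (meson order_less_le_trans)
      then show ?thesis using D(2)[of "w' x" "w x" x] wi[of x] by simp
    qed
    have sA: "\<bar>(\<Sum>x\<in>UNIV. Af (P x) (w x)) - (\<Sum>x\<in>UNIV. Af (P x) (w' x))\<bar> \<le> N * e"
    proof -
      have "\<bar>(\<Sum>x\<in>UNIV. Af (P x) (w x)) - (\<Sum>x\<in>UNIV. Af (P x) (w' x))\<bar> = \<bar>\<Sum>x\<in>UNIV. Af (P x) (w x) - Af (P x) (w' x)\<bar>"
        by (simp add: sum_subtractf)
      also have "\<dots> \<le> (\<Sum>x\<in>UNIV. \<bar>Af (P x) (w x) - Af (P x) (w' x)\<bar>)" by (rule sum_abs)
      also have "\<dots> \<le> (\<Sum>x\<in>(UNIV::'a set). e)" using pt by (intro sum_mono) (simp add: less_imp_le)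
      finally show ?thesis by (simp add: N_def)
    qed
    have sB: "\<bar>(\<Sum>x\<in>UNIV. Bf (P x) (w x)) - (\<Sum>x\<in>UNIV. Bf (P x) (w' x))\<bar> \<le> N * e"
    proof -
      have "\<bar>(\<Sum>x\<in>UNIV. Bf (P x) (w x)) - (\<Sum>x\<in>UNIV. Bf (P x) (w' x))\<bar> = \<bar>\<Sum>x\<in>UNIV. Bf (P x) (w x) - Bf (P x) (w' x)\<bar>"
        by (simp add: sum_subtractf)
      also have "\<dots> \<le> (\<Sum>x\<in>UNIV. \<bar>Bf (P x) (w x) - Bf (P x) (w' x)\<bar>)" by (rule sum_abs)
      also have "\<dots> \<le> (\<Sum>x\<in>(UNIV::'a set). e)" using pt by (intro sum_mono) (simp add: less_imp_le)
      finally show ?thesis by (simp add: N_def)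
    qed
    have bB: "\<bar>\<Sum>x\<in>UNIV. Bf (P x) (v x)\<bar> \<le> Bm" if "v \<in> distrs" for v
    proof -
      have "\<bar>\<Sum>x\<in>UNIV. Bf (P x) (v x)\<bar> \<le> (\<Sum>x\<in>UNIV. \<bar>Bf (P x) (v x)\<bar>)" by (rule sum_abs)
      also have "\<dots> \<le> (\<Sum>x\<in>(UNIV::'a set). 4 + Lam P)"
        using distrsD[OF that] P abs_ln_P_le[OF P(2,1)] by (intro sum_mono Bf_bound) auto
      finally show ?thesis by (simp add: Bm_def N_def)
    qed
    define b where "b = (\<Sum>x\<in>UNIV. Bf (P x) (w x))"
    define b' where "b' = (\<Sum>x\<in>UNIV. Bf (P x) (w' x))"
    have "\<bar>b\<^sup>2 - b'\<^sup>2\<bar> = \<bar>b - b'\<bar> * \<bar>b + b'\<bar>" by (simp add: power2_eq_square abs_mult[symmetric] algebra_simps)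
    also have "\<dots> \<le> (N * e) * (2 * Bm)"
    proof (rule mult_mono)
      show "\<bar>b - b'\<bar> \<le> N * e" using sB by (simp add: b_def b'_def)
      have "\<bar>b\<bar> \<le> Bm" "\<bar>b'\<bar> \<le> Bm" using bB w w' by (auto simp: b_def b'_def)
      then show "\<bar>b + b'\<bar> \<le> 2 * Bm" by linarith
    qed (use N1 e0 in auto)
    finally have sq: "\<bar>b\<^sup>2 - b'\<^sup>2\<bar> \<le> N * e * (2 * Bm)" .
    have "\<bar>var_log w P - var_log w' P\<bar> \<le> N * e + N * e * (2 * Bm)"
      using sA sq unfolding var_log_AB b_def b'_def by linarith
    also have "N * e + N * e * (2 * Bm) = \<eta>"
    proof -
      have "N * e + N * e * (2 * Bm) = e * (N + 2 * N * Bm)" by (simp add: algebra_simps)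
      also have "\<dots> = \<eta>" using den by (simp add: e_def)
      finally show ?thesis .
    qed
    finally show "\<bar>var_log w P - var_log w' P\<bar> \<le> \<eta>" .
  qed
qed

lemma seg_distr:
  assumes "P \<in> distrs" "w \<in> distrs" "0 \<le> t" "t \<le> 1"
  shows "(\<lambda>x. (1 - t) * P x + t * w x) \<in> distrs"
proof -
  have "0 \<le> (1 - t) * P x + t * w x" for x using assms distrsD[of P] distrsD[of w] by simp
  moreover have "(\<Sum>x\<in>UNIV. (1 - t) * P x + t * w x) = 1"
    using distrsD(2)[OF assms(1)] distrsD(2)[OF assms(2)] by (simp add: sum.distrib sum_distrib_left[symmetric])
  ultimately show ?thesis by (simp add: distrs_def)
qed

lemma ln_tangent:
  assumes "0 \<le> u" "0 < z" "0 < p"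
  shows "u * ln (u / p) \<ge> u * ln (z / p) + u - (z::real)"
proof (cases "u = 0")
  case False
  then have u: "0 < u" using assms by simp
  have "ln (u / p) = ln (u / z) + ln (z / p)" using u assms by (simp add: ln_div)
  then have "u * ln (u / p) = u * ln (u / z) + u * ln (z / p)" by (simp add: algebra_simps)
  then show ?thesis using u_ln_ge[of u z] assms by linarith
qed (use assms in simp)

lemma kl_seg_convex:
  assumes P: "P \<in> distrs" "\<forall>x. 0 < P x" and w: "w \<in> distrs" and t: "0 \<le> t" "t \<le> 1"
  shows "kl (\<lambda>x. (1 - t) * P x + t * w x) P \<le> t * kl w P"
proof (cases "t = 1")
  case True then show ?thesis by simp
next
  case False
  then have t1: "t < 1" using t by simp
  have pt: "((1 - t) * P x + t * w x) * ln (((1 - t) * P x + t * w x) / P x) \<le> t * (w x * ln (w x / P x))" for x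
  proof -
    define z where "z = (1 - t) * P x + t * w x"
    have px: "0 < P x" using P by blast
    have wx: "0 \<le> w x" using distrsD w by blast
    have z0: "0 < z" unfolding z_def using t t1 px wx by (smt (verit) mult_nonneg_nonneg mult_pos_pos)
    have a: "w x * ln (w x / P x) \<ge> w x * ln (z / P x) + w x - z" using ln_tangent wx z0 px by blast
    have b: "P x * ln (P x / P x) \<ge> P x * ln (z / P x) + P x - z" using ln_tangent[of "P x" z "P x"] px z0 by simp
    have "t * (w x * ln (w x / P x)) + (1 - t) * (P x * ln (P x / P x))
        \<ge> t * (w x * ln (z / P x) + w x - z) + (1 - t) * (P x * ln (z / P x) + P x - z)"
      using a b t t1 by (intro add_mono mult_left_mono) auto
    moreover have "t * (w x * ln (z / P x) + w x - z) + (1 - t) * (P x * ln (z / P x) + P x - z) = z * ln (z / P x)"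
      by (simp add: z_def algebra_simps)
    moreover have "(1 - t) * (P x * ln (P x / P x)) = 0" using px by simp
    ultimately show ?thesis unfolding z_def[symmetric] by linarith
  qed
  have "kl (\<lambda>x. (1 - t) * P x + t * w x) P \<le> (\<Sum>x\<in>UNIV. t * (w x * ln (w x / P x)))"
    unfolding kl_alt by (intro sum_mono pt)
  also have "\<dots> = t * kl w P" by (simp add: kl_alt sum_distrib_left)
  finally show ?thesis .
qed

lemma kl_seg_cont:
  assumes P: "P \<in> distrs" "\<forall>x. 0 < P x" and w: "w \<in> distrs"
  shows "continuous_on {0..1} (\<lambda>t. kl (\<lambda>x. (1 - t) * P x + t * w x) P)"
proof -
  have "continuous_on {0..1} (\<lambda>t. Bf (P x) ((1 - t) * P x + t * w x))" for x
  proof (rule continuous_on_compose2[OF cont_Bf])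
    show "0 < P x" using P by blast
    show "continuous_on {0..1} (\<lambda>t. (1 - t) * P x + t * w x)" by (intro continuous_intros)
    show "(\<lambda>t. (1 - t) * P x + t * w x) ` {0..1} \<subseteq> {0..1}"
    proof
      fix y assume "y \<in> (\<lambda>t. (1 - t) * P x + t * w x) ` {0..1}"
      then obtain t where t: "t \<in> {0..1}" "y = (1 - t) * P x + t * w x" by auto
      have "(\<lambda>x. (1 - t) * P x + t * w x) \<in> distrs" using seg_distr P w t by auto
      then show "y \<in> {0..1}" using distrsD t by auto
    qed
  qed
  then have "continuous_on {0..1} (\<lambda>t. \<Sum>x\<in>UNIV. Bf (P x) ((1 - t) * P x + t * w x))"
    by (intro continuous_on_sum) auto
  then show ?thesis by (simp add: kl_alt Bf_def)
qed

lemma seg_level: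
  fixes P :: "'a::finite \<Rightarrow> real"
  assumes P: "P \<in> distrs" "\<forall>x. 0 < P x" and gam: "0 < \<gamma>" and eta: "0 < \<eta>"
  shows "\<exists>\<delta>0>0. \<forall>w. w \<in> distrs \<and> \<gamma> \<le> kl w P \<and> kl w P < \<gamma> + \<delta>0 \<longrightarrow>
           var_log w P \<le> Sup {var_log Qh P | Qh. Qh \<in> distrs \<and> kl Qh P = \<gamma>} + \<eta>"
proof -
  define S where "S = {var_log Qh P | Qh. Qh \<in> distrs \<and> kl Qh P = \<gamma>}"
  have bdd: "bdd_above S" unfolding S_def bdd_above_def using var_log_le P by blast
  obtain \<delta> where \<delta>: "\<delta> > 0" and uc: "\<And>w w'. w \<in> distrs \<Longrightarrow> w' \<in> distrs \<Longrightarrow> (\<forall>x. \<bar>w x - w' x\<bar> < \<delta>) \<Longrightarrow>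
           \<bar>var_log w P - var_log w' P\<bar> \<le> \<eta>"
    using var_log_uc[OF P eta] by blast
  define \<delta>0 where "\<delta>0 = \<gamma> * \<delta> / 2"
  have d0: "0 < \<delta>0" using gam \<delta> by (simp add: \<delta>0_def)
  show ?thesis unfolding S_def[symmetric]
  proof (intro exI[of _ \<delta>0] conjI allI impI)
    show "0 < \<delta>0" by (rule d0)
    fix w :: "'a \<Rightarrow> real" assume A: "w \<in> distrs \<and> \<gamma> \<le> kl w P \<and> kl w P < \<gamma> + \<delta>0"
    define \<phi> where "\<phi> = (\<lambda>t. kl (\<lambda>x. (1 - t) * P x + t * w x) P)"
    have Pn: "\<And>x. P x \<noteq> 0" using P(2) by (metis less_irrefl)
    have \<phi>0: "\<phi> 0 = 0" using Pn by (simp add: \<phi>_def kl_alt)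
    have \<phi>1: "\<phi> 1 = kl w P" by (simp add: \<phi>_def)
    obtain t where t: "0 \<le> t" "t \<le> 1" "\<phi> t = \<gamma>"
      using IVT'[of \<phi> 0 \<gamma> 1] \<phi>0 \<phi>1 A gam kl_seg_cont[OF P, of w] by (auto simp: \<phi>_def)
    have tpos: "0 < t" using t \<phi>0 gam by (cases "t = 0") auto
    have "\<gamma> \<le> t * kl w P" using kl_seg_convex[OF P _ t(1,2), of w] A t(3) by (simp add: \<phi>_def)
    also have "\<dots> < t * (\<gamma> + \<delta>0)" using A tpos by simp
    finally have "\<gamma> < t * (\<gamma> + \<delta>0)" .
    then have "(1 - t) * \<gamma> < t * \<delta>0" by (simp add: algebra_simps)
    also have "\<dots> \<le> \<delta>0" using t d0 by (simp add: mult_left_le_one_le)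
    finally have "(1 - t) * \<gamma> < \<gamma> * \<delta> / 2" by (simp add: \<delta>0_def)
    then have "\<gamma> * (1 - t) < \<gamma> * (\<delta> / 2)" by (simp add: algebra_simps)
    then have t1: "1 - t < \<delta> / 2" using gam by (simp only: mult_less_cancel_left_pos)
    define wt where "wt = (\<lambda>x. (1 - t) * P x + t * w x)"
    have wtd: "wt \<in> distrs" unfolding wt_def using seg_distr[of P w t] P(1) A t(1,2) by blast
    have "kl wt P = \<gamma>" using t(3) by (simp add: \<phi>_def wt_def)
    then have "var_log wt P \<in> S" using wtd by (auto simp: S_def)
    then have inS: "var_log wt P \<le> Sup S" using bdd by (rule cSup_upper)
    have "\<forall>x. \<bar>w x - wt x\<bar> < \<delta>"
    proof
      fix x
      have "w x - wt x = (1 - t) * (w x - P x)" by (simp add: wt_def algebra_simps)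
      then have "\<bar>w x - wt x\<bar> = (1 - t) * \<bar>w x - P x\<bar>" using t by (simp add: abs_mult)
      also have "\<dots> \<le> (1 - t) * 1"
      proof (rule mult_left_mono)
        have "0 \<le> w x" "w x \<le> 1" using distrsD[of w] A by auto
        moreover have "0 \<le> P x" "P x \<le> 1" using distrsD[of P] P by auto
        ultimately show "\<bar>w x - P x\<bar> \<le> 1" by (simp add: abs_le_iff)
      qed (use t in simp)
      finally have "\<bar>w x - wt x\<bar> \<le> 1 - t" by simp
      then show "\<bar>w x - wt x\<bar> < \<delta>" using t1 \<delta> by linarith
    qed
    then have "\<bar>var_log w P - var_log wt P\<bar> \<le> \<eta>" using uc A wtd by blast
    then show "var_log w P \<le> Sup S + \<eta>" using inS by linarith
  qed
qed

definition tZ :: "('a::finite \<Rightarrow> real) \<Rightarrow> ('a \<Rightarrow> real) \<Rightarrow> real \<Rightarrow> real" where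
  "tZ P0 P1 \<mu> = (\<Sum>a\<in>UNIV. P0 a powr (\<mu> / (1 + \<mu>)) * P1 a powr (1 / (1 + \<mu>)))"

lemma tilt_facts:
  fixes P0 P1 :: "'a::finite \<Rightarrow> real"
  assumes P0: "\<forall>x. 0 < P0 x" and P1: "\<forall>x. 0 < P1 x" and mu: "0 \<le> \<mu>"
  shows "0 < tZ P0 P1 \<mu>" "\<And>x. 0 < tilt P0 P1 \<mu> x" "tilt P0 P1 \<mu> \<in> distrs"
    "\<And>x. ln (tilt P0 P1 \<mu> x) = \<mu> / (1 + \<mu>) * ln (P0 x) + 1 / (1 + \<mu>) * ln (P1 x) - ln (tZ P0 P1 \<mu>)"
proof -
  have pt: "0 < P0 a powr (\<mu> / (1 + \<mu>)) * P1 a powr (1 / (1 + \<mu>))" for a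
  proof -
    have "0 < P0 a" "0 < P1 a" using P0 P1 by auto
    then show ?thesis by simp
  qed
  show Z: "0 < tZ P0 P1 \<mu>" unfolding tZ_def by (intro sum_pos) (use pt in auto)
  show pos: "\<And>x. 0 < tilt P0 P1 \<mu> x" using pt Z by (simp add: tilt_def tZ_def)
  have "(\<Sum>x\<in>UNIV. tilt P0 P1 \<mu> x) = 1" using Z by (simp add: tilt_def tZ_def sum_divide_distrib[symmetric])
  then show "tilt P0 P1 \<mu> \<in> distrs" using pos by (simp add: distrs_def less_imp_le)
  fix x
  have "ln (tilt P0 P1 \<mu> x) = ln (P0 x powr (\<mu> / (1 + \<mu>)) * P1 x powr (1 / (1 + \<mu>))) - ln (tZ P0 P1 \<mu>)"
    using pt[of x] Z P0 P1 by (simp add: tilt_def tZ_def[symmetric] ln_div less_imp_neq[symmetric])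
  also have "\<dots> = \<mu> / (1 + \<mu>) * ln (P0 x) + 1 / (1 + \<mu>) * ln (P1 x) - ln (tZ P0 P1 \<mu>)"
  proof -
    have "0 < P0 x" "0 < P1 x" using P0 P1 by auto
    then show ?thesis by (simp add: ln_mult ln_powr)
  qed
  finally show "ln (tilt P0 P1 \<mu> x) = \<mu> / (1 + \<mu>) * ln (P0 x) + 1 / (1 + \<mu>) * ln (P1 x) - ln (tZ P0 P1 \<mu>)" .
qed

lemma pyth:
  fixes P0 P1 w :: "'a::finite \<Rightarrow> real"
  assumes P0: "\<forall>x. 0 < P0 x" and P1: "\<forall>x. 0 < P1 x" and mu: "0 \<le> \<mu>" and w: "w \<in> distrs"
  shows "kl w P1 = (1 + \<mu>) * kl w (tilt P0 P1 \<mu>) - \<mu> * kl w P0 - (1 + \<mu>) * ln (tZ P0 P1 \<mu>)"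
proof -
  define Q where "Q = tilt P0 P1 \<mu>"
  define Z where "Z = tZ P0 P1 \<mu>"
  have Qp: "\<And>x. 0 < Q x" and lnQ: "\<And>x. ln (Q x) = \<mu> / (1 + \<mu>) * ln (P0 x) + 1 / (1 + \<mu>) * ln (P1 x) - ln Z"
    using tilt_facts[OF P0 P1 mu] by (auto simp: Q_def Z_def)
  have pt: "w x * ln (w x / P1 x) = (1 + \<mu>) * (w x * ln (w x / Q x)) - \<mu> * (w x * ln (w x / P0 x)) - (1 + \<mu>) * (w x * ln Z)" for x
  proof (cases "w x = 0")
    case False
    then have wx: "0 < w x" using distrsD w by (metis less_eq_real_def)
    have p0: "0 < P0 x" and p1: "0 < P1 x" using P0 P1 by auto
    have e: "ln (w x / P1 x) = ln (w x) - ln (P1 x)" "ln (w x / Q x) = ln (w x) - ln (Q x)" "ln (w x / P0 x) = ln (w x) - ln (P0 x)"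
      using wx p0 p1 Qp[of x] by (auto simp: ln_div)
    have c1: "(1 + \<mu>) * (1 / (1 + \<mu>)) = 1" using mu by simp
    have c2: "\<mu> / (1 + \<mu>) = \<mu> * (1 / (1 + \<mu>))" by simp
    have q1: "(1 + \<mu>) * ln (Q x) = \<mu> * ln (P0 x) + ln (P1 x) - (1 + \<mu>) * ln Z"
      unfolding lnQ c2 using c1 by algebra
    have "(1 + \<mu>) * (ln (w x) - ln (Q x)) - \<mu> * (ln (w x) - ln (P0 x)) - (1 + \<mu>) * ln Z = ln (w x) - ln (P1 x)"
      using q1 by algebra
    then show ?thesis unfolding e by algebra
  qed simp
  have "kl w P1 = (\<Sum>x\<in>UNIV. (1 + \<mu>) * (w x * ln (w x / Q x)) - \<mu> * (w x * ln (w x / P0 x)) - (1 + \<mu>) * (w x * ln Z))"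
    unfolding kl_alt using pt by simp
  also have "\<dots> = (1 + \<mu>) * kl w Q - \<mu> * kl w P0 - (1 + \<mu>) * (ln Z * (\<Sum>x\<in>UNIV. w x))"
    by (simp add: kl_alt sum_subtractf sum_distrib_left sum_distrib_right mult.commute mult.left_commute)
  also have "(\<Sum>x\<in>UNIV. w x) = 1" using distrsD w by blast
  finally show ?thesis by (simp add: Q_def Z_def)
qed

lemma pyth_ineq:
  fixes P0 P1 w :: "'a::finite \<Rightarrow> real"
  assumes P0: "\<forall>x. 0 < P0 x" and P1: "\<forall>x. 0 < P1 x" and mu: "0 \<le> \<mu>" and w: "w \<in> distrs"
    and le: "kl w P0 \<le> kl (tilt P0 P1 \<mu>) P0"
  shows "kl w P1 \<ge> kl (tilt P0 P1 \<mu>) P1 + kl w (tilt P0 P1 \<mu>)"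
proof -
  define Q where "Q = tilt P0 P1 \<mu>"
  have Qd: "Q \<in> distrs" and Qp: "\<forall>x. 0 < Q x" using tilt_facts[OF P0 P1 mu] by (auto simp: Q_def)
  have QQ: "kl Q Q = 0" using Qp by (simp add: kl_alt less_imp_neq[symmetric])
  have a: "kl w P1 = (1 + \<mu>) * kl w Q - \<mu> * kl w P0 - (1 + \<mu>) * ln (tZ P0 P1 \<mu>)"
    using pyth[OF P0 P1 mu w] by (simp add: Q_def)
  have b: "kl Q P1 = - \<mu> * kl Q P0 - (1 + \<mu>) * ln (tZ P0 P1 \<mu>)"
    using pyth[OF P0 P1 mu Qd] QQ by (simp add: Q_def)
  have k0: "0 \<le> kl w Q" using kl_nonneg[OF w Qd Qp] .
  have "\<mu> * kl w P0 \<le> \<mu> * kl Q P0" using le mu by (simp add: Q_def mult_left_mono)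
  moreover have "kl w Q \<le> (1 + \<mu>) * kl w Q" using k0 mu by (simp add: algebra_simps)
  ultimately show ?thesis using a b by (simp add: Q_def[symmetric])
qed

lemma lower_gen:
  fixes P :: "'a::finite \<Rightarrow> real" and d :: "('a \<Rightarrow> real) \<Rightarrow> ('a \<Rightarrow> real) \<Rightarrow> ereal"
  assumes P: "P \<in> distrs" "\<forall>x. 0 < P x" and fam: "famL \<alpha> d" and al: "0 < \<alpha>" and eps: "0 < \<epsilon>" "\<epsilon> < 1"
  shows "\<exists>r0>0. \<exists>K\<ge>0. \<forall>r q w. 0 < r \<and> r < r0 \<and> q \<in> distrs \<and> w \<in> distrs \<and> d q w \<le> ereal r \<longrightarrow>
           kl q P \<ge> kl w P - sqrt (r * (2 * (1 + \<epsilon>) * var_log w P / (\<alpha> * (1 - \<epsilon>)))) - K * (r + r powr (3/4))"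
proof -
  obtain \<kappa> c r0 where kc: "0 < \<kappa>" "\<kappa> < 1" "0 < c" "0 < r0"
    and H0: "\<forall>r q w. 0 < r \<and> r < r0 \<and> q \<in> distrs \<and> w \<in> distrs \<and> d q w \<le> ereal r \<longrightarrow>
        (\<exists>a. (\<forall>x. 0 < w x \<and> \<bar>q x - w x\<bar> \<le> \<kappa> * w x \<longrightarrow> (1-\<epsilon>) * (q x - w x)\<^sup>2 / (2 * w x) \<le> a x) \<and>
             (\<forall>x. \<not> (0 < w x \<and> \<bar>q x - w x\<bar> \<le> \<kappa> * w x) \<longrightarrow> c * \<bar>q x - w x\<bar> \<le> a x) \<and>
             (\<Sum>x\<in>UNIV. a x) \<le> (1+\<epsilon>) * r / \<alpha>)"
    using fam[unfolded famL_def, rule_format, OF conjI[OF eps]] by blast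
  note H = H0[rule_format]
  define C1 where "C1 = (1 + \<epsilon>) / \<alpha>"
  define M where "M = (1 + 1/\<kappa>) / c"
  define K1 where "K1 = (2 * Lam P + 1) / c * C1"
  define K2 where "K2 = 4 * real (card (UNIV::'a set)) * (M * C1) powr (3/4)"
  have C10: "0 < C1" using eps al by (simp add: C1_def)
  have "0 < 1 + 1/\<kappa>" using kc by (simp add: add_pos_pos)
  then have M0: "0 < M" using kc by (simp add: M_def)
  have K10: "0 \<le> K1" using Lam_nonneg[OF P] kc C10 by (simp add: K1_def)
  have K20: "0 \<le> K2" by (simp add: K2_def)
  show ?thesis
  proof (rule exI[of _ r0], rule conjI[OF kc(4)], rule exI[of _ "max K1 K2"], intro conjI allI impI)
    show "0 \<le> max K1 K2" using K10 by simp
    fix r and q w :: "'a \<Rightarrow> real"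
    assume A: "0 < r \<and> r < r0 \<and> q \<in> distrs \<and> w \<in> distrs \<and> d q w \<le> ereal r"
    obtain a where a1: "\<And>x. 0 < w x \<Longrightarrow> \<bar>q x - w x\<bar> \<le> \<kappa> * w x \<Longrightarrow> (1-\<epsilon>) * (q x - w x)\<^sup>2 / (2 * w x) \<le> a x"
      and a2: "\<And>x. \<not> (0 < w x \<and> \<bar>q x - w x\<bar> \<le> \<kappa> * w x) \<Longrightarrow> c * \<bar>q x - w x\<bar> \<le> a x"
      and a3: "(\<Sum>x\<in>UNIV. a x) \<le> C1 * r"
      using H[OF A] by (auto simp: C1_def)
    have L: "kl q P \<ge> kl w P - sqrt (2 * (C1 * r) * var_log w P / (1-\<epsilon>)) - (2 * Lam P + 1) / c * (C1 * r)
            - 4 * real (card (UNIV::'a set)) * (((1 + 1/\<kappa>)/c) * (C1 * r)) powr (3/4)"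
      by (rule LL[OF P _ _ eps kc(1,2,3) a1 a2 a3]) (use A in auto)
    have e1: "2 * (C1 * r) * var_log w P / (1-\<epsilon>) = r * (2 * (1 + \<epsilon>) * var_log w P / (\<alpha> * (1 - \<epsilon>)))"
      using eps al by (simp add: C1_def field_simps)
    have e2: "(2 * Lam P + 1) / c * (C1 * r) = K1 * r" by (simp add: K1_def)
    have e3: "4 * real (card (UNIV::'a set)) * (((1 + 1/\<kappa>)/c) * (C1 * r)) powr (3/4) = K2 * r powr (3/4)"
    proof -
      have "(((1 + 1/\<kappa>)/c) * (C1 * r)) = (M * C1) * r" by (simp add: M_def)
      then have "(((1 + 1/\<kappa>)/c) * (C1 * r)) powr (3/4) = (M * C1) powr (3/4) * r powr (3/4)"
        using M0 C10 A by (simp add: powr_mult)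
      then show ?thesis by (simp add: K2_def)
    qed
    have "K1 * r + K2 * r powr (3/4) \<le> max K1 K2 * (r + r powr (3/4))"
    proof -
      have "K1 * r \<le> max K1 K2 * r" using A by (intro mult_right_mono) auto
      moreover have "K2 * r powr (3/4) \<le> max K1 K2 * r powr (3/4)" by (intro mult_right_mono) auto
      ultimately show ?thesis by (simp add: distrib_left)
    qed
    then show "kl q P \<ge> kl w P - sqrt (r * (2 * (1 + \<epsilon>) * var_log w P / (\<alpha> * (1 - \<epsilon>)))) - max K1 K2 * (r + r powr (3/4))"
      using L unfolding e1 e2 e3 by linarith
  qed
qed

lemma aux_cancel: "0 < a \<Longrightarrow> 0 < V \<Longrightarrow> 0 < D \<Longrightarrow> 2 * (a * V * m / (2 * D)) / a / V * D = (m::real)"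
  by (simp add: field_simps)

lemma upper_gen:
  fixes P w :: "'a::finite \<Rightarrow> real" and d :: "('a \<Rightarrow> real) \<Rightarrow> ('a \<Rightarrow> real) \<Rightarrow> ereal"
  assumes P: "P \<in> distrs" "\<forall>x. 0 < P x" and fam: "famU \<alpha> d" and al: "0 < \<alpha>" and eps: "0 < \<epsilon>" "\<epsilon> < 1"
    and w: "w \<in> distrs"
  shows "\<exists>r0>0. \<forall>r. 0 < r \<and> r < r0 \<longrightarrow> (\<exists>q. q \<in> distrs \<and> d q w \<le> ereal r \<and>
           kl q P \<le> kl w P - sqrt (r * (2 * (1 - \<epsilon>) * var_log w P / \<alpha>)) + 2 * r / \<alpha>)"
proof -
  obtain \<kappa> r1 where kr: "0 < \<kappa>" "0 < r1"
    and H0: "\<forall>r q w. 0 < r \<and> r < r1 \<and> q \<in> distrs \<and> w \<in> distrs \<and> (\<forall>x. w x = 0 \<longrightarrow> q x = 0) \<and>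
        (\<forall>x. 0 < w x \<longrightarrow> \<bar>q x - w x\<bar> \<le> \<kappa> * w x) \<and>
        (\<Sum>x\<in>UNIV. if 0 < w x then (q x - w x)\<^sup>2 / w x else 0) \<le> 2 * (1-\<epsilon>) * r / \<alpha> \<longrightarrow>
        d q w \<le> ereal r"
    using fam[unfolded famU_def, rule_format, OF conjI[OF eps]] by blast
  note H = H0[rule_format]
  define V where "V = var_log w P"
  define g where "g = (\<lambda>x. if 0 < w x then ln (w x / P x) - kl w P else 0)"
  define Gs where "Gs = (\<Sum>x\<in>UNIV. \<bar>g x\<bar>)"
  define m0 where "m0 = min (1/2) \<kappa>"
  have V0: "0 \<le> V" using var_log_nonneg w by (simp add: V_def)
  have m00: "0 < m0" using kr by (simp add: m0_def)
  have gGs: "\<bar>g x\<bar> \<le> Gs" for x unfolding Gs_def by (rule member_le_sum[of x UNIV "\<lambda>x. \<bar>g x\<bar>"]) auto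
  have Gs0: "0 \<le> Gs" using gGs[of undefined] by linarith
  define r0 where "r0 = (if V = 0 then r1 else min r1 (\<alpha> * V * m0\<^sup>2 / (2 * (Gs\<^sup>2 + 1))))"
  have r00: "0 < r0"
  proof (cases "V = 0")
    case False
    then have "0 < V" using V0 by simp
    moreover have "0 < 2 * (Gs\<^sup>2 + 1)" by (simp add: add_nonneg_pos)
    ultimately have "0 < \<alpha> * V * m0\<^sup>2 / (2 * (Gs\<^sup>2 + 1))" using al m00 by simp
    then show ?thesis using kr False by (simp add: r0_def)
  qed (use kr in \<open>simp add: r0_def\<close>)
  show ?thesis
  proof (intro exI[of _ r0] conjI allI impI)
    show "0 < r0" by (rule r00)
    fix r assume r: "0 < r \<and> r < r0"
    have rr1: "r < r1" using r by (auto simp: r0_def split: if_splits)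
    define s where "s = - sqrt (2 * (1 - \<epsilon>) * r / \<alpha>) / sqrt V"
    have ssmall: "\<bar>s * g x\<bar> \<le> m0" for x
    proof (cases "V = 0")
      case True then show ?thesis using m00 by (simp add: s_def)
    next
      case False
      then have Vp: "0 < V" using V0 by simp
      have rb: "r \<le> \<alpha> * V * m0\<^sup>2 / (2 * (Gs\<^sup>2 + 1))" using r False by (simp add: r0_def)
      have s2: "s\<^sup>2 = 2 * (1 - \<epsilon>) * r / \<alpha> / V"
        using eps al r Vp by (simp add: s_def power_divide)
      have "(\<bar>s\<bar> * Gs)\<^sup>2 = 2 * (1 - \<epsilon>) * r / \<alpha> / V * Gs\<^sup>2" by (simp add: power_mult_distrib s2)
      also have "\<dots> \<le> 2 * r / \<alpha> / V * (Gs\<^sup>2 + 1)"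
      proof -
        have "2 * (1 - \<epsilon>) * r \<le> 2 * r" using eps r by simp
        then have "2 * (1 - \<epsilon>) * r / \<alpha> / V \<le> 2 * r / \<alpha> / V" using al Vp by (simp add: divide_right_mono)
        moreover have "Gs\<^sup>2 \<le> Gs\<^sup>2 + 1" by simp
        ultimately show ?thesis using eps r al Vp by (intro mult_mono) auto
      qed
      also have "\<dots> \<le> m0\<^sup>2"
      proof -
        have "2 * r \<le> 2 * (\<alpha> * V * m0\<^sup>2 / (2 * (Gs\<^sup>2 + 1)))" using rb by simp
        then have "2 * r / \<alpha> / V * (Gs\<^sup>2 + 1) \<le> 2 * (\<alpha> * V * m0\<^sup>2 / (2 * (Gs\<^sup>2 + 1))) / \<alpha> / V * (Gs\<^sup>2 + 1)"
          using al Vp by (intro mult_right_mono divide_right_mono) auto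
        also have "\<dots> = m0\<^sup>2"
          by (rule aux_cancel[OF al Vp]) (simp add: add_nonneg_pos)
        finally show ?thesis .
      qed
      finally have sq: "(\<bar>s\<bar> * Gs)\<^sup>2 \<le> m0\<^sup>2" .
      have "\<bar>s\<bar> * Gs \<le> m0" using power2_le_imp_le[OF sq] m00 by simp
      moreover have "\<bar>s * g x\<bar> \<le> \<bar>s\<bar> * Gs" using gGs[of x] by (simp add: abs_mult mult_left_mono)
      ultimately show ?thesis by linarith
    qed
    have half: "\<bar>s * (if 0 < w x then ln (w x / P x) - kl w P else 0)\<bar> \<le> 1/2" for x
      using ssmall[of x] by (simp add: g_def m0_def)
    define q where "q = (\<lambda>x. w x * (1 + s * (if 0 < w x then ln (w x / P x) - kl w P else 0)))"
    note U0 = UU[OF P w half]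
    have U1: "q \<in> distrs" unfolding q_def by (rule U0(1))
    have U2: "q x = 0" if "w x = 0" for x unfolding q_def using U0(2)[OF that] by simp
    have U3: "\<bar>q x - w x\<bar> \<le> \<bar>s * (ln (w x / P x) - kl w P)\<bar> * w x" if "0 < w x" for x
      unfolding q_def using U0(3)[OF that] by simp
    have U4: "(\<Sum>x\<in>UNIV. if 0 < w x then (q x - w x)\<^sup>2 / w x else 0) = s\<^sup>2 * var_log w P"
      unfolding q_def by (rule U0(4))
    have U5: "kl q P \<le> kl w P + s * var_log w P + s\<^sup>2 * var_log w P" unfolding q_def by (rule U0(5))
    note U = U1 U2 U3 U4 U5
    have chi: "(\<Sum>x\<in>UNIV. if 0 < w x then (q x - w x)\<^sup>2 / w x else 0) \<le> 2 * (1 - \<epsilon>) * r / \<alpha>"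
    proof (cases "V = 0")
      case True
      then show ?thesis using U4 eps r al by (simp add: V_def)
    next
      case False
      then have "s\<^sup>2 * V = 2 * (1 - \<epsilon>) * r / \<alpha>" using V0 eps al r by (simp add: s_def power_divide)
      then show ?thesis using U4 by (simp add: V_def)
    qed
    have near: "\<forall>x. 0 < w x \<longrightarrow> \<bar>q x - w x\<bar> \<le> \<kappa> * w x"
    proof (intro allI impI)
      fix x assume wx: "0 < w x"
      have "\<bar>q x - w x\<bar> \<le> \<bar>s * (ln (w x / P x) - kl w P)\<bar> * w x" using U3 wx by blast
      also have "\<bar>s * (ln (w x / P x) - kl w P)\<bar> \<le> \<kappa>" using ssmall[of x] wx by (simp add: g_def m0_def)
      then have "\<bar>s * (ln (w x / P x) - kl w P)\<bar> * w x \<le> \<kappa> * w x" using wx by (intro mult_right_mono) auto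
      finally show "\<bar>q x - w x\<bar> \<le> \<kappa> * w x" .
    qed
    have ac: "\<forall>x. w x = 0 \<longrightarrow> q x = 0" using U2 by blast
    have dq: "d q w \<le> ereal r"
      by (rule H) (intro conjI; (rule rr1 U1 w near chi ac)?; use r in simp)
    have sV: "s * V = - sqrt (r * (2 * (1 - \<epsilon>) * V / \<alpha>))"
    proof (cases "V = 0")
      case True then show ?thesis by simp
    next
      case False
      then have Vp: "0 < V" using V0 by simp
      have "s * V = - sqrt (2 * (1 - \<epsilon>) * r / \<alpha>) * (V / sqrt V)" by (simp add: s_def)
      also have "V / sqrt V = sqrt V" using Vp by (simp add: real_div_sqrt)
      also have "- sqrt (2 * (1 - \<epsilon>) * r / \<alpha>) * sqrt V = - sqrt (r * (2 * (1 - \<epsilon>) * V / \<alpha>))"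
      proof -
        have "sqrt (2 * (1 - \<epsilon>) * r / \<alpha>) * sqrt V = sqrt (2 * (1 - \<epsilon>) * r / \<alpha> * V)"
          by (rule real_sqrt_mult[symmetric])
        also have "2 * (1 - \<epsilon>) * r / \<alpha> * V = r * (2 * (1 - \<epsilon>) * V / \<alpha>)" by simp
        finally show ?thesis by simp
      qed
      finally show ?thesis .
    qed
    have s2V: "s\<^sup>2 * V \<le> 2 * r / \<alpha>"
    proof (cases "V = 0")
      case True then show ?thesis using r al by simp
    next
      case False
      then have "s\<^sup>2 * V = 2 * (1 - \<epsilon>) * r / \<alpha>" using V0 eps al r by (simp add: s_def power_divide)
      also have "\<dots> \<le> 2 * r / \<alpha>" using eps r al by (simp add: divide_right_mono)
      finally show ?thesis .
    qed
    have "kl q P \<le> kl w P - sqrt (r * (2 * (1 - \<epsilon>) * var_log w P / \<alpha>)) + 2 * r / \<alpha>"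
      using U5 sV s2V unfolding V_def by linarith
    then show "\<exists>q. q \<in> distrs \<and> d q w \<le> ereal r \<and>
           kl q P \<le> kl w P - sqrt (r * (2 * (1 - \<epsilon>) * var_log w P / \<alpha>)) + 2 * r / \<alpha>"
      using U1 dq by blast
  qed
qed

lemma ev_pos_lt: "0 < (b::real) \<Longrightarrow> eventually (\<lambda>r. 0 < r \<and> r < b) (at_right 0)"
  unfolding eventually_at_right_field by (intro exI[of _ b]) auto

lemma ev_small1:
  assumes e: "0 < e"
  shows "eventually (\<lambda>r. K * (r + r powr (3/4)) \<le> e * sqrt r) (at_right (0::real))"
proof -
  have "((\<lambda>r::real. K * (r + r powr (3/4)) / sqrt r) \<longlongrightarrow> 0) (at_right 0)" by real_asymp
  then have "eventually (\<lambda>r. K * (r + r powr (3/4)) / sqrt r < e) (at_right 0)"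
    using e by (rule order_tendstoD(2))
  moreover have "eventually (\<lambda>r. 0 < r \<and> r < (1::real)) (at_right 0)" by (rule ev_pos_lt) simp
  ultimately show ?thesis
  proof eventually_elim
    case (elim r)
    then have "0 < sqrt r" by simp
    then show ?case using elim by (simp add: divide_less_eq less_imp_le)
  qed
qed

lemma ev_small2:
  assumes d: "0 < \<delta>"
  shows "eventually (\<lambda>r. sqrt (r * cB) + K * (r + r powr (3/4)) \<le> \<delta>) (at_right (0::real))"
proof -
  have p: "((\<lambda>r::real. r powr (3/4)) \<longlongrightarrow> 0) (at_right 0)" by real_asymp
  have i: "((\<lambda>r::real. r) \<longlongrightarrow> 0) (at_right 0)" by (rule tendsto_ident_at)
  have "((\<lambda>r::real. sqrt (r * cB) + K * (r + r powr (3/4))) \<longlongrightarrow> sqrt (0 * cB) + K * (0 + 0)) (at_right 0)"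
    by (intro tendsto_intros i p)
  then have "((\<lambda>r::real. sqrt (r * cB) + K * (r + r powr (3/4))) \<longlongrightarrow> 0) (at_right 0)" by simp
  then have "eventually (\<lambda>r. sqrt (r * cB) + K * (r + r powr (3/4)) < \<delta>) (at_right 0)"
    using d by (rule order_tendstoD(2))
  then show ?thesis by eventually_elim simp
qed

lemma ev_small3:
  assumes e: "0 < e"
  shows "eventually (\<lambda>r. 2 * r / \<alpha> \<le> e * sqrt r) (at_right (0::real))"
proof -
  have "((\<lambda>r::real. (2 / \<alpha>) * sqrt r) \<longlongrightarrow> (2 / \<alpha>) * sqrt 0) (at_right 0)"
    by (intro tendsto_intros tendsto_ident_at)
  then have "eventually (\<lambda>r. (2 / \<alpha>) * sqrt r < e) (at_right 0)"
    using e by (intro order_tendstoD(2)) auto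
  moreover have "eventually (\<lambda>r. 0 < r \<and> r < (1::real)) (at_right 0)" by (rule ev_pos_lt) simp
  ultimately show ?thesis
  proof eventually_elim
    case (elim r)
    then have f1: "(2 / \<alpha>) * sqrt r * sqrt r \<le> e * sqrt r" by (intro mult_right_mono) auto
    have eq: "(2 / \<alpha>) * sqrt r * sqrt r = 2 * r / \<alpha>"
    proof -
      have "sqrt r * sqrt r = r" using elim by simp
      then show ?thesis by (metis mult.assoc times_divide_eq_left mult.commute)
    qed
    show ?case using f1 unfolding eq .
  qed
qed

lemma pick_eps_lower:
  fixes F :: "real \<Rightarrow> real"
  assumes "(F \<longlongrightarrow> L) (at_right 0)" "L < U"
  shows "\<exists>\<epsilon>. 0 < \<epsilon> \<and> \<epsilon> < 1 \<and> F \<epsilon> < U"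
proof -
  have "eventually (\<lambda>\<epsilon>. F \<epsilon> < U) (at_right 0)" using assms by (rule order_tendstoD(2))
  moreover have "eventually (\<lambda>\<epsilon>. 0 < \<epsilon> \<and> \<epsilon> < (1::real)) (at_right 0)" by (rule ev_pos_lt) simp
  ultimately have "eventually (\<lambda>\<epsilon>. 0 < \<epsilon> \<and> \<epsilon> < 1 \<and> F \<epsilon> < U) (at_right 0)" by eventually_elim auto
  then show ?thesis using eventually_happens'[of "at_right (0::real)"] by auto
qed

lemma pick_eps_upper:
  fixes F :: "real \<Rightarrow> real"
  assumes "(F \<longlongrightarrow> L) (at_right 0)" "U < L"
  shows "\<exists>\<epsilon>. 0 < \<epsilon> \<and> \<epsilon> < 1 \<and> U < F \<epsilon>"
proof -
  have "eventually (\<lambda>\<epsilon>. U < F \<epsilon>) (at_right 0)" using assms by (rule order_tendstoD(1))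
  moreover have "eventually (\<lambda>\<epsilon>. 0 < \<epsilon> \<and> \<epsilon> < (1::real)) (at_right 0)" by (rule ev_pos_lt) simp
  ultimately have "eventually (\<lambda>\<epsilon>. 0 < \<epsilon> \<and> \<epsilon> < 1 \<and> U < F \<epsilon>) (at_right 0)" by eventually_elim auto
  then show ?thesis using eventually_happens'[of "at_right (0::real)"] by auto
qed

lemma sqrt_mult_bound:
  assumes "0 \<le> c" "c \<le> (s + e)\<^sup>2" "0 \<le> s" "0 \<le> e" "0 \<le> r"
  shows "sqrt (r * c) \<le> sqrt r * s + e * sqrt r"
proof -
  have "sqrt c \<le> sqrt ((s + e)\<^sup>2)" using assms by (intro real_sqrt_le_mono)
  also have "\<dots> = s + e" using assms by simp
  finally have "sqrt r * sqrt c \<le> sqrt r * (s + e)" using assms by (intro mult_left_mono) auto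
  then show ?thesis by (simp add: real_sqrt_mult algebra_simps)
qed

lemma fam_of_dist:
  fixes d :: "('a::finite \<Rightarrow> real) \<Rightarrow> ('a \<Rightarrow> real) \<Rightarrow> ereal"
  assumes "(0 < \<alpha> \<and> d = renyi_div \<alpha>) \<or> (\<exists>f f' f''. fgen f f' f'' \<and> \<alpha> = f'' 1 \<and> 0 < \<alpha> \<and> d = fdiv f)"
  shows "0 < \<alpha> \<and> famL \<alpha> d \<and> famU \<alpha> d"
  using assms
proof
  assume "0 < \<alpha> \<and> d = renyi_div \<alpha>"
  then show ?thesis using renyi_famL renyi_famU by blast
next
  assume "\<exists>f f' f''. fgen f f' f'' \<and> \<alpha> = f'' 1 \<and> 0 < \<alpha> \<and> d = fdiv f"
  then obtain f f' f'' where "fgen f f' f''" "\<alpha> = f'' 1" "0 < \<alpha>" "d = fdiv f" by blast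
  then show ?thesis using fdiv_famL fdiv_famU by blast
qed

lemma E0_lower:
  fixes P0 :: "'a::finite \<Rightarrow> real" and d :: "('a \<Rightarrow> real) \<Rightarrow> ('a \<Rightarrow> real) \<Rightarrow> ereal"
  assumes P0: "P0 \<in> distrs" "\<forall>x. 0 < P0 x" and gam: "0 < \<gamma>" and fam: "famL \<alpha> d" and al: "0 < \<alpha>"
    and Vm0: "0 \<le> Vmax" and Vm: "Vmax = Sup {var_log Qh P0 | Qh. Qh \<in> distrs \<and> kl Qh P0 = \<gamma>}" and e: "0 < e"
  shows "eventually (\<lambda>r. \<forall>Q Qh. Qh \<in> distrs \<and> Q \<in> distrs \<and> \<gamma> \<le> kl Qh P0 \<and> d Q Qh \<le> ereal r \<longrightarrow>
            \<gamma> - sqrt (r * (2 / \<alpha> * Vmax)) - e * sqrt r \<le> kl Q P0) (at_right 0)"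
proof -
  define \<theta> where "\<theta> = 2 / \<alpha> * Vmax"
  have th0: "0 \<le> \<theta>" using al Vm0 by (simp add: \<theta>_def)
  define F where "F = (\<lambda>\<epsilon>. 2 * (1 + \<epsilon>) * (Vmax + \<epsilon>) / (\<alpha> * (1 - \<epsilon>)))"
  have "(F \<longlongrightarrow> 2 * (1 + 0) * (Vmax + 0) / (\<alpha> * (1 - 0))) (at_right 0)"
    unfolding F_def using al by (intro tendsto_intros tendsto_ident_at) auto
  moreover have "2 * (1 + 0) * (Vmax + 0) / (\<alpha> * (1 - 0)) = \<theta>" by (simp add: \<theta>_def)
  ultimately have limF: "(F \<longlongrightarrow> \<theta>) (at_right 0)" by simp
  have "\<theta> < (sqrt \<theta> + e/2)\<^sup>2"
  proof -
    have "(sqrt \<theta> + e/2)\<^sup>2 = \<theta> + sqrt \<theta> * e + (e/2)\<^sup>2" using th0 by (simp add: power2_sum)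
    moreover have "0 \<le> sqrt \<theta> * e" using th0 e by simp
    moreover have "0 < (e/2)\<^sup>2" using e by simp
    ultimately show ?thesis by linarith
  qed
  then obtain \<epsilon> where eps: "0 < \<epsilon>" "\<epsilon> < 1" and Feps: "F \<epsilon> < (sqrt \<theta> + e/2)\<^sup>2"
    using pick_eps_lower[OF limF] by blast
  obtain r1 K where r1: "0 < r1" and K0: "0 \<le> K"
    and LG: "\<And>r q w. 0 < r \<and> r < r1 \<and> q \<in> distrs \<and> w \<in> distrs \<and> d q w \<le> ereal r \<Longrightarrow>
           kl q P0 \<ge> kl w P0 - sqrt (r * (2 * (1 + \<epsilon>) * var_log w P0 / (\<alpha> * (1 - \<epsilon>)))) - K * (r + r powr (3/4))"
    using lower_gen[OF P0 fam al eps] by blast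
  obtain \<delta>0 where d0: "0 < \<delta>0" and SL: "\<And>w. w \<in> distrs \<and> \<gamma> \<le> kl w P0 \<and> kl w P0 < \<gamma> + \<delta>0 \<Longrightarrow>
           var_log w P0 \<le> Vmax + \<epsilon>"
    using seg_level[OF P0 gam eps(1)] unfolding Vm[symmetric] by blast
  define cB where "cB = 2 * (1 + \<epsilon>) * Vb P0 / (\<alpha> * (1 - \<epsilon>))"
  have ev: "eventually (\<lambda>r. (0 < r \<and> r < r1) \<and> K * (r + r powr (3/4)) \<le> e/2 * sqrt r \<and>
      sqrt (r * cB) + K * (r + r powr (3/4)) \<le> \<delta>0) (at_right 0)"
  proof -
    have ev2: "eventually (\<lambda>r. K * (r + r powr (3/4)) \<le> e/2 * sqrt r) (at_right 0)"
      using e by (intro ev_small1) simp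
    show ?thesis using ev_pos_lt[OF r1] ev2 ev_small2[OF d0, of cB K] by eventually_elim blast
  qed
  show ?thesis using ev
  proof eventually_elim
    case (elim r)
    then have r: "0 < r" "r < r1" and s1: "K * (r + r powr (3/4)) \<le> e/2 * sqrt r"
      and s2: "sqrt (r * cB) + K * (r + r powr (3/4)) \<le> \<delta>0" by auto
    show ?case
    proof (intro allI impI)
      fix Q Qh :: "'a \<Rightarrow> real"
      assume A: "Qh \<in> distrs \<and> Q \<in> distrs \<and> \<gamma> \<le> kl Qh P0 \<and> d Q Qh \<le> ereal r"
      define c where "c = 2 * (1 + \<epsilon>) * var_log Qh P0 / (\<alpha> * (1 - \<epsilon>))"
      have L: "kl Q P0 \<ge> kl Qh P0 - sqrt (r * c) - K * (r + r powr (3/4))"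
        using LG[of r Q Qh] r A by (simp add: c_def)
      have V0: "0 \<le> var_log Qh P0" using var_log_nonneg A by blast
      have c0: "0 \<le> c" using V0 eps al by (simp add: c_def)
      have pos: "0 \<le> sqrt (r * \<theta>)" "0 \<le> e * sqrt r" using r th0 e by auto
      show "\<gamma> - sqrt (r * (2 / \<alpha> * Vmax)) - e * sqrt r \<le> kl Q P0"
      proof (cases "kl Qh P0 < \<gamma> + \<delta>0")
        case False
        have "var_log Qh P0 \<le> Vb P0" using var_log_le A P0 by blast
        then have "c \<le> cB" unfolding c_def cB_def using eps al
          by (intro divide_right_mono mult_left_mono) auto
        then have "sqrt (r * c) \<le> sqrt (r * cB)" using r by (intro real_sqrt_le_mono mult_left_mono) auto
        then have "kl Q P0 \<ge> \<gamma>" using L False s2 by linarith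
        then show ?thesis using pos unfolding \<theta>_def by linarith
      next
        case True
        have "var_log Qh P0 \<le> Vmax + \<epsilon>" using SL A True by blast
        then have "c \<le> F \<epsilon>" unfolding c_def F_def using eps al
          by (intro divide_right_mono mult_left_mono) auto
        then have "c \<le> (sqrt \<theta> + e/2)\<^sup>2" using Feps by simp
        then have "sqrt (r * c) \<le> sqrt r * sqrt \<theta> + e/2 * sqrt r"
          using c0 th0 e r by (intro sqrt_mult_bound) auto
        moreover have "sqrt r * sqrt \<theta> = sqrt (r * (2 / \<alpha> * Vmax))" unfolding \<theta>_def by (rule real_sqrt_mult[symmetric])
        ultimately show ?thesis using L A s1 by linarith
      qed
    qed
  qed
qed

lemma E0_upper:
  fixes P0 :: "'a::finite \<Rightarrow> real" and d :: "('a \<Rightarrow> real) \<Rightarrow> ('a \<Rightarrow> real) \<Rightarrow> ereal"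
  assumes P0: "P0 \<in> distrs" "\<forall>x. 0 < P0 x" and fam: "famU \<alpha> d" and al: "0 < \<alpha>"
    and Vm0: "0 \<le> Vmax" and Vm: "Vmax = Sup {var_log Qh P0 | Qh. Qh \<in> distrs \<and> kl Qh P0 = \<gamma>}"
    and ne: "{var_log Qh P0 | Qh. Qh \<in> distrs \<and> kl Qh P0 = \<gamma>} \<noteq> {}" and e: "0 < e"
  shows "eventually (\<lambda>r. \<exists>Q Qh. Qh \<in> distrs \<and> Q \<in> distrs \<and> \<gamma> \<le> kl Qh P0 \<and> d Q Qh \<le> ereal r \<and>
            kl Q P0 \<le> \<gamma> - sqrt (r * (2 / \<alpha> * Vmax)) + e * sqrt r) (at_right 0)"
proof -
  define S where "S = {var_log Qh P0 | Qh. Qh \<in> distrs \<and> kl Qh P0 = \<gamma>}"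
  have bdd: "bdd_above S" unfolding S_def bdd_above_def using var_log_le P0 by blast
  define \<theta> where "\<theta> = 2 / \<alpha> * Vmax"
  have th0: "0 \<le> \<theta>" using al Vm0 by (simp add: \<theta>_def)
  define F where "F = (\<lambda>\<epsilon>. sqrt (2 * (1 - \<epsilon>) * (Vmax - \<epsilon>) / \<alpha>))"
  have "(F \<longlongrightarrow> sqrt (2 * (1 - 0) * (Vmax - 0) / \<alpha>)) (at_right 0)"
    unfolding F_def using al by (intro tendsto_intros tendsto_ident_at) auto
  moreover have "sqrt (2 * (1 - 0) * (Vmax - 0) / \<alpha>) = sqrt \<theta>" by (simp add: \<theta>_def)
  ultimately have limF: "(F \<longlongrightarrow> sqrt \<theta>) (at_right 0)" by simp
  obtain \<epsilon> where eps: "0 < \<epsilon>" "\<epsilon> < 1" and Feps: "sqrt \<theta> - e/2 < F \<epsilon>"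
    using pick_eps_upper[OF limF, of "sqrt \<theta> - e/2"] e by auto
  have "Vmax - \<epsilon> < Sup S" using eps Vm by (simp add: S_def)
  then obtain w where w: "w \<in> distrs" "kl w P0 = \<gamma>" "Vmax - \<epsilon> < var_log w P0"
    using less_cSup_iff[OF ne[folded S_def] bdd] unfolding S_def by auto
  obtain r1 where r1: "0 < r1" and UG: "\<And>r. 0 < r \<and> r < r1 \<Longrightarrow> (\<exists>q. q \<in> distrs \<and> d q w \<le> ereal r \<and>
           kl q P0 \<le> kl w P0 - sqrt (r * (2 * (1 - \<epsilon>) * var_log w P0 / \<alpha>)) + 2 * r / \<alpha>)"
    using upper_gen[OF P0 fam al eps w(1)] by blast
  have ev: "eventually (\<lambda>r. (0 < r \<and> r < r1) \<and> 2 * r / \<alpha> \<le> e/2 * sqrt r) (at_right 0)"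
  proof -
    have ev2: "eventually (\<lambda>r. 2 * r / \<alpha> \<le> e/2 * sqrt r) (at_right 0)"
      using e by (intro ev_small3) simp
    show ?thesis using ev_pos_lt[OF r1] ev2 by eventually_elim blast
  qed
  show ?thesis using ev
  proof eventually_elim
    case (elim r)
    then have r: "0 < r" "r < r1" and s3: "2 * r / \<alpha> \<le> e/2 * sqrt r" by auto
    obtain q where q: "q \<in> distrs" "d q w \<le> ereal r"
      "kl q P0 \<le> kl w P0 - sqrt (r * (2 * (1 - \<epsilon>) * var_log w P0 / \<alpha>)) + 2 * r / \<alpha>"
      using UG r by blast
    have "F \<epsilon> \<le> sqrt (2 * (1 - \<epsilon>) * var_log w P0 / \<alpha>)" unfolding F_def using w(3) eps al
      by (intro real_sqrt_le_mono divide_right_mono mult_left_mono) auto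
    then have "sqrt r * (sqrt \<theta> - e/2) \<le> sqrt r * sqrt (2 * (1 - \<epsilon>) * var_log w P0 / \<alpha>)"
      using Feps r by (intro mult_left_mono) auto
    moreover have "sqrt (r * (2 * (1 - \<epsilon>) * var_log w P0 / \<alpha>)) = sqrt r * sqrt (2 * (1 - \<epsilon>) * var_log w P0 / \<alpha>)"
      by (rule real_sqrt_mult)
    moreover have "sqrt (r * \<theta>) = sqrt r * sqrt \<theta>" by (rule real_sqrt_mult)
    ultimately have "sqrt (r * \<theta>) - e/2 * sqrt r \<le> sqrt (r * (2 * (1 - \<epsilon>) * var_log w P0 / \<alpha>))"
      by (simp add: algebra_simps)
    then have "kl q P0 \<le> \<gamma> - sqrt (r * (2 / \<alpha> * Vmax)) + e * sqrt r"
      using q(3) w(2) s3 by (simp add: \<theta>_def)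
    then show ?case using q(1,2) w(1,2) by auto
  qed
qed

lemma E1_lower:
  fixes P0 P1 :: "'a::finite \<Rightarrow> real" and d :: "('a \<Rightarrow> real) \<Rightarrow> ('a \<Rightarrow> real) \<Rightarrow> ereal"
  assumes P0: "P0 \<in> distrs" "\<forall>x. 0 < P0 x" and P1: "P1 \<in> distrs" "\<forall>x. 0 < P1 x"
    and mu: "0 \<le> \<mu>" "kl (tilt P0 P1 \<mu>) P0 = \<gamma>" and fam: "famL \<alpha> d" and al: "0 < \<alpha>" and e: "0 < e"
  shows "eventually (\<lambda>r. \<forall>Q Qh. Qh \<in> distrs \<and> Q \<in> distrs \<and> kl Qh P0 \<le> \<gamma> \<and> d Q Qh \<le> ereal r \<longrightarrow>
            kl (tilt P0 P1 \<mu>) P1 - sqrt (r * (2 / \<alpha> * var_log (tilt P0 P1 \<mu>) P1)) - e * sqrt r \<le> kl Q P1) (at_right 0)"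
proof -
  define Q0 where "Q0 = tilt P0 P1 \<mu>"
  have Q0d: "Q0 \<in> distrs" and Q0p: "\<forall>x. 0 < Q0 x" using tilt_facts[OF P0(2) P1(2) mu(1)] by (auto simp: Q0_def)
  define V1 where "V1 = var_log Q0 P1"
  define E1 where "E1 = kl Q0 P1"
  have V10: "0 \<le> V1" using var_log_nonneg Q0d by (simp add: V1_def)
  define \<theta> where "\<theta> = 2 / \<alpha> * V1"
  have th0: "0 \<le> \<theta>" using al V10 by (simp add: \<theta>_def)
  define F where "F = (\<lambda>\<epsilon>. 2 * (1 + \<epsilon>) * (V1 + \<epsilon>) / (\<alpha> * (1 - \<epsilon>)))"
  have "(F \<longlongrightarrow> 2 * (1 + 0) * (V1 + 0) / (\<alpha> * (1 - 0))) (at_right 0)"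
    unfolding F_def using al by (intro tendsto_intros tendsto_ident_at) auto
  moreover have "2 * (1 + 0) * (V1 + 0) / (\<alpha> * (1 - 0)) = \<theta>" by (simp add: \<theta>_def)
  ultimately have limF: "(F \<longlongrightarrow> \<theta>) (at_right 0)" by simp
  have "\<theta> < (sqrt \<theta> + e/2)\<^sup>2"
  proof -
    have "(sqrt \<theta> + e/2)\<^sup>2 = \<theta> + sqrt \<theta> * e + (e/2)\<^sup>2" using th0 by (simp add: power2_sum)
    moreover have "0 \<le> sqrt \<theta> * e" using th0 e by simp
    moreover have "0 < (e/2)\<^sup>2" using e by simp
    ultimately show ?thesis by linarith
  qed
  then obtain \<epsilon> where eps: "0 < \<epsilon>" "\<epsilon> < 1" and Feps: "F \<epsilon> < (sqrt \<theta> + e/2)\<^sup>2"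
    using pick_eps_lower[OF limF] by blast
  obtain r1 K where r1: "0 < r1" and K0: "0 \<le> K"
    and LG: "\<And>r q w. 0 < r \<and> r < r1 \<and> q \<in> distrs \<and> w \<in> distrs \<and> d q w \<le> ereal r \<Longrightarrow>
           kl q P1 \<ge> kl w P1 - sqrt (r * (2 * (1 + \<epsilon>) * var_log w P1 / (\<alpha> * (1 - \<epsilon>)))) - K * (r + r powr (3/4))"
    using lower_gen[OF P1 fam al eps] by blast
  obtain \<delta> where \<delta>: "0 < \<delta>" and UC: "\<And>w w'. w \<in> distrs \<Longrightarrow> w' \<in> distrs \<Longrightarrow> (\<forall>x. \<bar>w x - w' x\<bar> < \<delta>) \<Longrightarrow>
           \<bar>var_log w P1 - var_log w' P1\<bar> \<le> \<epsilon>"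
    using var_log_uc[OF P1 eps(1)] by blast
  define \<delta>2 where "\<delta>2 = \<delta>\<^sup>2 / 4"
  have d2: "0 < \<delta>2" using \<delta> by (simp add: \<delta>2_def)
  define cB where "cB = 2 * (1 + \<epsilon>) * Vb P1 / (\<alpha> * (1 - \<epsilon>))"
  have ev: "eventually (\<lambda>r. (0 < r \<and> r < r1) \<and> K * (r + r powr (3/4)) \<le> e/2 * sqrt r \<and>
      sqrt (r * cB) + K * (r + r powr (3/4)) \<le> \<delta>2) (at_right 0)"
  proof -
    have ev2: "eventually (\<lambda>r. K * (r + r powr (3/4)) \<le> e/2 * sqrt r) (at_right 0)"
      using e by (intro ev_small1) simp
    show ?thesis using ev_pos_lt[OF r1] ev2 ev_small2[OF d2, of cB K] by eventually_elim blast
  qed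
  show ?thesis unfolding Q0_def[symmetric] V1_def[symmetric] using ev
  proof eventually_elim
    case (elim r)
    then have r: "0 < r" "r < r1" and s1: "K * (r + r powr (3/4)) \<le> e/2 * sqrt r"
      and s2: "sqrt (r * cB) + K * (r + r powr (3/4)) \<le> \<delta>2" by auto
    show ?case
    proof (intro allI impI)
      fix Q Qh :: "'a \<Rightarrow> real"
      assume A: "Qh \<in> distrs \<and> Q \<in> distrs \<and> kl Qh P0 \<le> \<gamma> \<and> d Q Qh \<le> ereal r"
      define c where "c = 2 * (1 + \<epsilon>) * var_log Qh P1 / (\<alpha> * (1 - \<epsilon>))"
      have L: "kl Q P1 \<ge> kl Qh P1 - sqrt (r * c) - K * (r + r powr (3/4))"
        using LG[of r Q Qh] r A by (simp add: c_def)
      have PY: "kl Qh P1 \<ge> E1 + kl Qh Q0"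
        using pyth_ineq[OF P0(2) P1(2) mu(1), of Qh] A mu(2) by (simp add: Q0_def E1_def)
      have k0: "0 \<le> kl Qh Q0" using kl_nonneg A Q0d Q0p by blast
      have V0: "0 \<le> var_log Qh P1" using var_log_nonneg A by blast
      have c0: "0 \<le> c" using V0 eps al by (simp add: c_def)
      have pos: "0 \<le> sqrt (r * \<theta>)" "0 \<le> e * sqrt r" using r th0 e by auto
      have th: "sqrt r * sqrt \<theta> = sqrt (r * (2 / \<alpha> * V1))" unfolding \<theta>_def by (rule real_sqrt_mult[symmetric])
      show "kl Q0 P1 - sqrt (r * (2 / \<alpha> * V1)) - e * sqrt r \<le> kl Q P1"
      proof (cases "\<forall>x. \<bar>Qh x - Q0 x\<bar> < \<delta>")
        case False
        then obtain x where x: "\<delta> \<le> \<bar>Qh x - Q0 x\<bar>" by (auto simp: not_less)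
        have "\<delta>\<^sup>2 \<le> \<bar>Qh x - Q0 x\<bar>\<^sup>2" using x \<delta> by (intro power_mono) auto
        also have "\<dots> = (Qh x - Q0 x)\<^sup>2" by simp
        also have "\<dots> \<le> (\<Sum>y\<in>UNIV. (Qh y - Q0 y)\<^sup>2)" by (rule member_le_sum) auto
        also have "\<dots> \<le> 4 * kl Qh Q0" using kl_ge_sq A Q0d Q0p by blast
        finally have "\<delta>2 \<le> kl Qh Q0" by (simp add: \<delta>2_def)
        have "var_log Qh P1 \<le> Vb P1" using var_log_le A P1 by blast
        then have "c \<le> cB" unfolding c_def cB_def using eps al
          by (intro divide_right_mono mult_left_mono) auto
        then have "sqrt (r * c) \<le> sqrt (r * cB)" using r by (intro real_sqrt_le_mono mult_left_mono) auto
        then have "kl Q P1 \<ge> E1" using L PY \<open>\<delta>2 \<le> kl Qh Q0\<close> s2 by linarith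
        moreover have "0 \<le> sqrt (r * (2 / \<alpha> * V1))" using pos th by (simp add: real_sqrt_mult)
        ultimately show "kl Q0 P1 - sqrt (r * (2 / \<alpha> * V1)) - e * sqrt r \<le> kl Q P1"
          using pos unfolding E1_def by linarith
      next
        case True
        have "\<bar>var_log Qh P1 - var_log Q0 P1\<bar> \<le> \<epsilon>" using UC A Q0d True by blast
        then have "var_log Qh P1 \<le> V1 + \<epsilon>" by (simp add: V1_def)
        then have "c \<le> F \<epsilon>" unfolding c_def F_def using eps al
          by (intro divide_right_mono mult_left_mono) auto
        then have "c \<le> (sqrt \<theta> + e/2)\<^sup>2" using Feps by simp
        then have "sqrt (r * c) \<le> sqrt r * sqrt \<theta> + e/2 * sqrt r"
          using c0 th0 e r by (intro sqrt_mult_bound) auto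
        then show "kl Q0 P1 - sqrt (r * (2 / \<alpha> * V1)) - e * sqrt r \<le> kl Q P1"
          using L PY k0 s1 th unfolding E1_def by linarith
      qed
    qed
  qed
qed

lemma E1_upper:
  fixes P0 P1 :: "'a::finite \<Rightarrow> real" and d :: "('a \<Rightarrow> real) \<Rightarrow> ('a \<Rightarrow> real) \<Rightarrow> ereal"
  assumes P0: "P0 \<in> distrs" "\<forall>x. 0 < P0 x" and P1: "P1 \<in> distrs" "\<forall>x. 0 < P1 x"
    and mu: "0 \<le> \<mu>" "kl (tilt P0 P1 \<mu>) P0 = \<gamma>" and fam: "famU \<alpha> d" and al: "0 < \<alpha>" and e: "0 < e"
  shows "eventually (\<lambda>r. \<exists>Q Qh. Qh \<in> distrs \<and> Q \<in> distrs \<and> kl Qh P0 \<le> \<gamma> \<and> d Q Qh \<le> ereal r \<and>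
            kl Q P1 \<le> kl (tilt P0 P1 \<mu>) P1 - sqrt (r * (2 / \<alpha> * var_log (tilt P0 P1 \<mu>) P1)) + e * sqrt r) (at_right 0)"
proof -
  define Q0 where "Q0 = tilt P0 P1 \<mu>"
  have Q0d: "Q0 \<in> distrs" using tilt_facts[OF P0(2) P1(2) mu(1)] by (auto simp: Q0_def)
  define V1 where "V1 = var_log Q0 P1"
  have V10: "0 \<le> V1" using var_log_nonneg Q0d by (simp add: V1_def)
  define \<theta> where "\<theta> = 2 / \<alpha> * V1"
  define F where "F = (\<lambda>\<epsilon>. sqrt (2 * (1 - \<epsilon>) * V1 / \<alpha>))"
  have "(F \<longlongrightarrow> sqrt (2 * (1 - 0) * V1 / \<alpha>)) (at_right 0)"
    unfolding F_def using al by (intro tendsto_intros tendsto_ident_at) auto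
  moreover have "sqrt (2 * (1 - 0) * V1 / \<alpha>) = sqrt \<theta>" by (simp add: \<theta>_def)
  ultimately have limF: "(F \<longlongrightarrow> sqrt \<theta>) (at_right 0)" by simp
  obtain \<epsilon> where eps: "0 < \<epsilon>" "\<epsilon> < 1" and Feps: "sqrt \<theta> - e/2 < F \<epsilon>"
    using pick_eps_upper[OF limF, of "sqrt \<theta> - e/2"] e by auto
  obtain r1 where r1: "0 < r1" and UG: "\<And>r. 0 < r \<and> r < r1 \<Longrightarrow> (\<exists>q. q \<in> distrs \<and> d q Q0 \<le> ereal r \<and>
           kl q P1 \<le> kl Q0 P1 - sqrt (r * (2 * (1 - \<epsilon>) * var_log Q0 P1 / \<alpha>)) + 2 * r / \<alpha>)"
    using upper_gen[OF P1 fam al eps Q0d] by blast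
  have ev: "eventually (\<lambda>r. (0 < r \<and> r < r1) \<and> 2 * r / \<alpha> \<le> e/2 * sqrt r) (at_right 0)"
  proof -
    have ev2: "eventually (\<lambda>r. 2 * r / \<alpha> \<le> e/2 * sqrt r) (at_right 0)"
      using e by (intro ev_small3) simp
    show ?thesis using ev_pos_lt[OF r1] ev2 by eventually_elim blast
  qed
  show ?thesis unfolding Q0_def[symmetric] V1_def[symmetric] using ev
  proof eventually_elim
    case (elim r)
    then have r: "0 < r" "r < r1" and s3: "2 * r / \<alpha> \<le> e/2 * sqrt r" by auto
    obtain q where q: "q \<in> distrs" "d q Q0 \<le> ereal r"
      "kl q P1 \<le> kl Q0 P1 - sqrt (r * (2 * (1 - \<epsilon>) * V1 / \<alpha>)) + 2 * r / \<alpha>"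
      using UG r by (auto simp: V1_def)
    have "sqrt r * (sqrt \<theta> - e/2) \<le> sqrt r * F \<epsilon>" using Feps r by (intro mult_left_mono) auto
    moreover have "sqrt (r * (2 * (1 - \<epsilon>) * V1 / \<alpha>)) = sqrt r * F \<epsilon>"
      unfolding F_def by (rule real_sqrt_mult)
    moreover have "sqrt (r * \<theta>) = sqrt r * sqrt \<theta>" by (rule real_sqrt_mult)
    ultimately have "sqrt (r * \<theta>) - e/2 * sqrt r \<le> sqrt (r * (2 * (1 - \<epsilon>) * V1 / \<alpha>))"
      by (simp add: algebra_simps)
    then have "kl q P1 \<le> kl Q0 P1 - sqrt (r * (2 / \<alpha> * V1)) + e * sqrt r"
      using q(3) s3 by (simp add: \<theta>_def)
    moreover have "kl Q0 P0 \<le> \<gamma>" using mu(2) by (simp add: Q0_def)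
    ultimately show ?case using q(1,2) Q0d by blast
  qed
qed

lemma o_from_inf:
  fixes A :: "real \<Rightarrow> real set"
  assumes low: "\<And>c. 0 < c \<Longrightarrow> eventually (\<lambda>r. \<forall>a\<in>A r. E - sqrt (r * \<theta>) - c * sqrt r \<le> a) (at_right 0)"
    and up: "\<And>c. 0 < c \<Longrightarrow> eventually (\<lambda>r. \<exists>a\<in>A r. a \<le> E - sqrt (r * \<theta>) + c * sqrt r) (at_right 0)"
    and bdd: "\<And>r a. a \<in> A r \<Longrightarrow> 0 \<le> a"
  shows "(\<lambda>r. Inf (A r) - (E - sqrt (r * \<theta>))) \<in> o[at_right 0](\<lambda>r. sqrt r)"
proof (rule landau_o.smallI)
  fix c :: real assume c: "0 < c"
  show "eventually (\<lambda>r. norm (Inf (A r) - (E - sqrt (r * \<theta>))) \<le> c * norm (sqrt r)) (at_right 0)"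
    using low[OF c] up[OF c] ev_pos_lt[of 1, OF zero_less_one]
  proof eventually_elim
    case (elim r)
    then obtain a where a: "a \<in> A r" "a \<le> E - sqrt (r * \<theta>) + c * sqrt r" by blast
    have ne: "A r \<noteq> {}" using a by blast
    have bb: "bdd_below (A r)" unfolding bdd_below_def using bdd by blast
    have "Inf (A r) \<le> a" using a(1) bb by (rule cInf_lower)
    moreover have "E - sqrt (r * \<theta>) - c * sqrt r \<le> Inf (A r)" using ne elim by (intro cInf_greatest) auto
    ultimately show ?case using a(2) elim by (simp add: abs_le_iff)
  qed
qed

theorem theorem10:
  fixes P0 P1 :: "'a::finite \<Rightarrow> real"
    and \<gamma> \<mu> \<alpha> :: real
    and d :: "('a \<Rightarrow> real) \<Rightarrow> ('a \<Rightarrow> real) \<Rightarrow> ereal"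
  assumes P0: "P0 \<in> distrs" and P1: "P1 \<in> distrs"
    and P0_pos: "\<forall>x. 0 < P0 x" and P1_pos: "\<forall>x. 0 < P1 x"
    and gamma: "0 < \<gamma>" "\<gamma> < kl P1 P0"
    and mu: "0 \<le> \<mu>" "kl (tilt P0 P1 \<mu>) P0 = \<gamma>"
    and dist: "(0 < \<alpha> \<and> d = renyi_div \<alpha>) \<or>
               (\<exists>f f' f''. fgen f f' f'' \<and> \<alpha> = f'' 1 \<and> 0 < \<alpha> \<and> d = fdiv f)"
  shows "(\<lambda>r. E0_hat P0 \<gamma> d r - (\<gamma> - sqrt (r * theta0 \<alpha> P0 \<gamma>)))
            \<in> o[at_right 0](\<lambda>r. sqrt r)
       \<and> (\<lambda>r. E1_hat P0 P1 \<gamma> d r - (kl (tilt P0 P1 \<mu>) P1 - sqrt (r * theta1 \<alpha> P0 P1 \<mu>)))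
            \<in> o[at_right 0](\<lambda>r. sqrt r)"
proof
  have F: "0 < \<alpha> \<and> famL \<alpha> d \<and> famU \<alpha> d" using fam_of_dist[OF dist] .
  then have al: "0 < \<alpha>" and fL: "famL \<alpha> d" and fU: "famU \<alpha> d" by auto
  define Q0 where "Q0 = tilt P0 P1 \<mu>"
  have Q0d: "Q0 \<in> distrs" using tilt_facts[OF P0_pos P1_pos mu(1)] by (auto simp: Q0_def)
  define S0 where "S0 = {var_log Qh P0 | Qh. Qh \<in> distrs \<and> kl Qh P0 = \<gamma>}"
  have inS: "var_log Q0 P0 \<in> S0" using Q0d mu(2) by (auto simp: S0_def Q0_def)
  have bdd: "bdd_above S0" unfolding S0_def bdd_above_def using var_log_le P0 P0_pos by blast
  define Vmax where "Vmax = Sup S0"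
  have Vm0: "0 \<le> Vmax" using cSup_upper[OF inS bdd] var_log_nonneg[OF Q0d, of P0] unfolding Vmax_def by linarith
  have Vm: "Vmax = Sup {var_log Qh P0 | Qh. Qh \<in> distrs \<and> kl Qh P0 = \<gamma>}" by (simp add: Vmax_def S0_def)
  have ne: "{var_log Qh P0 | Qh. Qh \<in> distrs \<and> kl Qh P0 = \<gamma>} \<noteq> {}" using inS by (auto simp: S0_def)
  have th0: "theta0 \<alpha> P0 \<gamma> = 2 / \<alpha> * Vmax" by (simp add: theta0_def Vm)
  have bd0: "\<And>r a. a \<in> {kl Q P0 | Q Qh. Qh \<in> distrs \<and> Q \<in> distrs \<and> \<gamma> \<le> kl Qh P0 \<and> d Q Qh \<le> ereal r} \<Longrightarrow> 0 \<le> a"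
    using kl_nonneg P0 P0_pos by blast
  show "(\<lambda>r. E0_hat P0 \<gamma> d r - (\<gamma> - sqrt (r * theta0 \<alpha> P0 \<gamma>))) \<in> o[at_right 0](\<lambda>r. sqrt r)"
    unfolding th0 E0_hat_def
  proof (rule o_from_inf[where A = "\<lambda>r. {kl Q P0 | Q Qh. Qh \<in> distrs \<and> Q \<in> distrs \<and> \<gamma> \<le> kl Qh P0 \<and> d Q Qh \<le> ereal r}", OF _ _ bd0])
    fix c :: real assume c: "0 < c"
    show "eventually (\<lambda>r. \<forall>a\<in>{kl Q P0 | Q Qh. Qh \<in> distrs \<and> Q \<in> distrs \<and> \<gamma> \<le> kl Qh P0 \<and> d Q Qh \<le> ereal r}.
            \<gamma> - sqrt (r * (2 / \<alpha> * Vmax)) - c * sqrt r \<le> a) (at_right 0)"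
      using E0_lower[OF P0 P0_pos gamma(1) fL al Vm0 Vm c] by (rule eventually_mono) blast
    show "eventually (\<lambda>r. \<exists>a\<in>{kl Q P0 | Q Qh. Qh \<in> distrs \<and> Q \<in> distrs \<and> \<gamma> \<le> kl Qh P0 \<and> d Q Qh \<le> ereal r}.
            a \<le> \<gamma> - sqrt (r * (2 / \<alpha> * Vmax)) + c * sqrt r) (at_right 0)"
      using E0_upper[OF P0 P0_pos fU al Vm0 Vm ne c] by (rule eventually_mono) blast
  qed
next
  have F: "0 < \<alpha> \<and> famL \<alpha> d \<and> famU \<alpha> d" using fam_of_dist[OF dist] .
  then have al: "0 < \<alpha>" and fL: "famL \<alpha> d" and fU: "famU \<alpha> d" by auto
  have th1: "theta1 \<alpha> P0 P1 \<mu> = 2 / \<alpha> * var_log (tilt P0 P1 \<mu>) P1" by (simp add: theta1_def)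
  have bd1: "\<And>r a. a \<in> {kl Q P1 | Q Qh. Qh \<in> distrs \<and> Q \<in> distrs \<and> kl Qh P0 \<le> \<gamma> \<and> d Q Qh \<le> ereal r} \<Longrightarrow> 0 \<le> a"
    using kl_nonneg P1 P1_pos by blast
  show "(\<lambda>r. E1_hat P0 P1 \<gamma> d r - (kl (tilt P0 P1 \<mu>) P1 - sqrt (r * theta1 \<alpha> P0 P1 \<mu>))) \<in> o[at_right 0](\<lambda>r. sqrt r)"
    unfolding th1 E1_hat_def
  proof (rule o_from_inf[where A = "\<lambda>r. {kl Q P1 | Q Qh. Qh \<in> distrs \<and> Q \<in> distrs \<and> kl Qh P0 \<le> \<gamma> \<and> d Q Qh \<le> ereal r}", OF _ _ bd1])
    fix c :: real assume c: "0 < c"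
    show "eventually (\<lambda>r. \<forall>a\<in>{kl Q P1 | Q Qh. Qh \<in> distrs \<and> Q \<in> distrs \<and> kl Qh P0 \<le> \<gamma> \<and> d Q Qh \<le> ereal r}.
            kl (tilt P0 P1 \<mu>) P1 - sqrt (r * (2 / \<alpha> * var_log (tilt P0 P1 \<mu>) P1)) - c * sqrt r \<le> a) (at_right 0)"
      using E1_lower[OF P0 P0_pos P1 P1_pos mu fL al c] by (rule eventually_mono) blast
    show "eventually (\<lambda>r. \<exists>a\<in>{kl Q P1 | Q Qh. Qh \<in> distrs \<and> Q \<in> distrs \<and> kl Qh P0 \<le> \<gamma> \<and> d Q Qh \<le> ereal r}.
            a \<le> kl (tilt P0 P1 \<mu>) P1 - sqrt (r * (2 / \<alpha> * var_log (tilt P0 P1 \<mu>) P1)) + c * sqrt r) (at_right 0)"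
      using E1_upper[OF P0 P0_pos P1 P1_pos mu fU al c] by (rule eventually_mono) blast
  qed
qed

end
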